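(* Let $\Delta$ be an abstract polyhedral complex with a recession fan. Then the tropical function field $\operatorname{Rat}(|\Delta|)$ is finitely generated as a semifield over $\mathbb T\mathbb Q$.
   Context: Abstract polyhedral complex with recession fan. Let $V_f\neq\emptyset$ and $V_\infty$ be disjoint finite sets. Let $\Pi$ be a finite poset with a map $\zeta\colon\Pi\to2^{V_f\cup V_\infty}$ such that: (1) $\Pi$ has a minimum $\hat0$ with $\zeta(\hat0)=\emptyset$; (2) for each $x\in V_f\cup V_\infty$ there is a unique $\tau\in\Pi$ with $\zeta(\tau)=\{x\}$; (3) for each $\tau$, $\zeta$ restricts to a bijection from the interval $[\hat0,\tau]$ onto the poset of subsets of $\zeta(\tau)$. Then $\Delta=\{\tau\in\Pi:\zeta(\tau)\cap V_f\neq\emptyset\}$ is an abstract polyhedral complex with recession fan $\Upsilon=\Pi\setminus\Delta$. To $\tau\in\Delta$ with $\zeta(\tau)=A\cup B$ ($A\subseteq V_f$, $B\subseteq V_\infty$) attach $\Theta_\tau=\sigma^A\times\mathbb R^B_{\ge0}\subseteq\mathbb R^{A\cup B}$, $\sigma^A=\{u\in\mathbb R^A_{\ge0}:\sum u_v=1\}$, with integral structure from $\mathbb Z^{A\cup B}$; for $\tau\preceq\eta$, $\Theta_\tau$ is glued as the corresponding face of $\Theta_\eta$; the result is the support $|\Delta|$. Similarly $|\Upsilon|$ is obtained by gluing cones $\mathbb R^{\zeta(\tau)}_{\ge0}$, $\tau\in\Upsilon$, and the recession cone of $\Theta_\tau$ is the cone of the element of $\Upsilon$ below $\tau$ with $\zeta$-value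 $\zeta(\tau)\cap V_\infty$. A half-line $\{p+tw:t\ge 0\}\subseteq\Theta_\tau$ with $0\ne w\in\mathbb R^{B}_{\ge0}$ determines the half-line $\mathbb R_{\ge0}w$ of $|\Upsilon|$ in that cone; two half-lines of $|\Delta|$ are parallel if they determine the same half-line of $|\Upsilon|$. The slope near infinity of a piecewise affine $F$ along $\{p+tw\}$ is $\frac{d}{dt}F(p+tw)$ for $t\gg0$. An integral $\mathbb Q$-affine function on a polyhedron in $\mathbb R^N$ is the restriction of $u\mapsto\langle m,u\rangle+\gamma$ with $m\in\mathbb Z^N$, $\gamma\in\mathbb Q$. $\operatorname{Rat}(|\Delta|)$ consists of $\infty$ and all continuous $F\colon|\Delta|\to\mathbb R$ which are integral $\mathbb Q$-affine on each piece of some subdivision of the $\Theta_\tau$ into integral $\mathbb Q$-affine polyhedra compatible along faces, and which have the same slope near infinity along any two parallel half-lines; it is a semifield with $F\oplus G=\min(F,G)$, $F\odot G=F+G$. $\mathbb T\mathbb Q=\mathbb Q\cup\{\infty\}$ with $\oplus=\min$, $\odot=+$; it embeds in $\operatorname{Rat}(|\Delta|)$ as constants. A semifield $S$ over $\mathbb T\mathbb Q$ is finitely generated if there are $s_1,\dots,s_r\in S$ such that every element of $S$ is of the form $p(s_1,\dots,s_r)\odot q(s_1,\dots,s_r)^{-1}$ with $p,q$ tropical polynomials (finite $\oplus$-sums of terms $a\odot s_1^{\odot i_1}\odot\cdots\odot s_r^{\odot i_r}$, $a\in\mathbb T\mathbb Q$), $q\neq\infty$. *)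

theory Defs
  imports "HOL-Analysis.Analysis"
begin

text \<open>Abstract polyhedral complex with recession fan.
  Vertices live in a finite type 'v; V_f, V_inf are disjoint subsets.
  The finite poset Pi is the finite ordered type 'p (Pi = UNIV).\<close>

definition apc_data :: "'v set \<Rightarrow> 'v set \<Rightarrow> ('p::{finite,order} \<Rightarrow> 'v set) \<Rightarrow> bool" where
  "apc_data Vf Vinf zeta \<longleftrightarrow>
     Vf \<noteq> {} \<and> Vf \<inter> Vinf = {} \<and>
     (\<forall>\<tau>. zeta \<tau> \<subseteq> Vf \<union> Vinf) \<and>
     (\<exists>z. zeta z = {} \<and> (\<forall>\<tau>. z \<le> \<tau>)) \<and>
     (\<forall>x\<in>Vf \<union> Vinf. \<exists>!\<tau>. zeta \<tau> = {x}) \<and>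
     (\<forall>\<tau>. bij_betw zeta {\<sigma>. \<sigma> \<le> \<tau>} (Pow (zeta \<tau>)) \<and>
          (\<forall>\<sigma> \<sigma>'. \<sigma> \<le> \<tau> \<longrightarrow> \<sigma>' \<le> \<tau> \<longrightarrow> (\<sigma> \<le> \<sigma>' \<longleftrightarrow> zeta \<sigma> \<subseteq> zeta \<sigma>')))"

text \<open>The complex Delta (its recession fan is the complement).\<close>
definition cDelta :: "'v set \<Rightarrow> ('p \<Rightarrow> 'v set) \<Rightarrow> 'p set" where
  "cDelta Vf zeta = {\<tau>. zeta \<tau> \<inter> Vf \<noteq> {}}"

text \<open>Theta_tau = sigma^A x R^B_{>=0}, embedded in real^'v by extension by zero.\<close>
definition Theta :: "'v set \<Rightarrow> ('p \<Rightarrow> 'v set) \<Rightarrow> 'p \<Rightarrow> (real^'v::finite) set" where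
  "Theta Vf zeta \<tau> = {u. (\<forall>j. j \<notin> zeta \<tau> \<longrightarrow> u$j = 0) \<and> (\<forall>j. 0 \<le> u$j) \<and>
                          (\<Sum>j\<in>zeta \<tau> \<inter> Vf. u$j) = 1}"

definition int_Q_polyhedron :: "'v set \<Rightarrow> (real^'v::finite) set \<Rightarrow> bool" where
  "int_Q_polyhedron S P \<longleftrightarrow>
     (\<exists>H :: ((int^'v) \<times> rat) set. finite H \<and>
        P = {x. (\<forall>j. j \<notin> S \<longrightarrow> x$j = 0) \<and>
                (\<forall>(m,g)\<in>H. 0 \<le> (\<Sum>j\<in>S. of_int (m$j) * x$j) + of_rat g)})"

definition int_Q_affine_on :: "'v set \<Rightarrow> (real^'v::finite) set \<Rightarrow> (real^'v \<Rightarrow> real) \<Rightarrow> bool" where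
  "int_Q_affine_on S P f \<longleftrightarrow>
     (\<exists>(m::int^'v) (g::rat). \<forall>x\<in>P. f x = (\<Sum>j\<in>S. of_int (m$j) * x$j) + of_rat g)"

definition poly_subdivision :: "'v set \<Rightarrow> (real^'v::finite) set \<Rightarrow> (real^'v) set set \<Rightarrow> bool" where
  "poly_subdivision S X C \<longleftrightarrow>
     finite C \<and> (\<forall>P\<in>C. int_Q_polyhedron S P) \<and> \<Union>C = X \<and>
     (\<forall>P\<in>C. \<forall>Q. Q face_of P \<longrightarrow> Q \<in> C) \<and>
     (\<forall>P\<in>C. \<forall>Q\<in>C. (P \<inter> Q) face_of P \<and> (P \<inter> Q) face_of Q)"

definition slope_at_infinity :: "(real^'v::finite \<Rightarrow> real) \<Rightarrow> real^'v \<Rightarrow> real^'v \<Rightarrow> real \<Rightarrow> bool" where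
  "slope_at_infinity g p w s \<longleftrightarrow>
     (\<forall>\<^sub>F t in at_top. ((\<lambda>t. g (p + t *\<^sub>R w)) has_real_derivative s) (at t))"

definition rec_dir :: "'v set \<Rightarrow> ('p \<Rightarrow> 'v set) \<Rightarrow> 'p \<Rightarrow> real^'v::finite \<Rightarrow> bool" where
  "rec_dir Vinf zeta \<tau> w \<longleftrightarrow> w \<noteq> 0 \<and> (\<forall>j. 0 \<le> w$j \<and> (j \<notin> zeta \<tau> \<inter> Vinf \<longrightarrow> w$j = 0))"

text \<open>Half-lines {p+tw} in Theta_tau and {p'+tw} in Theta_tau' (same direction w) determine
  the same half-line of |Upsilon|: the point w of the cones of tau and tau' is identified,
  i.e. there is a common face kappa in Upsilon of both carrying w.\<close>
definition same_fan_dir :: "'v set \<Rightarrow> ('p::order \<Rightarrow> 'v set) \<Rightarrow> 'p \<Rightarrow> 'p \<Rightarrow> real^'v::finite \<Rightarrow> bool" where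
  "same_fan_dir Vf zeta \<tau> \<tau>' w \<longleftrightarrow>
     (\<exists>\<kappa>. \<kappa> \<le> \<tau> \<and> \<kappa> \<le> \<tau>' \<and> zeta \<kappa> \<inter> Vf = {} \<and> (\<forall>j. w$j \<noteq> 0 \<longrightarrow> j \<in> zeta \<kappa>))"

text \<open>Finite (real-valued) elements of Rat(|Delta|), as compatible families f_tau on Theta_tau.\<close>
definition rat_fun :: "'v set \<Rightarrow> 'v set \<Rightarrow> ('p::{finite,order} \<Rightarrow> 'v set) \<Rightarrow>
                        ('p \<Rightarrow> real^'v::finite \<Rightarrow> real) \<Rightarrow> bool" where
  "rat_fun Vf Vinf zeta f \<longleftrightarrow>
     (\<forall>\<sigma>\<in>cDelta Vf zeta. \<forall>\<tau>\<in>cDelta Vf zeta. \<sigma> \<le> \<tau> \<longrightarrow>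
        (\<forall>u\<in>Theta Vf zeta \<sigma>. f \<sigma> u = f \<tau> u)) \<and>
     (\<forall>\<tau>\<in>cDelta Vf zeta. continuous_on (Theta Vf zeta \<tau>) (f \<tau>)) \<and>
     (\<exists>C :: 'p \<Rightarrow> (real^'v) set set.
        (\<forall>\<tau>\<in>cDelta Vf zeta. poly_subdivision (zeta \<tau>) (Theta Vf zeta \<tau>) (C \<tau>) \<and>
            (\<forall>P\<in>C \<tau>. int_Q_affine_on (zeta \<tau>) P (f \<tau>))) \<and>
        (\<forall>\<sigma>\<in>cDelta Vf zeta. \<forall>\<tau>\<in>cDelta Vf zeta. \<sigma> \<le> \<tau> \<longrightarrow>
            C \<sigma> = {P\<in>C \<tau>. P \<subseteq> Theta Vf zeta \<sigma>})) \<and>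
     (\<forall>\<tau>\<in>cDelta Vf zeta. \<forall>\<tau>'\<in>cDelta Vf zeta. \<forall>p\<in>Theta Vf zeta \<tau>. \<forall>p'\<in>Theta Vf zeta \<tau>'. \<forall>w s s'.
        rec_dir Vinf zeta \<tau> w \<and> rec_dir Vinf zeta \<tau>' w \<and> same_fan_dir Vf zeta \<tau> \<tau>' w \<and>
        slope_at_infinity (f \<tau>) p w s \<and> slope_at_infinity (f \<tau>') p' w s' \<longrightarrow> s = s')"

text \<open>Elements of the semifield Rat(|Delta|): the constant infinity, or a finite rat_fun,
  as ereal-valued families (values only matter on the points (tau,u), u in Theta tau).\<close>
definition RatD :: "'v set \<Rightarrow> 'v set \<Rightarrow> ('p::{finite,order} \<Rightarrow> 'v set) \<Rightarrow>
                    ('p \<Rightarrow> real^'v::finite \<Rightarrow> ereal) set" where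
  "RatD Vf Vinf zeta = {F.
     (\<forall>\<tau>\<in>cDelta Vf zeta. \<forall>u\<in>Theta Vf zeta \<tau>. F \<tau> u = \<infinity>) \<or>
     (\<exists>f. rat_fun Vf Vinf zeta f \<and>
          (\<forall>\<tau>\<in>cDelta Vf zeta. \<forall>u\<in>Theta Vf zeta \<tau>. F \<tau> u = ereal (f \<tau> u)))}"

text \<open>Tropical polynomial over TQ in r variables: list of terms a \<odot> s_1^{e 0} \<odot> ... with a in Q
  (terms with coefficient infinity are neutral for \<oplus> and omitted); evaluated at a list of
  elements, pointwise, with \<oplus> = min and \<odot> = +.\<close>
definition trop_eval :: "(rat \<times> (nat \<Rightarrow> nat)) list \<Rightarrow> ('p \<Rightarrow> 'x \<Rightarrow> ereal) list \<Rightarrow> 'p \<Rightarrow> 'x \<Rightarrow> ereal" where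
  "trop_eval P ss \<tau> u =
     foldr (\<lambda>(a, e) acc. min (ereal (real_of_rat a) + (\<Sum>j<length ss. ereal (real (e j)) * (ss ! j) \<tau> u)) acc)
           P \<infinity>"

end

theory Submission
  imports Defs
begin

locale apc =
  fixes Vf Vinf :: "'v::finite set" and zeta :: "'p::{finite,order} \<Rightarrow> 'v set"
  assumes apc: "apc_data Vf Vinf zeta"
begin

abbreviation "V \<equiv> Vf \<union> Vinf"
abbreviation "Dl \<equiv> cDelta Vf zeta"
abbreviation "Th \<equiv> Theta Vf zeta"

lemma apc': "Vf \<noteq> {} \<and> Vf \<inter> Vinf = {} \<and>
     (\<forall>\<tau>. zeta \<tau> \<subseteq> Vf \<union> Vinf) \<and>
     (\<exists>z. zeta z = {} \<and> (\<forall>\<tau>. z \<le> \<tau>)) \<and>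
     (\<forall>x\<in>Vf \<union> Vinf. \<exists>!\<tau>. zeta \<tau> = {x}) \<and>
     (\<forall>\<tau>. bij_betw zeta {\<sigma>. \<sigma> \<le> \<tau>} (Pow (zeta \<tau>)) \<and>
          (\<forall>\<sigma> \<sigma>'. \<sigma> \<le> \<tau> \<longrightarrow> \<sigma>' \<le> \<tau> \<longrightarrow> (\<sigma> \<le> \<sigma>' \<longleftrightarrow> zeta \<sigma> \<subseteq> zeta \<sigma>')))"
  using apc unfolding apc_data_def .

lemma Vf_ne: "Vf \<noteq> {}" using apc' by (rule conjunct1)
lemma disj: "Vf \<inter> Vinf = {}" using apc'[THEN conjunct2] by (rule conjunct1)
lemma zeta_sub: "zeta \<tau> \<subseteq> V" using apc'[THEN conjunct2, THEN conjunct2, THEN conjunct1] by (rule spec)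
lemma bot_ex: "\<exists>z. zeta z = {} \<and> (\<forall>\<tau>. z \<le> \<tau>)" using apc'[THEN conjunct2, THEN conjunct2, THEN conjunct2] by (rule conjunct1)
lemma vert: "x \<in> V \<Longrightarrow> \<exists>!\<tau>. zeta \<tau> = {x}"
  using apc'[THEN conjunct2, THEN conjunct2, THEN conjunct2, THEN conjunct2, THEN conjunct1] by (rule bspec)
lemma bij_iso: "bij_betw zeta {\<sigma>. \<sigma> \<le> \<tau>} (Pow (zeta \<tau>)) \<and>
          (\<forall>\<sigma> \<sigma>'. \<sigma> \<le> \<tau> \<longrightarrow> \<sigma>' \<le> \<tau> \<longrightarrow> (\<sigma> \<le> \<sigma>' \<longleftrightarrow> zeta \<sigma> \<subseteq> zeta \<sigma>'))"
  using apc'[THEN conjunct2, THEN conjunct2, THEN conjunct2, THEN conjunct2, THEN conjunct2] by (rule spec)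
lemma bij: "bij_betw zeta {\<sigma>. \<sigma> \<le> \<tau>} (Pow (zeta \<tau>))" using bij_iso by (rule conjunct1)
lemma iso: "\<sigma> \<le> \<tau> \<Longrightarrow> \<sigma>' \<le> \<tau> \<Longrightarrow> (\<sigma> \<le> \<sigma>' \<longleftrightarrow> zeta \<sigma> \<subseteq> zeta \<sigma>')"
  using bij_iso[THEN conjunct2] by blast

lemma zeta_mono: "\<sigma> \<le> \<tau> \<Longrightarrow> zeta \<sigma> \<subseteq> zeta \<tau>"
  using iso[of \<sigma> \<tau> \<tau>] by simp

lemma face_ex: assumes "J \<subseteq> zeta \<tau>" shows "\<exists>\<sigma>\<le>\<tau>. zeta \<sigma> = J"
proof -
  have "J \<in> zeta ` {\<sigma>. \<sigma> \<le> \<tau>}" using bij[of \<tau>] assms unfolding bij_betw_def by auto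
  then show ?thesis by auto
qed

lemma face_uniq: "\<sigma> \<le> \<tau> \<Longrightarrow> \<sigma>' \<le> \<tau> \<Longrightarrow> zeta \<sigma> = zeta \<sigma>' \<Longrightarrow> \<sigma> = \<sigma>'"
  using iso[of \<sigma> \<tau> \<sigma>'] iso[of \<sigma>' \<tau> \<sigma>] by auto

lemma below_sub: "\<rho> \<le> \<tau> \<Longrightarrow> \<kappa> \<le> \<tau> \<Longrightarrow> zeta \<rho> \<subseteq> zeta \<kappa> \<Longrightarrow> \<rho> \<le> \<kappa>"
  using iso by blast

lemma vert_below: assumes "\<tau>' \<le> \<tau>" "zeta \<tau>' = {x}" "zeta \<rho> = {x}" shows "\<rho> = \<tau>'"
  using vert[of x] zeta_sub[of \<rho>] assms by auto

lemma vertex_le: assumes "x \<in> zeta \<tau>" "zeta \<rho> = {x}" shows "\<rho> \<le> \<tau>"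
proof -
  obtain \<sigma> where "\<sigma> \<le> \<tau>" "zeta \<sigma> = {x}" using face_ex[of "{x}" \<tau>] assms by auto
  then show ?thesis using vert_below[of \<sigma> \<tau> x \<rho>] assms by auto
qed

lemma Theta_def': "Th \<tau> = {u. (\<forall>j. j \<notin> zeta \<tau> \<longrightarrow> u$j = 0) \<and> (\<forall>j. 0 \<le> u$j) \<and> (\<Sum>j\<in>zeta \<tau> \<inter> Vf. u$j) = 1}"
  unfolding Theta_def by simp

lemma ThetaD:
  assumes "u \<in> Th \<tau>"
  shows "\<And>j. j \<notin> zeta \<tau> \<Longrightarrow> u$j = 0" "\<And>j. 0 \<le> u$j" "(\<Sum>j\<in>zeta \<tau> \<inter> Vf. u$j) = 1"
  using assms unfolding Theta_def by auto

lemma sum_Vf: assumes "u \<in> Th \<tau>" shows "(\<Sum>j\<in>Vf. u$j) = 1"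
proof -
  have "(\<Sum>j\<in>Vf. u$j) = (\<Sum>j\<in>zeta \<tau> \<inter> Vf. u$j)"
    by (rule sum.mono_neutral_right) (simp, blast, use ThetaD(1)[OF assms] in blast)
  then show ?thesis using ThetaD(3)[OF assms] by simp
qed

lemma ThetaI:
  assumes "\<And>j. j \<notin> zeta \<tau> \<Longrightarrow> u$j = 0" "\<And>j. 0 \<le> u$j" "(\<Sum>j\<in>Vf. u$j) = 1"
  shows "u \<in> Th \<tau>"
proof -
  have "(\<Sum>j\<in>Vf. u$j) = (\<Sum>j\<in>zeta \<tau> \<inter> Vf. u$j)"
    by (rule sum.mono_neutral_right) (simp, blast, use assms(1) in blast)
  then show ?thesis using assms unfolding Theta_def by simp
qed

lemma Theta_mono: assumes "\<sigma> \<le> \<tau>" shows "Th \<sigma> \<subseteq> Th \<tau>"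
proof
  fix u assume u: "u \<in> Th \<sigma>"
  have h: "\<And>j. j \<notin> zeta \<tau> \<Longrightarrow> u$j = 0" using ThetaD(1)[OF u] zeta_mono[OF assms] by blast
  show "u \<in> Th \<tau>" by (rule ThetaI[OF h ThetaD(2)[OF u] sum_Vf[OF u]])
qed

lemma Theta_convex: "convex (Th \<tau>)"
proof (rule convexI)
  fix x y :: "real^'v" and a b :: real
  assume x: "x \<in> Th \<tau>" and y: "y \<in> Th \<tau>" and ab: "0 \<le> a" "0 \<le> b" "a + b = 1"
  show "a *\<^sub>R x + b *\<^sub>R y \<in> Th \<tau>"
  proof (rule ThetaI)
    show "\<And>j. j \<notin> zeta \<tau> \<Longrightarrow> (a *\<^sub>R x + b *\<^sub>R y) $ j = 0" using ThetaD(1)[OF x] ThetaD(1)[OF y] by simp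
    show "\<And>j. 0 \<le> (a *\<^sub>R x + b *\<^sub>R y) $ j" using ThetaD(2)[OF x] ThetaD(2)[OF y] ab by simp
    have "(\<Sum>j\<in>Vf. (a *\<^sub>R x + b *\<^sub>R y) $ j) = a * (\<Sum>j\<in>Vf. x$j) + b * (\<Sum>j\<in>Vf. y$j)"
      by (simp add: sum.distrib sum_distrib_left)
    then show "(\<Sum>j\<in>Vf. (a *\<^sub>R x + b *\<^sub>R y) $ j) = 1" using sum_Vf[OF x] sum_Vf[OF y] ab by simp
  qed
qed

lemma in_Dl: "\<tau> \<in> Dl \<longleftrightarrow> zeta \<tau> \<inter> Vf \<noteq> {}" unfolding cDelta_def by simp

lemma Theta_ne: assumes "\<tau> \<in> Dl" shows "\<exists>u. u \<in> Th \<tau>"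
proof -
  obtain a where a: "a \<in> zeta \<tau>" "a \<in> Vf" using assms in_Dl by auto
  let ?u = "(\<chi> j. if j = a then 1 else 0) :: real^'v"
  have "(\<Sum>j\<in>Vf. ?u $ j) = 1" using a by (simp add: sum.delta)
  then have "?u \<in> Th \<tau>" by (intro ThetaI) (use a in auto)
  then show ?thesis by blast
qed

lemma Theta_empty: assumes "\<tau> \<notin> Dl" shows "Th \<tau> = {}"
proof -
  { fix u assume u: "u \<in> Th \<tau>"
    have "zeta \<tau> \<inter> Vf = {}" using assms in_Dl by auto
    then have "(\<Sum>j\<in>zeta \<tau> \<inter> Vf. u$j) = 0" by simp
    with ThetaD(3)[OF u] have False by simp }
  then show ?thesis by auto
qed

lemma Dl_mono: "\<sigma> \<le> \<tau> \<Longrightarrow> \<sigma> \<in> Dl \<Longrightarrow> \<tau> \<in> Dl"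
  using zeta_mono in_Dl by blast

end

definition tm :: "('p \<Rightarrow> 'x \<Rightarrow> real) list \<Rightarrow> rat \<times> (nat \<Rightarrow> nat) \<Rightarrow> 'p \<Rightarrow> 'x \<Rightarrow> real" where
  "tm gs t \<eta> u = real_of_rat (fst t) + (\<Sum>j<length gs. real (snd t j) * (gs!j) \<eta> u)"

definition rte :: "(rat \<times> (nat \<Rightarrow> nat)) list \<Rightarrow> ('p \<Rightarrow> 'x \<Rightarrow> real) list \<Rightarrow> 'p \<Rightarrow> 'x \<Rightarrow> real" where
  "rte P gs \<eta> u = Min ((\<lambda>t. tm gs t \<eta> u) ` set P)"

definition pmul :: "(rat \<times> (nat \<Rightarrow> nat)) list \<Rightarrow> (rat \<times> (nat \<Rightarrow> nat)) list \<Rightarrow> (rat \<times> (nat \<Rightarrow> nat)) list" where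
  "pmul P Q = concat (map (\<lambda>x. map (\<lambda>y. (fst x + fst y, \<lambda>j. snd x j + snd y j)) Q) P)"

lemma trop_eval_Nil: "trop_eval [] ss \<eta> u = \<infinity>"
  unfolding trop_eval_def by simp

lemma tm_ereal: "ereal (real_of_rat a) + (\<Sum>j<length gs. ereal (real (e j)) * (map (\<lambda>g \<eta> u. ereal (g \<eta> u)) gs ! j) \<eta> u)
   = ereal (tm gs (a, e) \<eta> u)"
proof -
  have "(\<Sum>j<length gs. ereal (real (e j)) * (map (\<lambda>g \<eta> u. ereal (g \<eta> u)) gs ! j) \<eta> u)
      = (\<Sum>j<length gs. ereal (real (e j) * (gs ! j) \<eta> u))"
    by (rule sum.cong) auto
  also have "\<dots> = ereal (\<Sum>j<length gs. real (e j) * (gs ! j) \<eta> u)" by (rule sum_ereal)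
  finally show ?thesis unfolding tm_def by simp
qed

lemma trop_eval_rte:
  "P \<noteq> [] \<Longrightarrow> trop_eval P (map (\<lambda>g \<eta> u. ereal (g \<eta> u)) gs) \<eta> u = ereal (rte P gs \<eta> u)"
proof (induction P)
  case Nil then show ?case by simp
next
  case (Cons t P)
  obtain a e where t: "t = (a, e)" by (cases t)
  have "trop_eval (t # P) (map (\<lambda>g \<eta> u. ereal (g \<eta> u)) gs) \<eta> u =
        min (ereal (tm gs t \<eta> u)) (trop_eval P (map (\<lambda>g \<eta> u. ereal (g \<eta> u)) gs) \<eta> u)"
    unfolding trop_eval_def t using tm_ereal[of a e gs \<eta> u] by simp
  show ?case
  proof (cases "P = []")
    case True
    then show ?thesis unfolding trop_eval_def rte_def t using tm_ereal[of a e gs \<eta> u] by simp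
  next
    case False
    have "rte (t # P) gs \<eta> u = min (tm gs t \<eta> u) (rte P gs \<eta> u)"
      unfolding rte_def using False by (simp add: Min_insert)
    then show ?thesis using Cons.IH[OF False]
      \<open>trop_eval (t # P) _ \<eta> u = _\<close> by simp
  qed
qed

lemma tm_comb: "tm gs (fst x + fst y, \<lambda>j. snd x j + snd y j) \<eta> u = tm gs x \<eta> u + tm gs y \<eta> u"
  unfolding tm_def by (simp add: of_rat_add algebra_simps sum.distrib)

lemma set_pmul: "set (pmul P Q) = (\<lambda>(x,y). (fst x + fst y, \<lambda>j. snd x j + snd y j)) ` (set P \<times> set Q)"
  unfolding pmul_def by auto

lemma Min_prod_add:
  fixes F :: "'a \<Rightarrow> real" and G :: "'b \<Rightarrow> real"
  assumes "finite A" "A \<noteq> {}" "finite B" "B \<noteq> {}"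
  shows "Min ((\<lambda>(x,y). F x + G y) ` (A \<times> B)) = Min (F ` A) + Min (G ` B)"
proof (rule antisym)
  have "Min (F ` A) \<in> F ` A" using assms by (intro Min_in) auto
  then obtain x0 where x0: "x0 \<in> A" "F x0 = Min (F ` A)" by auto
  have "Min (G ` B) \<in> G ` B" using assms by (intro Min_in) auto
  then obtain y0 where y0: "y0 \<in> B" "G y0 = Min (G ` B)" by auto
  have "(F x0 + G y0) \<in> (\<lambda>(x,y). F x + G y) ` (A \<times> B)" using x0 y0 by force
  then have "Min ((\<lambda>(x,y). F x + G y) ` (A \<times> B)) \<le> F x0 + G y0"
    using assms by (intro Min_le) auto
  then show "Min ((\<lambda>(x,y). F x + G y) ` (A \<times> B)) \<le> Min (F ` A) + Min (G ` B)"
    using x0 y0 by simp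
next
  show "Min (F ` A) + Min (G ` B) \<le> Min ((\<lambda>(x,y). F x + G y) ` (A \<times> B))"
  proof (subst Min_ge_iff)
    show "finite ((\<lambda>(x,y). F x + G y) ` (A \<times> B))" using assms by auto
    show "(\<lambda>(x,y). F x + G y) ` (A \<times> B) \<noteq> {}" using assms by auto
    show "\<forall>a\<in>(\<lambda>(x,y). F x + G y) ` (A \<times> B). Min (F ` A) + Min (G ` B) \<le> a"
    proof
      fix a assume "a \<in> (\<lambda>(x,y). F x + G y) ` (A \<times> B)"
      then obtain x y where xy: "x \<in> A" "y \<in> B" "a = F x + G y" by auto
      have "Min (F ` A) \<le> F x" using xy assms by auto
      moreover have "Min (G ` B) \<le> G y" using xy assms by auto
      ultimately show "Min (F ` A) + Min (G ` B) \<le> a" using xy by simp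
    qed
  qed
qed

lemma rte_pmul:
  assumes "P \<noteq> []" "Q \<noteq> []"
  shows "rte (pmul P Q) gs \<eta> u = rte P gs \<eta> u + rte Q gs \<eta> u"
proof -
  have "(\<lambda>t. tm gs t \<eta> u) ` set (pmul P Q) = (\<lambda>(x,y). tm gs x \<eta> u + tm gs y \<eta> u) ` (set P \<times> set Q)"
    unfolding set_pmul image_image by (rule image_cong) (auto simp: tm_def of_rat_add sum.distrib algebra_simps)
  then show ?thesis unfolding rte_def using assms
    by (simp add: Min_prod_add)
qed

lemma pmul_ne: assumes "P \<noteq> []" "Q \<noteq> []" shows "pmul P Q \<noteq> []"
proof -
  have "set (pmul P Q) \<noteq> {}" using assms by (simp add: set_pmul)
  then show ?thesis by auto
qed

lemma rte_append:
  assumes "P \<noteq> []" "Q \<noteq> []"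
  shows "rte (P @ Q) gs \<eta> u = min (rte P gs \<eta> u) (rte Q gs \<eta> u)"
  unfolding rte_def using assms by (simp add: image_Un Min_Un)

lemma rte_const: "rte [(c, \<lambda>_. 0)] gs \<eta> u = real_of_rat c"
  unfolding rte_def tm_def by simp

lemma rte_gen: assumes "j < length gs"
  shows "rte [(0, \<lambda>i. if i = j then 1 else 0)] gs \<eta> u = (gs ! j) \<eta> u"
proof -
  have "(\<Sum>i<length gs. real (if i = j then 1 else 0) * (gs ! i) \<eta> u) = (\<Sum>i<length gs. if i = j then (gs ! i) \<eta> u else 0)"
    by (rule sum.cong) auto
  also have "\<dots> = (gs ! j) \<eta> u" using assms by (simp add: sum.delta)
  finally show ?thesis unfolding rte_def tm_def by simp
qed

inductive_set Cl :: "('p \<Rightarrow> 'x \<Rightarrow> real) list \<Rightarrow> ('p \<Rightarrow> 'x \<Rightarrow> real) set" for gs where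
  gen: "j < length gs \<Longrightarrow> gs ! j \<in> Cl gs"
| cst: "(\<lambda>\<eta> u. real_of_rat c) \<in> Cl gs"
| add: "f \<in> Cl gs \<Longrightarrow> g \<in> Cl gs \<Longrightarrow> (\<lambda>\<eta> u. f \<eta> u + g \<eta> u) \<in> Cl gs"
| neg: "f \<in> Cl gs \<Longrightarrow> (\<lambda>\<eta> u. - f \<eta> u) \<in> Cl gs"
| mn: "f \<in> Cl gs \<Longrightarrow> g \<in> Cl gs \<Longrightarrow> (\<lambda>\<eta> u. min (f \<eta> u) (g \<eta> u)) \<in> Cl gs"

lemma Cl_rep:
  assumes "f \<in> Cl gs"
  shows "\<exists>P Q. P \<noteq> [] \<and> Q \<noteq> [] \<and> (\<forall>\<eta> u. f \<eta> u = rte P gs \<eta> u - rte Q gs \<eta> u)"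
  using assms
proof induction
  case (gen j)
  have 1: "\<And>\<eta> u. rte [(0, \<lambda>i. if i = j then 1 else 0)] gs \<eta> u = (gs ! j) \<eta> u" by (rule rte_gen[OF gen])
  have 2: "\<And>\<eta> u. rte [(0, \<lambda>_. 0)] gs \<eta> u = 0" using rte_const[of 0] by simp
  show ?case
    by (rule exI[of _ "[(0, \<lambda>i. if i = j then 1 else 0)]"], rule exI[of _ "[(0, \<lambda>_. 0)]"])
       (simp only: 1 2, simp)
next
  case (cst c)
  have 1: "\<And>\<eta> u. rte [(c, \<lambda>_. 0)] gs \<eta> u = real_of_rat c" by (rule rte_const)
  have 2: "\<And>\<eta> u. rte [(0, \<lambda>_. 0)] gs \<eta> u = 0" using rte_const[of 0] by simp
  show ?case
    by (rule exI[of _ "[(c, \<lambda>_. 0)]"], rule exI[of _ "[(0, \<lambda>_. 0)]"])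
       (simp only: 1 2, simp)
next
  case (add f g)
  then obtain P1 Q1 P2 Q2 where h: "P1 \<noteq> []" "Q1 \<noteq> []" "P2 \<noteq> []" "Q2 \<noteq> []"
    "\<forall>\<eta> u. f \<eta> u = rte P1 gs \<eta> u - rte Q1 gs \<eta> u"
    "\<forall>\<eta> u. g \<eta> u = rte P2 gs \<eta> u - rte Q2 gs \<eta> u" by blast
  show ?case
    by (rule exI[of _ "pmul P1 P2"], rule exI[of _ "pmul Q1 Q2"])
       (use h in \<open>simp add: pmul_ne rte_pmul\<close>)
next
  case (neg f)
  then obtain P Q where h: "P \<noteq> []" "Q \<noteq> []" "\<forall>\<eta> u. f \<eta> u = rte P gs \<eta> u - rte Q gs \<eta> u" by blast
  show ?case by (rule exI[of _ Q], rule exI[of _ P]) (use h in simp)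
next
  case (mn f g)
  then obtain P1 Q1 P2 Q2 where h: "P1 \<noteq> []" "Q1 \<noteq> []" "P2 \<noteq> []" "Q2 \<noteq> []"
    "\<forall>\<eta> u. f \<eta> u = rte P1 gs \<eta> u - rte Q1 gs \<eta> u"
    "\<forall>\<eta> u. g \<eta> u = rte P2 gs \<eta> u - rte Q2 gs \<eta> u" by blast
  show ?case
  proof (rule exI[of _ "pmul P1 Q2 @ pmul P2 Q1"], rule exI[of _ "pmul Q1 Q2"], intro conjI allI)
    show "pmul P1 Q2 @ pmul P2 Q1 \<noteq> []" using h by (simp add: pmul_ne)
    show "pmul Q1 Q2 \<noteq> []" using h by (simp add: pmul_ne)
    fix \<eta> u
    show "min (f \<eta> u) (g \<eta> u) = rte (pmul P1 Q2 @ pmul P2 Q1) gs \<eta> u - rte (pmul Q1 Q2) gs \<eta> u"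
      using h by (simp add: pmul_ne rte_pmul rte_append min_def)
  qed
qed

lemma Cl_cong: "f \<in> Cl gs \<Longrightarrow> (\<And>\<eta> u. g \<eta> u = f \<eta> u) \<Longrightarrow> g \<in> Cl gs"
proof -
  assume "f \<in> Cl gs" "\<And>\<eta> u. g \<eta> u = f \<eta> u"
  moreover have "g = f" using \<open>\<And>\<eta> u. g \<eta> u = f \<eta> u\<close> by (intro ext)
  ultimately show ?thesis by simp
qed

lemma Cl_zero: "(\<lambda>\<eta> u. 0) \<in> Cl gs"
  using Cl.cst[of 0 gs] by simp

lemma Cl_diff: assumes "f \<in> Cl gs" "g \<in> Cl gs" shows "(\<lambda>\<eta> u. f \<eta> u - g \<eta> u) \<in> Cl gs"
proof -
  have "(\<lambda>\<eta> u. f \<eta> u + - g \<eta> u) \<in> Cl gs" by (rule Cl.add[OF assms(1) Cl.neg[OF assms(2)]])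
  then show ?thesis by simp
qed

lemma Cl_max: "f \<in> Cl gs \<Longrightarrow> g \<in> Cl gs \<Longrightarrow> (\<lambda>\<eta> u. max (f \<eta> u) (g \<eta> u)) \<in> Cl gs"
proof -
  assume "f \<in> Cl gs" "g \<in> Cl gs"
  then have "(\<lambda>\<eta> u. - min (- f \<eta> u) (- g \<eta> u)) \<in> Cl gs" by (intro Cl.neg Cl.mn)
  then show ?thesis by (rule Cl_cong) (simp add: max_def min_def)
qed

lemma Cl_sum: "finite A \<Longrightarrow> (\<And>a. a \<in> A \<Longrightarrow> f a \<in> Cl gs) \<Longrightarrow> (\<lambda>\<eta> u. \<Sum>a\<in>A. f a \<eta> u) \<in> Cl gs"
proof (induction A rule: finite_induct)
  case empty then show ?case by (simp add: Cl_zero)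
next
  case (insert x F)
  then have "(\<lambda>\<eta> u. f x \<eta> u + (\<Sum>a\<in>F. f a \<eta> u)) \<in> Cl gs" by (intro Cl.add) auto
  then show ?case by (rule Cl_cong) (use insert in simp)
qed

lemma Cl_Max: "finite A \<Longrightarrow> A \<noteq> {} \<Longrightarrow> (\<And>a. a \<in> A \<Longrightarrow> f a \<in> Cl gs) \<Longrightarrow>
   (\<lambda>\<eta> u. Max ((\<lambda>a. f a \<eta> u) ` A)) \<in> Cl gs"
proof (induction A rule: finite_ne_induct)
  case (singleton x) then show ?case by simp
next
  case (insert x F)
  then have "(\<lambda>\<eta> u. max (f x \<eta> u) (Max ((\<lambda>a. f a \<eta> u) ` F))) \<in> Cl gs" by (intro Cl_max) auto
  then show ?case by (rule Cl_cong) (use insert in simp)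
qed

lemma Cl_Min: "finite A \<Longrightarrow> A \<noteq> {} \<Longrightarrow> (\<And>a. a \<in> A \<Longrightarrow> f a \<in> Cl gs) \<Longrightarrow>
   (\<lambda>\<eta> u. Min ((\<lambda>a. f a \<eta> u) ` A)) \<in> Cl gs"
proof (induction A rule: finite_ne_induct)
  case (singleton x) then show ?case by simp
next
  case (insert x F)
  then have "(\<lambda>\<eta> u. min (f x \<eta> u) (Min ((\<lambda>a. f a \<eta> u) ` F))) \<in> Cl gs" by (intro Cl.mn) auto
  then show ?case by (rule Cl_cong) (use insert in simp)
qed

lemma Cl_natmul: "f \<in> Cl gs \<Longrightarrow> (\<lambda>\<eta> u. real n * f \<eta> u) \<in> Cl gs"
proof (induction n)
  case 0 then show ?case by (simp add: Cl_zero)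
next
  case (Suc n)
  then have "(\<lambda>\<eta> u. f \<eta> u + real n * f \<eta> u) \<in> Cl gs" by (intro Cl.add) auto
  then show ?case by (rule Cl_cong) (simp add: algebra_simps)
qed

lemma Cl_intmul: assumes "f \<in> Cl gs" shows "(\<lambda>\<eta> u. real_of_int k * f \<eta> u) \<in> Cl gs"
proof (cases "k \<ge> 0")
  case True
  then have "(\<lambda>\<eta> u. real (nat k) * f \<eta> u) \<in> Cl gs" using Cl_natmul[OF assms] by blast
  then show ?thesis by (rule Cl_cong) (use True in simp)
next
  case False
  have "(\<lambda>\<eta> u. - (real (nat (-k)) * f \<eta> u)) \<in> Cl gs" by (rule Cl.neg[OF Cl_natmul[OF assms]])
  then show ?thesis by (rule Cl_cong) (use False in simp)
qed


lemma exists_strict_point: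
  fixes Q :: "'a::real_vector set" and g :: "'k \<Rightarrow> 'a \<Rightarrow> real"
  assumes "finite K1" "convex Q" "q0 \<in> Q"
    and aff: "\<And>k x y u. (g k) ((1 - u) *\<^sub>R x + u *\<^sub>R y) = (1 - u) * g k x + u * g k y"
    and le: "\<And>k y. k \<in> K1 \<Longrightarrow> y \<in> Q \<Longrightarrow> g k y \<le> 0"
    and ex: "\<And>k. k \<in> K1 \<Longrightarrow> \<exists>y\<in>Q. g k y < 0"
  shows "\<exists>q\<in>Q. \<forall>k\<in>K1. g k q < 0"
  using assms(1) le ex
proof (induction K1 rule: finite_induct)
  case empty then show ?case using assms(3) by blast
next
  case (insert k F)
  then obtain qF where qF: "qF \<in> Q" "\<forall>k'\<in>F. g k' qF < 0" by blast
  obtain y where y: "y \<in> Q" "g k y < 0" using insert.prems(2) by blast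
  let ?q = "(1/2::real) *\<^sub>R qF + (1/2::real) *\<^sub>R y"
  have "?q \<in> Q" by (rule convexD[OF assms(2) qF(1) y(1)]) simp_all
  moreover have "\<forall>k'\<in>insert k F. g k' ?q < 0"
  proof
    fix k' assume k': "k' \<in> insert k F"
    have e: "g k' ?q = (1 - 1/2) * g k' qF + (1/2) * g k' y" using aff[of k' "1/2" qF y] by simp
    have "g k' qF \<le> 0" "g k' y \<le> 0" using insert.prems(1) k' qF y by auto
    moreover have "g k' qF < 0 \<or> g k' y < 0" using k' qF y by auto
    ultimately show "g k' ?q < 0" unfolding e by auto
  qed
  ultimately show ?case by blast
qed

lemma face_char:
  fixes K :: "('a::real_inner \<times> real) set"
  defines "P \<equiv> {x. \<forall>(a,b)\<in>K. a \<bullet> x + b \<le> 0}"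
  assumes "finite K" "Q face_of P" "Q \<noteq> {}" "x \<in> P"
    and eqs: "\<forall>(a,b)\<in>K. (\<forall>y\<in>Q. a \<bullet> y + b = 0) \<longrightarrow> a \<bullet> x + b = 0"
  shows "x \<in> Q"
proof -
  have QP: "Q \<subseteq> P" and cQ: "convex Q" using assms(3) face_of_imp_subset face_of_imp_convex by auto
  obtain q0 where q0: "q0 \<in> Q" using assms(4) by auto
  define K1 where "K1 = {k\<in>K. \<not> (\<forall>y\<in>Q. fst k \<bullet> y + snd k = 0)}"
  have "\<exists>q\<in>Q. \<forall>k\<in>K1. (\<lambda>k y. fst k \<bullet> y + snd k) k q < 0"
  proof (rule exists_strict_point[OF _ cQ q0])
    show "finite K1" using assms(2) unfolding K1_def by simp
    show "\<And>k x y u. fst k \<bullet> ((1 - u) *\<^sub>R x + u *\<^sub>R y) + snd k = (1 - u) * (fst k \<bullet> x + snd k) + u * (fst k \<bullet> y + snd k)"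
      by (simp add: inner_add_right algebra_simps)
    show "\<And>k y. k \<in> K1 \<Longrightarrow> y \<in> Q \<Longrightarrow> fst k \<bullet> y + snd k \<le> 0"
      using QP unfolding K1_def P_def by (auto simp: case_prod_beta)
    show "\<And>k. k \<in> K1 \<Longrightarrow> \<exists>y\<in>Q. fst k \<bullet> y + snd k < 0"
    proof -
      fix k assume k: "k \<in> K1"
      then obtain y where y: "y \<in> Q" "fst k \<bullet> y + snd k \<noteq> 0" unfolding K1_def by auto
      have "fst k \<bullet> y + snd k \<le> 0" using QP y k unfolding K1_def P_def by (auto simp: case_prod_beta)
      then show "\<exists>y\<in>Q. fst k \<bullet> y + snd k < 0" using y by force
    qed
  qed
  then obtain q where q: "q \<in> Q" "\<And>k. k \<in> K1 \<Longrightarrow> fst k \<bullet> q + snd k < 0" by auto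
  show ?thesis
  proof (cases "x = q")
    case True then show ?thesis using q by simp
  next
    case False
    have ev: "\<forall>\<^sub>F e in at_right (0::real). \<forall>k\<in>K1. fst k \<bullet> q + snd k + e * ((fst k \<bullet> q + snd k) - (fst k \<bullet> x + snd k)) < 0"
    proof (rule eventually_ball_finite)
      show "finite K1" using assms(2) unfolding K1_def by simp
      show "\<forall>k\<in>K1. \<forall>\<^sub>F e in at_right 0. fst k \<bullet> q + snd k + e * ((fst k \<bullet> q + snd k) - (fst k \<bullet> x + snd k)) < 0"
      proof
        fix k assume k: "k \<in> K1"
        have "((\<lambda>e. fst k \<bullet> q + snd k + e * ((fst k \<bullet> q + snd k) - (fst k \<bullet> x + snd k))) \<longlongrightarrow>
               fst k \<bullet> q + snd k + 0 * ((fst k \<bullet> q + snd k) - (fst k \<bullet> x + snd k))) (at_right 0)"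
          by (intro tendsto_intros)
        then show "\<forall>\<^sub>F e in at_right 0. fst k \<bullet> q + snd k + e * ((fst k \<bullet> q + snd k) - (fst k \<bullet> x + snd k)) < 0"
          using q(2)[OF k] by (auto dest: order_tendstoD(2))
      qed
    qed
    have "\<forall>\<^sub>F e in at_right (0::real). 0 < e" by (simp add: eventually_at_right_less)
    with ev have "\<forall>\<^sub>F e in at_right (0::real). 0 < e \<and> (\<forall>k\<in>K1. fst k \<bullet> q + snd k + e * ((fst k \<bullet> q + snd k) - (fst k \<bullet> x + snd k)) < 0)"
      by (rule eventually_conj[rotated])
    then obtain e where e: "0 < e" "\<And>k. k \<in> K1 \<Longrightarrow> fst k \<bullet> q + snd k + e * ((fst k \<bullet> q + snd k) - (fst k \<bullet> x + snd k)) < 0"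
      using eventually_happens'[OF trivial_limit_at_right_real] by blast
    define z where "z = q + e *\<^sub>R (q - x)"
    have zP: "z \<in> P"
      unfolding P_def
    proof (safe)
      fix a b assume ab: "(a, b) \<in> K"
      have zi: "a \<bullet> z + b = (a \<bullet> q + b) + e * ((a \<bullet> q + b) - (a \<bullet> x + b))"
        unfolding z_def by (simp add: inner_add_right inner_diff_right algebra_simps)
      show "a \<bullet> z + b \<le> 0"
      proof (cases "(a,b) \<in> K1")
        case True then show ?thesis using e(2)[OF True] zi by simp
      next
        case False
        then have "\<forall>y\<in>Q. a \<bullet> y + b = 0" using ab unfolding K1_def by auto
        moreover then have "a \<bullet> x + b = 0" using eqs ab by auto
        ultimately show ?thesis using zi q(1) by simp
      qed
    qed
    have "q \<in> open_segment x z"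
      unfolding in_segment
    proof (intro conjI exI[of _ "1 / (1 + e)"])
      show "x \<noteq> z"
      proof
        assume "x = z"
        then have "(1 + e) *\<^sub>R (q - x) = 0" unfolding z_def by (simp add: algebra_simps)
        then show False using False e(1) by simp
      qed
      show "0 < 1 / (1 + e)" using e(1) by simp
      show "1 / (1 + e) < 1" using e(1) by simp
      have "(1 - 1 / (1 + e)) *\<^sub>R x + (1 / (1 + e)) *\<^sub>R z = (1 / (1 + e)) *\<^sub>R ((1 + e) *\<^sub>R q)"
        unfolding z_def using e(1) by (simp add: algebra_simps field_simps)
      also have "\<dots> = q" using e(1) by simp
      finally show "q = (1 - 1 / (1 + e)) *\<^sub>R x + (1 / (1 + e)) *\<^sub>R z" by simp
    qed
    then show ?thesis using assms(3) zP assms(5) q(1) unfolding face_of_def by blast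
  qed
qed

lemma face_support_finite:
  fixes S :: "'a::real_inner set"
  assumes "convex S" "finite D" "\<And>d x. d \<in> D \<Longrightarrow> x \<in> S \<Longrightarrow> 0 \<le> a d \<bullet> x"
  shows "S \<inter> {x. \<forall>d\<in>D. a d \<bullet> x = 0} face_of S"
  using assms(2,3)
proof (induction D rule: finite_induct)
  case empty then show ?case using face_of_refl[OF assms(1)] by simp
next
  case (insert d D)
  have 1: "S \<inter> {x. \<forall>d\<in>D. a d \<bullet> x = 0} face_of S" using insert by auto
  have 2: "S \<inter> {x. a d \<bullet> x = 0} face_of S"
    by (rule face_of_Int_supporting_hyperplane_ge[OF assms(1)]) (use insert in auto)
  have "S \<inter> {x. \<forall>d\<in>insert d D. a d \<bullet> x = 0} = (S \<inter> {x. \<forall>d\<in>D. a d \<bullet> x = 0}) \<inter> (S \<inter> {x. a d \<bullet> x = 0})"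
    by auto
  then show ?case using face_of_Int[OF 1 2] by simp
qed

lemma total_min:
  assumes "finite Z" "Z \<noteq> {}" "\<And>i j. i \<in> Z \<Longrightarrow> j \<in> Z \<Longrightarrow> R i j \<or> R j i"
    "\<And>i j k. R i j \<Longrightarrow> R j k \<Longrightarrow> R i k" "\<And>i. R i i"
  shows "\<exists>m\<in>Z. \<forall>j\<in>Z. R m j"
  using assms(1,2,3)
proof (induction Z rule: finite_ne_induct)
  case (singleton x) then show ?case using assms(5) by auto
next
  case (insert x F)
  then obtain m where m: "m \<in> F" "\<forall>j\<in>F. R m j" by blast
  show ?case
  proof (cases "R x m")
    case True then show ?thesis using m assms(4,5) by blast
  next
    case False then have "R m x" using insert.prems m by blast
    then show ?thesis using m by blast
  qed
qed

lemma ev_min_affine: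
  fixes p w :: "'j \<Rightarrow> real"
  assumes "finite Z" "Z \<noteq> {}"
  shows "\<exists>j0\<in>Z. w j0 = Min (w ` Z) \<and> (\<forall>\<^sub>F t in at_top. \<forall>j\<in>Z. p j0 + t * w j0 \<le> p j + t * w j)"
proof -
  define \<beta> where "\<beta> = Min (w ` Z)"
  define Z0 where "Z0 = {j\<in>Z. w j = \<beta>}"
  have "\<beta> \<in> w ` Z" unfolding \<beta>_def using assms by (intro Min_in) auto
  then have Z0ne: "Z0 \<noteq> {}" unfolding Z0_def by auto
  have fZ0: "finite Z0" using assms(1) unfolding Z0_def by simp
  have "Min (p ` Z0) \<in> p ` Z0" using Z0ne fZ0 by (intro Min_in) auto
  then obtain j0 where j0: "j0 \<in> Z0" "p j0 = Min (p ` Z0)" by auto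
  have wb: "\<And>j. j \<in> Z \<Longrightarrow> \<beta> \<le> w j" unfolding \<beta>_def using assms by auto
  have "\<forall>\<^sub>F t in at_top. \<forall>j\<in>Z. p j0 + t * w j0 \<le> p j + t * w j"
  proof (rule eventually_ball_finite[OF assms(1)], rule ballI)
    fix j assume j: "j \<in> Z"
    show "\<forall>\<^sub>F t in at_top. p j0 + t * w j0 \<le> p j + t * w j"
    proof (cases "w j = \<beta>")
      case True
      then have "j \<in> Z0" using j unfolding Z0_def by auto
      then have "p j0 \<le> p j" using j0 fZ0 by auto
      then show ?thesis using True j0(1) unfolding Z0_def by auto
    next
      case False
      then have wpos: "w j - \<beta> > 0" using wb[OF j] by simp
      have "\<forall>\<^sub>F t in at_top. (p j0 - p j) / (w j - \<beta>) \<le> t" by (rule eventually_ge_at_top)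
      then show ?thesis
      proof (rule eventually_mono)
        fix t assume "(p j0 - p j) / (w j - \<beta>) \<le> t"
        then have "p j0 - p j \<le> t * (w j - \<beta>)" using wpos by (simp add: field_simps)
        then show "p j0 + t * w j0 \<le> p j + t * w j" using j0(1) unfolding Z0_def by (simp add: algebra_simps)
      qed
    qed
  qed
  then show ?thesis using j0(1) unfolding Z0_def \<beta>_def by auto
qed


lemma continuous_on_Min_coord:
  assumes "finite Z" "Z \<noteq> {}"
  shows "continuous_on S (\<lambda>u::real^'n. Min ((\<lambda>j. u$j) ` Z))"
  using assms
proof (induction Z rule: finite_ne_induct)
  case (singleton x) then show ?case by (simp add: continuous_intros)
next
  case (insert x F)
  have "continuous_on S (\<lambda>u::real^'n. min (u$x) (Min ((\<lambda>j. u$j) ` F)))"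
    using insert by (intro continuous_on_min continuous_intros) auto
  then show ?case using insert by (simp add: Min_insert)
qed

definition rv :: "int^'v \<Rightarrow> real^'v" where "rv m = (\<chi> j. real_of_int (m$j))"

lemma rv_inner: "rv m \<bullet> x = (\<Sum>j\<in>UNIV. real_of_int (m$j) * x$j)"
  unfolding rv_def inner_vec_def by simp

lemma rv_neg: "rv (- m) \<bullet> x = - (rv m \<bullet> x)"
  unfolding rv_inner by (simp add: sum_negf)

lemma rv_axis: "rv (axis i 1) \<bullet> x = x$i"
proof -
  have "(\<Sum>j\<in>UNIV. real_of_int (axis i 1 $ j) * x$j) = (\<Sum>j\<in>UNIV. if j = i then x$j else 0)"
    by (rule sum.cong) (auto simp: axis_def)
  then show ?thesis unfolding rv_inner by simp
qed

lemma rv_diff_axis: "rv (axis i 1 - axis j 1) \<bullet> x = x$i - x$j"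
proof -
  have "rv (axis i 1 - axis j 1) \<bullet> x = (\<Sum>k\<in>UNIV. real_of_int (axis i 1 $ k) * x$k) - (\<Sum>k\<in>UNIV. real_of_int (axis j 1 $ k) * x$k)"
    unfolding rv_inner by (simp add: sum_subtractf algebra_simps)
  then show ?thesis using rv_axis[of i x] rv_axis[of j x] unfolding rv_inner by simp
qed

lemma sum_supp:
  assumes "\<And>j. j \<notin> S \<Longrightarrow> x$j = 0"
  shows "(\<Sum>j\<in>S. c j * x$j) = (\<Sum>j\<in>UNIV. c j * (x::real^'v::finite)$j)"
  by (rule sum.mono_neutral_left) (use assms in auto)

lemma convex_polyset: "convex {x::'a::real_inner. \<forall>(a,b)\<in>K. a \<bullet> x + b \<le> 0}"
proof (rule convexI)
  fix x y :: 'a and u v :: real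
  assume x: "x \<in> {x. \<forall>(a,b)\<in>K. a \<bullet> x + b \<le> 0}" and y: "y \<in> {x. \<forall>(a,b)\<in>K. a \<bullet> x + b \<le> 0}"
    and uv: "0 \<le> u" "0 \<le> v" "u + v = 1"
  show "u *\<^sub>R x + v *\<^sub>R y \<in> {x. \<forall>(a,b)\<in>K. a \<bullet> x + b \<le> 0}"
  proof (safe)
    fix a b assume ab: "(a,b) \<in> K"
    have "a \<bullet> x + b \<le> 0" "a \<bullet> y + b \<le> 0" using x y ab by auto
    then have "u * (a \<bullet> x + b) + v * (a \<bullet> y + b) \<le> 0" using uv
      by (meson add_nonpos_nonpos mult_nonneg_nonpos)
    moreover have "a \<bullet> (u *\<^sub>R x + v *\<^sub>R y) + b = u * (a \<bullet> x + b) + v * (a \<bullet> y + b)"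
      using uv by (simp add: inner_add_right algebra_simps) (metis distrib_left mult.right_neutral)
    ultimately show "a \<bullet> (u *\<^sub>R x + v *\<^sub>R y) + b \<le> 0" by simp
  qed
qed

context apc begin

definition phi :: "'p \<Rightarrow> 'p \<Rightarrow> real^'v \<Rightarrow> real" where
  "phi \<rho> \<eta> u = (if \<rho> \<le> \<eta> then Min ((\<lambda>j. u$j) ` zeta \<rho>) else 0)"

lemma finite_zeta: "finite (zeta \<rho>)" by simp

lemma Min_coord_nonneg: assumes "u \<in> Th \<eta>" "zeta \<rho> \<noteq> {}" shows "0 \<le> Min ((\<lambda>j. u$j) ` zeta \<rho>)"
  using assms ThetaD(2)[OF assms(1)] by (subst Min_ge_iff) auto

lemma phi_nonneg: assumes "u \<in> Th \<eta>" "zeta \<rho> \<noteq> {}" shows "0 \<le> phi \<rho> \<eta> u"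
  unfolding phi_def using Min_coord_nonneg[OF assms] by simp

lemma phi_ge: assumes "\<rho> \<le> \<eta>" "zeta \<rho> \<noteq> {}" "\<And>j. j \<in> zeta \<rho> \<Longrightarrow> t \<le> u$j"
  shows "t \<le> phi \<rho> \<eta> u"
  using assms unfolding phi_def by (simp add: Min_ge_iff)

lemma phi_consistent:
  assumes "\<sigma> \<le> \<tau>" "u \<in> Th \<sigma>" "zeta \<rho> \<noteq> {}"
  shows "phi \<rho> \<sigma> u = phi \<rho> \<tau> u"
proof (cases "\<rho> \<le> \<sigma>")
  case True
  then have "\<rho> \<le> \<tau>" using assms(1) by (rule order_trans)
  then show ?thesis using True unfolding phi_def by simp
next
  case False
  show ?thesis
  proof (cases "\<rho> \<le> \<tau>")
    case True
    have "\<not> zeta \<rho> \<subseteq> zeta \<sigma>" using below_sub[OF True assms(1)] False by blast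
    then obtain j where j: "j \<in> zeta \<rho>" "j \<notin> zeta \<sigma>" by auto
    have "u$j = 0" using ThetaD(1)[OF assms(2) j(2)] .
    moreover have "Min ((\<lambda>j. u$j) ` zeta \<rho>) \<le> u$j" by (rule Min_le) (use j(1) in auto)
    ultimately have "Min ((\<lambda>j. u$j) ` zeta \<rho>) \<le> 0" by simp
    moreover have "u \<in> Th \<tau>" using Theta_mono[OF assms(1)] assms(2) by auto
    then have "0 \<le> Min ((\<lambda>j. u$j) ` zeta \<rho>)" using Min_coord_nonneg assms(3) by blast
    ultimately show ?thesis using True False unfolding phi_def by simp
  next
    case False
    then have "\<not> \<rho> \<le> \<sigma>" using assms(1) order_trans by blast
    then show ?thesis using False unfolding phi_def by simp
  qed
qed

lemma phi_cont: assumes "zeta \<rho> \<noteq> {}" shows "continuous_on S (phi \<rho> \<tau>)"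
proof (cases "\<rho> \<le> \<tau>")
  case True
  then have "phi \<rho> \<tau> = (\<lambda>u. Min ((\<lambda>j. u$j) ` zeta \<rho>))" unfolding phi_def by auto
  then show ?thesis using continuous_on_Min_coord[OF finite_zeta assms] by simp
next
  case False
  then have "phi \<rho> \<tau> = (\<lambda>u. 0)" unfolding phi_def by auto
  then show ?thesis by simp
qed

definition Hs :: "(int^'v) set" where
  "Hs = (\<lambda>(i,j). axis i 1 - axis j 1) ` UNIV \<union> (\<lambda>j. axis j 1) ` UNIV \<union> (\<lambda>j. - axis j 1) ` UNIV"

lemma finite_Hs: "finite Hs" unfolding Hs_def by simp

lemma Hs_diff: "axis i 1 - axis j 1 \<in> Hs" unfolding Hs_def by auto
lemma Hs_axis: "axis j 1 \<in> Hs" unfolding Hs_def by auto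
lemma Hs_naxis: "- axis j 1 \<in> Hs" unfolding Hs_def by auto

lemma Hs_neg: assumes "m \<in> Hs" shows "- m \<in> Hs"
proof -
  consider (1) i j where "m = axis i 1 - axis j 1" | (2) j where "m = axis j 1" | (3) j where "m = - axis j 1"
    using assms unfolding Hs_def by auto
  then show ?thesis
  proof cases
    case 1
    have "- m = axis j 1 - axis i 1" using 1 by simp
    then show ?thesis using Hs_diff by simp
  next
    case 2 then show ?thesis using Hs_naxis by simp
  next
    case 3 then show ?thesis using Hs_axis by simp
  qed
qed

definition cell :: "'p \<Rightarrow> (int^'v) set \<Rightarrow> (real^'v) set" where
  "cell \<tau> E = Th \<tau> \<inter> {x. \<forall>m\<in>E. rv m \<bullet> x \<le> 0}"

definition complete :: "(int^'v) set \<Rightarrow> bool" where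
  "complete E \<longleftrightarrow> E \<subseteq> Hs \<and> (\<forall>m\<in>Hs. m \<in> E \<or> - m \<in> E)"

definition Cs :: "'p \<Rightarrow> (real^'v) set set" where
  "Cs \<tau> = {cell \<tau> E | E. complete E} \<union> {{}}"

definition vf :: "real^'v" where "vf = (\<chi> j. if j \<in> Vf then 1 else 0)"

lemma vf_inner: "vf \<bullet> x = (\<Sum>j\<in>Vf. x$j)"
proof -
  have "vf \<bullet> x = (\<Sum>j\<in>UNIV. if j \<in> Vf then x$j else 0)" unfolding vf_def inner_vec_def
    by (rule sum.cong) auto
  also have "\<dots> = (\<Sum>j\<in>Vf. x$j)" by (simp add: sum.If_cases)
  finally show ?thesis .
qed

definition Kset :: "'p \<Rightarrow> (int^'v) set \<Rightarrow> ((real^'v) \<times> real) set" where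
  "Kset \<tau> E = (\<lambda>j. (- axis j 1, 0)) ` UNIV \<union> (\<lambda>j. (axis j 1, 0)) ` (- zeta \<tau>) \<union> {(vf, -1), (- vf, 1)}
     \<union> (\<lambda>m. (rv m, 0)) ` E"

lemma finite_Kset: "finite E \<Longrightarrow> finite (Kset \<tau> E)" unfolding Kset_def by simp

lemma inner_axis': "axis j 1 \<bullet> (x::real^'v) = x$j"
  by (simp add: cart_eq_inner_axis inner_commute)

lemma cell_Kset: "cell \<tau> E = {x. \<forall>(a,b)\<in>Kset \<tau> E. a \<bullet> x + b \<le> 0}"
proof (intro set_eqI iffI)
  fix x assume x: "x \<in> cell \<tau> E"
  then have xT: "x \<in> Th \<tau>" unfolding cell_def by auto
  show "x \<in> {x. \<forall>(a,b)\<in>Kset \<tau> E. a \<bullet> x + b \<le> 0}"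
    using x ThetaD[OF xT] sum_Vf[OF xT]
    unfolding Kset_def cell_def by (auto simp: inner_axis' vf_inner)
next
  fix x assume x: "x \<in> {x. \<forall>(a,b)\<in>Kset \<tau> E. a \<bullet> x + b \<le> 0}"
  have memb: "\<And>a b. (a,b) \<in> Kset \<tau> E \<Longrightarrow> a \<bullet> x + b \<le> 0" using x by auto
  have 1: "\<And>j. 0 \<le> x$j"
  proof -
    fix j
    have "(- axis j 1, 0) \<in> Kset \<tau> E" unfolding Kset_def by auto
    from memb[OF this] show "0 \<le> x$j" by (simp add: inner_axis')
  qed
  have 2: "\<And>j. j \<notin> zeta \<tau> \<Longrightarrow> x$j = 0"
  proof -
    fix j assume j: "j \<notin> zeta \<tau>"
    have "(axis j 1, 0) \<in> Kset \<tau> E" unfolding Kset_def using j by auto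
    from memb[OF this] have "x$j \<le> 0" by (simp add: inner_axis')
    then show "x$j = 0" using 1[of j] by simp
  qed
  have "(vf, -1) \<in> Kset \<tau> E" "(-vf, 1) \<in> Kset \<tau> E" unfolding Kset_def by auto
  from memb[OF this(1)] memb[OF this(2)] have 3: "(\<Sum>j\<in>Vf. x$j) = 1" by (simp add: vf_inner)
  have "x \<in> Th \<tau>" using 1 2 3 by (intro ThetaI)
  moreover have "\<forall>m\<in>E. rv m \<bullet> x \<le> 0"
  proof
    fix m assume "m \<in> E"
    then have "(rv m, 0) \<in> Kset \<tau> E" unfolding Kset_def by auto
    from memb[OF this] show "rv m \<bullet> x \<le> 0" by simp
  qed
  ultimately show "x \<in> cell \<tau> E" unfolding cell_def by auto
qed

lemma convex_cell: "convex (cell \<tau> E)"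
  unfolding cell_Kset by (rule convex_polyset)

lemma complete_finite: "complete E \<Longrightarrow> finite E"
  unfolding complete_def using finite_Hs finite_subset by blast

lemma cell_face:
  assumes E: "complete E" and Q: "Q face_of cell \<tau> E"
  shows "Q \<in> Cs \<tau>"
proof (cases "Q = {}")
  case True then show ?thesis unfolding Cs_def by auto
next
  case False
  define E' where "E' = {m \<in> Hs. \<forall>y\<in>Q. rv m \<bullet> y \<le> 0}"
  have QC: "Q \<subseteq> cell \<tau> E" using Q face_of_imp_subset by blast
  have EE': "E \<subseteq> E'" using QC E unfolding E'_def cell_def complete_def by auto
  have cE': "complete E'" using E EE' unfolding complete_def E'_def by blast
  have "Q = cell \<tau> E'"
  proof
    show "Q \<subseteq> cell \<tau> E'" using QC unfolding cell_def E'_def by auto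
    show "cell \<tau> E' \<subseteq> Q"
    proof
      fix x assume x: "x \<in> cell \<tau> E'"
      have xT: "x \<in> Th \<tau>" using x unfolding cell_def by auto
      have xE: "x \<in> cell \<tau> E" using x EE' unfolding cell_def by auto
      have Q': "Q face_of {x. \<forall>(a,b)\<in>Kset \<tau> E. a \<bullet> x + b \<le> 0}" using Q unfolding cell_Kset .
      show "x \<in> Q"
      proof (rule face_char[OF finite_Kset[OF complete_finite[OF E]] Q' False])
        show "x \<in> {x. \<forall>(a,b)\<in>Kset \<tau> E. a \<bullet> x + b \<le> 0}" using xE unfolding cell_Kset .
        show "\<forall>(a,b)\<in>Kset \<tau> E. (\<forall>y\<in>Q. a \<bullet> y + b = 0) \<longrightarrow> a \<bullet> x + b = 0"
        proof (intro ballI impI, clarify)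
          fix a b assume ab: "(a, b) \<in> Kset \<tau> E" and eq: "\<forall>y\<in>Q. a \<bullet> y + b = 0"
          have case1: "a \<bullet> x + b = 0" if "a = - axis j 1" "b = 0" for j
          proof -
            have "\<forall>y\<in>Q. rv (axis j 1) \<bullet> y \<le> 0" using eq that by (auto simp: rv_axis inner_axis')
            then have "axis j 1 \<in> E'" unfolding E'_def using Hs_axis by auto
            then have "x$j \<le> 0" using x unfolding cell_def by (auto simp: rv_axis)
            then show ?thesis using ThetaD(2)[OF xT, of j] that by (simp add: inner_axis')
          qed
          have case2: "a \<bullet> x + b = 0" if "a = axis j 1" "b = 0" "j \<notin> zeta \<tau>" for j
            using that ThetaD(1)[OF xT] by (simp add: inner_axis')
          have case3: "a \<bullet> x + b = 0" if "a = vf \<and> b = -1 \<or> a = - vf \<and> b = 1"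
            using that sum_Vf[OF xT] by (auto simp: vf_inner)
          have case4: "a \<bullet> x + b = 0" if "a = rv m" "b = 0" "m \<in> E" for m
          proof -
            have "\<forall>y\<in>Q. rv (-m) \<bullet> y \<le> 0" using eq that by (auto simp: rv_neg)
            moreover have "- m \<in> Hs" using Hs_neg that(3) E unfolding complete_def by auto
            ultimately have "- m \<in> E'" unfolding E'_def by auto
            then have "rv (-m) \<bullet> x \<le> 0" using x unfolding cell_def by auto
            moreover have "rv m \<bullet> x \<le> 0" using xE that(3) unfolding cell_def by auto
            ultimately show ?thesis using that by (simp add: rv_neg)
          qed
          show "a \<bullet> x + b = 0" using ab unfolding Kset_def
            using case1 case2 case3 case4 by blast
        qed
      qed
    qed
  qed
  then show ?thesis using cE' unfolding Cs_def by auto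
qed

lemma cell_int_face:
  assumes E: "complete E" and E': "complete E'"
  shows "(cell \<tau> E \<inter> cell \<tau> E') face_of cell \<tau> E"
proof -
  define D where "D = E' - E"
  have eq: "cell \<tau> E \<inter> cell \<tau> E' = cell \<tau> E \<inter> {x. \<forall>m\<in>D. rv m \<bullet> x = 0}"
  proof (intro set_eqI iffI)
    fix x assume x: "x \<in> cell \<tau> E \<inter> cell \<tau> E'"
    have "\<forall>m\<in>D. rv m \<bullet> x = 0"
    proof
      fix m assume m: "m \<in> D"
      then have "rv m \<bullet> x \<le> 0" using x unfolding D_def cell_def by auto
      moreover have "- m \<in> E" using m E E' unfolding D_def complete_def by auto
      then have "rv (-m) \<bullet> x \<le> 0" using x unfolding cell_def by auto
      ultimately show "rv m \<bullet> x = 0" by (simp add: rv_neg)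
    qed
    then show "x \<in> cell \<tau> E \<inter> {x. \<forall>m\<in>D. rv m \<bullet> x = 0}" using x by auto
  next
    fix x assume x: "x \<in> cell \<tau> E \<inter> {x. \<forall>m\<in>D. rv m \<bullet> x = 0}"
    then show "x \<in> cell \<tau> E \<inter> cell \<tau> E'" unfolding cell_def D_def by force
  qed
  have "cell \<tau> E \<inter> {x. \<forall>m\<in>D. rv m \<bullet> x = 0} face_of cell \<tau> E"
  proof (rule face_support_finite[OF convex_cell])
    show "finite D" using complete_finite[OF E'] unfolding D_def by simp
    fix d x assume d: "d \<in> D" and x: "x \<in> cell \<tau> E"
    have "- d \<in> E" using d E E' unfolding D_def complete_def by auto
    then have "rv (-d) \<bullet> x \<le> 0" using x unfolding cell_def by auto
    then show "0 \<le> rv d \<bullet> x" by (simp add: rv_neg)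
  qed
  then show ?thesis using eq by simp
qed

lemma Cs_int:
  assumes "P \<in> Cs \<tau>" "Q \<in> Cs \<tau>"
  shows "(P \<inter> Q) face_of P \<and> (P \<inter> Q) face_of Q"
proof (cases "P = {} \<or> Q = {}")
  case True then show ?thesis by auto
next
  case False
  then obtain E E' where "complete E" "complete E'" "P = cell \<tau> E" "Q = cell \<tau> E'"
    using assms unfolding Cs_def by auto
  then show ?thesis using cell_int_face[of E E' \<tau>] cell_int_face[of E' E \<tau>] by (simp add: Int_commute)
qed

lemma Cs_face: assumes "P \<in> Cs \<tau>" "Q face_of P" shows "Q \<in> Cs \<tau>"
proof (cases "P = {}")
  case True
  then have "Q = {}" using assms(2) face_of_imp_subset by blast
  then show ?thesis unfolding Cs_def by auto
next
  case False
  then obtain E where "complete E" "P = cell \<tau> E" using assms unfolding Cs_def by auto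
  then show ?thesis using cell_face assms(2) by auto
qed

lemma sum_zeta_rv:
  assumes "\<And>j. j \<notin> S \<Longrightarrow> x$j = 0"
  shows "(\<Sum>j\<in>S. real_of_int (m$j) * x$j) = rv m \<bullet> x"
  unfolding rv_inner by (rule sum_supp[OF assms])

lemma cell_poly: assumes "complete E" shows "int_Q_polyhedron (zeta \<tau>) (cell \<tau> E)"
proof -
  define ivf :: "int^'v" where "ivf = (\<chi> j. if j \<in> Vf then 1 else 0)"
  have rvivf: "rv ivf = vf" unfolding rv_def ivf_def vf_def by (simp add: vec_eq_iff)
  define H :: "((int^'v) \<times> rat) set" where
    "H = (\<lambda>j. (axis j 1, 0)) ` UNIV \<union> {(ivf, -1), (-ivf, 1)} \<union> (\<lambda>m. (-m, 0)) ` E"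
  have fH: "finite H" using complete_finite[OF assms] unfolding H_def by simp
  have "cell \<tau> E = {x. (\<forall>j. j \<notin> zeta \<tau> \<longrightarrow> x$j = 0) \<and>
                (\<forall>(m,g)\<in>H. 0 \<le> (\<Sum>j\<in>zeta \<tau>. of_int (m$j) * x$j) + of_rat g)}"
  proof (intro set_eqI iffI)
    fix x assume x: "x \<in> cell \<tau> E"
    then have xT: "x \<in> Th \<tau>" unfolding cell_def by auto
    have z: "\<And>j. j \<notin> zeta \<tau> \<Longrightarrow> x$j = 0" using ThetaD(1)[OF xT] .
    have hh: "\<And>m g. (m,g) \<in> H \<Longrightarrow> 0 \<le> rv m \<bullet> x + of_rat g"
    proof -
      fix m g assume mg: "(m,g) \<in> H"
      then consider (a) j where "m = axis j 1" "g = 0" | (b) "m = ivf" "g = -1" | (c) "m = -ivf" "g = 1"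
        | (d) m' where "m = - m'" "g = 0" "m' \<in> E" unfolding H_def by auto
      then show "0 \<le> rv m \<bullet> x + of_rat g"
      proof cases
        case a then show ?thesis using ThetaD(2)[OF xT] by (simp add: rv_axis)
      next
        case b then show ?thesis using sum_Vf[OF xT] by (simp add: rvivf vf_inner)
      next
        case c then show ?thesis using sum_Vf[OF xT] by (simp add: rvivf vf_inner rv_neg)
      next
        case d then show ?thesis using x unfolding cell_def by (auto simp: rv_neg)
      qed
    qed
    show "x \<in> {x. (\<forall>j. j \<notin> zeta \<tau> \<longrightarrow> x$j = 0) \<and>
                (\<forall>(m,g)\<in>H. 0 \<le> (\<Sum>j\<in>zeta \<tau>. of_int (m$j) * x$j) + of_rat g)}"
    proof (safe)
      show "\<And>j. j \<notin> zeta \<tau> \<Longrightarrow> x$j = 0" by (rule z)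
      fix m g assume "(m,g) \<in> H"
      then show "0 \<le> (\<Sum>j\<in>zeta \<tau>. of_int (m$j) * x$j) + of_rat g" using hh sum_zeta_rv[OF z, where m=m] by simp
    qed
  next
    fix x :: "real^'v" assume x: "x \<in> {x. (\<forall>j. j \<notin> zeta \<tau> \<longrightarrow> x$j = 0) \<and>
                (\<forall>(m,g)\<in>H. 0 \<le> (\<Sum>j\<in>zeta \<tau>. of_int (m$j) * x$j) + of_rat g)}"
    have z: "\<And>j. j \<notin> zeta \<tau> \<Longrightarrow> x$j = 0" using x by auto
    have h: "\<And>m g. (m,g) \<in> H \<Longrightarrow> 0 \<le> rv m \<bullet> x + of_rat g"
    proof -
      fix m g assume "(m,g) \<in> H"
      then have "0 \<le> (\<Sum>j\<in>zeta \<tau>. of_int (m$j) * x$j) + of_rat g" using x by auto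
      then show "0 \<le> rv m \<bullet> x + of_rat g" using sum_zeta_rv[OF z, where m=m] by simp
    qed
    have 1: "\<And>j. 0 \<le> x$j"
    proof -
      fix j
      have "(axis j 1, 0) \<in> H" unfolding H_def by auto
      from h[OF this] show "0 \<le> x$j" by (simp add: rv_axis)
    qed
    have "(ivf, -1) \<in> H" "(-ivf, 1) \<in> H" unfolding H_def by auto
    from h[OF this(1)] h[OF this(2)] have 2: "(\<Sum>j\<in>Vf. x$j) = 1"
      by (simp add: rvivf vf_inner rv_neg)
    have "x \<in> Th \<tau>" using z 1 2 by (intro ThetaI)
    moreover have "\<forall>m\<in>E. rv m \<bullet> x \<le> 0"
    proof
      fix m assume "m \<in> E"
      then have "(-m, 0) \<in> H" unfolding H_def by auto
      from h[OF this] show "rv m \<bullet> x \<le> 0" by (simp add: rv_neg)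
    qed
    ultimately show "x \<in> cell \<tau> E" unfolding cell_def by auto
  qed
  then show ?thesis unfolding int_Q_polyhedron_def using fH by blast
qed

lemma empty_poly: "int_Q_polyhedron (S::'v set) {}"
proof -
  have "{} = {x::real^'v. (\<forall>j. j \<notin> S \<longrightarrow> x$j = 0) \<and>
                (\<forall>(m,g)\<in>{(0::int^'v, -1::rat)}. 0 \<le> (\<Sum>j\<in>S. of_int (m$j) * x$j) + of_rat g)}"
    by auto
  then show ?thesis unfolding int_Q_polyhedron_def by blast
qed

lemma Cs_poly: "P \<in> Cs \<tau> \<Longrightarrow> int_Q_polyhedron (zeta \<tau>) P"
  unfolding Cs_def using cell_poly empty_poly by auto

lemma finite_Cs: "finite (Cs \<tau>)"
proof -
  have "Cs \<tau> \<subseteq> (cell \<tau>) ` Pow Hs \<union> {{}}" unfolding Cs_def complete_def by auto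
  then show ?thesis using finite_Hs by (meson finite_Un finite_Pow_iff finite_imageI finite.emptyI finite_insert finite_subset)
qed

lemma Union_Cs: "\<Union> (Cs \<tau>) = Th \<tau>"
proof
  show "\<Union> (Cs \<tau>) \<subseteq> Th \<tau>" unfolding Cs_def cell_def by auto
  show "Th \<tau> \<subseteq> \<Union> (Cs \<tau>)"
  proof
    fix x assume x: "x \<in> Th \<tau>"
    define E where "E = {m\<in>Hs. rv m \<bullet> x \<le> 0}"
    have "complete E" unfolding complete_def E_def using Hs_neg by (auto simp: rv_neg)
    moreover have "x \<in> cell \<tau> E" using x unfolding cell_def E_def by auto
    ultimately show "x \<in> \<Union> (Cs \<tau>)" unfolding Cs_def by blast
  qed
qed

lemma Cs_subdiv: "poly_subdivision (zeta \<tau>) (Th \<tau>) (Cs \<tau>)"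
  unfolding poly_subdivision_def using finite_Cs Cs_poly Union_Cs Cs_face Cs_int by blast

lemma Cs_restrict:
  assumes "\<sigma> \<le> \<tau>"
  shows "Cs \<sigma> = {P \<in> Cs \<tau>. P \<subseteq> Th \<sigma>}"
proof
  show "Cs \<sigma> \<subseteq> {P \<in> Cs \<tau>. P \<subseteq> Th \<sigma>}"
  proof
    fix P assume P: "P \<in> Cs \<sigma>"
    show "P \<in> {P \<in> Cs \<tau>. P \<subseteq> Th \<sigma>}"
    proof (cases "P = {}")
      case True then show ?thesis unfolding Cs_def by auto
    next
      case False
      then obtain E where E: "complete E" "P = cell \<sigma> E" using P unfolding Cs_def by auto
      define E2 where "E2 = E \<union> (\<lambda>j. axis j 1) ` (- zeta \<sigma>)"
      have cE2: "complete E2" using E(1) Hs_axis unfolding complete_def E2_def by auto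
      have "cell \<tau> E2 = cell \<sigma> E"
      proof (intro set_eqI iffI)
        fix x assume x: "x \<in> cell \<tau> E2"
        then have xT: "x \<in> Th \<tau>" unfolding cell_def by auto
        have "\<And>j. j \<notin> zeta \<sigma> \<Longrightarrow> x$j = 0"
        proof -
          fix j assume "j \<notin> zeta \<sigma>"
          then have "axis j 1 \<in> E2" unfolding E2_def by auto
          then have "rv (axis j 1) \<bullet> x \<le> 0" using x unfolding cell_def by auto
          then have "x$j \<le> 0" by (simp add: rv_axis)
          then show "x$j = 0" using ThetaD(2)[OF xT, of j] by simp
        qed
        then have "x \<in> Th \<sigma>" using ThetaD(2)[OF xT] sum_Vf[OF xT] by (intro ThetaI)
        then show "x \<in> cell \<sigma> E" using x unfolding cell_def E2_def by auto
      next
        fix x assume x: "x \<in> cell \<sigma> E"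
        then have xS: "x \<in> Th \<sigma>" unfolding cell_def by auto
        then have "x \<in> Th \<tau>" using Theta_mono[OF assms] by auto
        moreover have "\<forall>m\<in>E2. rv m \<bullet> x \<le> 0"
          using x ThetaD(1)[OF xS] unfolding cell_def E2_def by (auto simp: rv_axis)
        ultimately show "x \<in> cell \<tau> E2" unfolding cell_def by auto
      qed
      then show ?thesis using cE2 E(2) unfolding Cs_def cell_def by auto
    qed
  qed
  show "{P \<in> Cs \<tau>. P \<subseteq> Th \<sigma>} \<subseteq> Cs \<sigma>"
  proof
    fix P assume P: "P \<in> {P \<in> Cs \<tau>. P \<subseteq> Th \<sigma>}"
    show "P \<in> Cs \<sigma>"
    proof (cases "P = {}")
      case True then show ?thesis unfolding Cs_def by auto
    next
      case False
      then obtain E where E: "complete E" "P = cell \<tau> E" using P unfolding Cs_def by auto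
      have "P = cell \<sigma> E" using P E(2) Theta_mono[OF assms] unfolding cell_def by auto
      then show ?thesis using E(1) unfolding Cs_def by auto
    qed
  qed
qed

lemma phi_affine:
  assumes "zeta \<rho> \<noteq> {}" "P \<in> Cs \<tau>"
  shows "int_Q_affine_on (zeta \<tau>) P (phi \<rho> \<tau>)"
proof (cases "P = {} \<or> \<not> \<rho> \<le> \<tau>")
  case True
  then show ?thesis
  proof
    assume "P = {}" then show ?thesis unfolding int_Q_affine_on_def by auto
  next
    assume "\<not> \<rho> \<le> \<tau>"
    then have "\<forall>x\<in>P. phi \<rho> \<tau> x = (\<Sum>j\<in>zeta \<tau>. of_int ((0::int^'v)$j) * x$j) + of_rat 0"
      unfolding phi_def by simp
    then show ?thesis unfolding int_Q_affine_on_def by blast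
  qed
next
  case False
  then have rt: "\<rho> \<le> \<tau>" and Pne: "P \<noteq> {}" by auto
  then obtain E where E: "complete E" "P = cell \<tau> E" using assms(2) unfolding Cs_def by auto
  define R where "R i j \<longleftrightarrow> (\<forall>x\<in>P. x$i \<le> x$j)" for i j
  have "\<exists>m\<in>zeta \<rho>. \<forall>j\<in>zeta \<rho>. R m j"
  proof (rule total_min[OF finite_zeta assms(1)])
    fix i j
    have "axis i 1 - axis j 1 \<in> E \<or> - (axis i 1 - axis j 1) \<in> E" using E(1) Hs_diff unfolding complete_def by blast
    then show "R i j \<or> R j i"
    proof
      assume "axis i 1 - axis j 1 \<in> E"
      then have "\<forall>x\<in>P. x$i - x$j \<le> 0" using E(2) unfolding cell_def by (auto simp: rv_diff_axis)
      then show ?thesis unfolding R_def by auto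
    next
      assume "- (axis i 1 - axis j 1) \<in> E"
      then have "\<forall>x\<in>P. - (x$i - x$j) \<le> 0" using E(2) unfolding cell_def by (force simp: rv_neg rv_diff_axis)
      then show ?thesis unfolding R_def by auto
    qed
  next
    show "\<And>i j k. R i j \<Longrightarrow> R j k \<Longrightarrow> R i k" unfolding R_def by (meson order_trans)
  next
    show "\<And>i. R i i" unfolding R_def by simp
  qed
  then obtain j0 where j0: "j0 \<in> zeta \<rho>" "\<And>j x. j \<in> zeta \<rho> \<Longrightarrow> x \<in> P \<Longrightarrow> x$j0 \<le> x$j" unfolding R_def by blast
  have j0t: "j0 \<in> zeta \<tau>" using j0(1) zeta_mono[OF rt] by auto
  have "\<forall>x\<in>P. phi \<rho> \<tau> x = (\<Sum>j\<in>zeta \<tau>. of_int ((axis j0 1 :: int^'v)$j) * x$j) + of_rat 0"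
  proof
    fix x assume x: "x \<in> P"
    have "phi \<rho> \<tau> x = x$j0" unfolding phi_def using rt j0 x by (auto intro!: Min_eqI)
    moreover have "(\<Sum>j\<in>zeta \<tau>. of_int ((axis j0 1 :: int^'v)$j) * x$j) = (\<Sum>j\<in>zeta \<tau>. if j = j0 then x$j else 0)"
      by (rule sum.cong) (auto simp: axis_def)
    ultimately show "phi \<rho> \<tau> x = (\<Sum>j\<in>zeta \<tau>. of_int ((axis j0 1 :: int^'v)$j) * x$j) + of_rat 0"
      using j0t by simp
  qed
  then show ?thesis unfolding int_Q_affine_on_def by blast
qed

end

lemma slope_from_affine:
  assumes aff: "\<And>t. t \<ge> T \<Longrightarrow> g (p + t *\<^sub>R w) = a + t * b"
    and sl: "slope_at_infinity g p w s"
  shows "s = b"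
proof -
  have "\<forall>\<^sub>F t in at_top. ((\<lambda>t. g (p + t *\<^sub>R w)) has_real_derivative s) (at t)"
    using sl unfolding slope_at_infinity_def .
  moreover have "\<forall>\<^sub>F t in at_top. T < t" by (rule eventually_gt_at_top)
  ultimately have "\<forall>\<^sub>F t in at_top. ((\<lambda>t. g (p + t *\<^sub>R w)) has_real_derivative s) (at t) \<and> T < t"
    by (rule eventually_conj)
  then obtain t where t: "((\<lambda>t. g (p + t *\<^sub>R w)) has_real_derivative s) (at t)" "T < t"
    using eventually_happens'[OF trivial_limit_at_top_linorder] by blast
  have "((\<lambda>t. a + t * b) has_real_derivative b) (at t)"
    by (auto intro!: derivative_eq_intros)
  then have "((\<lambda>t. g (p + t *\<^sub>R w)) has_real_derivative b) (at t)"
    by (rule has_field_derivative_transform_within_open[where S="{T<..}"]) (use t(2) aff in auto)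
  then show ?thesis using t(1) DERIV_unique by blast
qed

context apc begin

lemma phi_slope:
  assumes z: "zeta \<rho> \<noteq> {}" and sl: "slope_at_infinity (phi \<rho> \<tau>) p w s"
  shows "s = (if \<rho> \<le> \<tau> then Min ((\<lambda>j. w$j) ` zeta \<rho>) else 0)"
proof (cases "\<rho> \<le> \<tau>")
  case True
  obtain j0 where j0: "j0 \<in> zeta \<rho>" "w$j0 = Min ((\<lambda>j. w$j) ` zeta \<rho>)"
    "\<forall>\<^sub>F t in at_top. \<forall>j\<in>zeta \<rho>. p$j0 + t * w$j0 \<le> p$j + t * w$j"
    using ev_min_affine[OF finite_zeta z, of "\<lambda>j. w$j" "\<lambda>j. p$j"] by blast
  then obtain T where T: "\<And>t. t \<ge> T \<Longrightarrow> \<forall>j\<in>zeta \<rho>. p$j0 + t * w$j0 \<le> p$j + t * w$j"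
    unfolding eventually_at_top_linorder by blast
  have "\<And>t. t \<ge> T \<Longrightarrow> phi \<rho> \<tau> (p + t *\<^sub>R w) = p$j0 + t * w$j0"
    unfolding phi_def using True T j0(1) by (auto intro!: Min_eqI)
  from slope_from_affine[OF this sl] show ?thesis using True j0(2) by simp
next
  case False
  have "\<And>t. t \<ge> 0 \<Longrightarrow> phi \<rho> \<tau> (p + t *\<^sub>R w) = 0 + t * 0" unfolding phi_def using False by simp
  from slope_from_affine[OF this sl] show ?thesis using False by simp
qed

lemma phi_slope_eq:
  assumes z: "zeta \<rho> \<noteq> {}"
    and w: "rec_dir Vinf zeta \<tau> w" "rec_dir Vinf zeta \<tau>' w" and sf: "same_fan_dir Vf zeta \<tau> \<tau>' w"
    and s: "slope_at_infinity (phi \<rho> \<tau>) p w s" and s': "slope_at_infinity (phi \<rho> \<tau>') p' w s'"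
  shows "s = s'"
proof -
  have s1: "s = (if \<rho> \<le> \<tau> then Min ((\<lambda>j. w$j) ` zeta \<rho>) else 0)" by (rule phi_slope[OF z s])
  have s2: "s' = (if \<rho> \<le> \<tau>' then Min ((\<lambda>j. w$j) ` zeta \<rho>) else 0)" by (rule phi_slope[OF z s'])
  obtain \<kappa> where k: "\<kappa> \<le> \<tau>" "\<kappa> \<le> \<tau>'" "\<And>j. w$j \<noteq> 0 \<Longrightarrow> j \<in> zeta \<kappa>"
    using sf unfolding same_fan_dir_def by blast
  have wnn: "\<And>j. 0 \<le> w$j" using w(1) unfolding rec_dir_def by auto
  have key: "Min ((\<lambda>j. w$j) ` zeta \<rho>) = 0" if "\<rho> \<le> a" "\<not> \<rho> \<le> b" "\<kappa> \<le> a" "\<kappa> \<le> b" for a b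
  proof (rule ccontr)
    assume ne: "Min ((\<lambda>j. w$j) ` zeta \<rho>) \<noteq> 0"
    have "0 \<le> Min ((\<lambda>j. w$j) ` zeta \<rho>)" using z wnn by (simp add: Min_ge_iff)
    then have pos: "0 < Min ((\<lambda>j. w$j) ` zeta \<rho>)" using ne by simp
    have "zeta \<rho> \<subseteq> zeta \<kappa>"
    proof
      fix j assume j: "j \<in> zeta \<rho>"
      have "Min ((\<lambda>j. w$j) ` zeta \<rho>) \<le> w$j" by (rule Min_le) (use j in auto)
      then show "j \<in> zeta \<kappa>" using pos k(3) by force
    qed
    then have "\<rho> \<le> \<kappa>" using below_sub[OF that(1) that(3)] by simp
    then show False using that(2,4) order_trans by blast
  qed
  show ?thesis
  proof (cases "\<rho> \<le> \<tau>"; cases "\<rho> \<le> \<tau>'")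
    assume "\<rho> \<le> \<tau>" "\<rho> \<le> \<tau>'" then show ?thesis using s1 s2 by simp
  next
    assume "\<rho> \<le> \<tau>" "\<not> \<rho> \<le> \<tau>'" then show ?thesis using s1 s2 key[of \<tau> \<tau>'] k by simp
  next
    assume "\<not> \<rho> \<le> \<tau>" "\<rho> \<le> \<tau>'" then show ?thesis using s1 s2 key[of \<tau>' \<tau>] k by simp
  next
    assume "\<not> \<rho> \<le> \<tau>" "\<not> \<rho> \<le> \<tau>'" then show ?thesis using s1 s2 by simp
  qed
qed

lemma phi_ratfun:
  assumes z: "zeta \<rho> \<noteq> {}"
  shows "rat_fun Vf Vinf zeta (phi \<rho>)"
  unfolding rat_fun_def
proof (intro conjI)
  show "\<forall>\<sigma>\<in>Dl. \<forall>\<tau>\<in>Dl. \<sigma> \<le> \<tau> \<longrightarrow> (\<forall>u\<in>Th \<sigma>. phi \<rho> \<sigma> u = phi \<rho> \<tau> u)"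
    using phi_consistent[OF _ _ z] by blast
  show "\<forall>\<tau>\<in>Dl. continuous_on (Th \<tau>) (phi \<rho> \<tau>)" using phi_cont[OF z] by blast
  show "\<exists>C. (\<forall>\<tau>\<in>Dl. poly_subdivision (zeta \<tau>) (Th \<tau>) (C \<tau>) \<and>
            (\<forall>P\<in>C \<tau>. int_Q_affine_on (zeta \<tau>) P (phi \<rho> \<tau>))) \<and>
        (\<forall>\<sigma>\<in>Dl. \<forall>\<tau>\<in>Dl. \<sigma> \<le> \<tau> \<longrightarrow> C \<sigma> = {P\<in>C \<tau>. P \<subseteq> Th \<sigma>})"
    by (rule exI[of _ Cs]) (use Cs_subdiv phi_affine[OF z] Cs_restrict in blast)
  show "\<forall>\<tau>\<in>Dl. \<forall>\<tau>'\<in>Dl. \<forall>p\<in>Th \<tau>. \<forall>p'\<in>Th \<tau>'. \<forall>w s s'.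
        rec_dir Vinf zeta \<tau> w \<and> rec_dir Vinf zeta \<tau>' w \<and> same_fan_dir Vf zeta \<tau> \<tau>' w \<and>
        slope_at_infinity (phi \<rho> \<tau>) p w s \<and> slope_at_infinity (phi \<rho> \<tau>') p' w s' \<longrightarrow> s = s'"
    using phi_slope_eq[OF z] by blast
qed

lemma phi_RatD:
  assumes z: "zeta \<rho> \<noteq> {}"
  shows "(\<lambda>\<eta> u. ereal (phi \<rho> \<eta> u)) \<in> RatD Vf Vinf zeta"
  unfolding RatD_def using phi_ratfun[OF z] by blast

end

lemma finite_crossings:
  fixes al be :: "'i \<Rightarrow> real"
  assumes "finite I"
  shows "finite {t. \<exists>i\<in>I. \<exists>j\<in>I. (al i, be i) \<noteq> (al j, be j) \<and> al i + be i * t = al j + be j * t}"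
proof -
  have "{t. \<exists>i\<in>I. \<exists>j\<in>I. (al i, be i) \<noteq> (al j, be j) \<and> al i + be i * t = al j + be j * t}
        \<subseteq> (\<lambda>(i,j). (al j - al i) / (be i - be j)) ` (I \<times> I)"
  proof
    fix t assume "t \<in> {t. \<exists>i\<in>I. \<exists>j\<in>I. (al i, be i) \<noteq> (al j, be j) \<and> al i + be i * t = al j + be j * t}"
    then obtain i j where ij: "i \<in> I" "j \<in> I" "(al i, be i) \<noteq> (al j, be j)" "al i + be i * t = al j + be j * t" by auto
    have "be i \<noteq> be j" using ij(3,4) by auto
    then have "t = (al j - al i) / (be i - be j)" using ij(4) by (simp add: field_simps)
    then show "t \<in> (\<lambda>(i,j). (al j - al i) / (be i - be j)) ` (I \<times> I)" using ij(1,2) by force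
  qed
  then show ?thesis using assms finite_subset by blast
qed

lemma pl_right:
  fixes g :: "real \<Rightarrow> real" and al be :: "'i \<Rightarrow> real"
  assumes fI: "finite I" and cg: "continuous_on {0..1} g"
    and cov: "\<And>t. t \<in> {0..1} \<Longrightarrow> \<exists>i\<in>I. g t = al i + be i * t"
    and a: "0 \<le> a" "a < 1"
  shows "\<exists>\<delta>>0. a + \<delta> \<le> 1 \<and> (\<exists>i\<in>I. \<forall>s\<in>{a..a+\<delta>}. g s = al i + be i * s)"
proof -
  define X where "X = {t. \<exists>i\<in>I. \<exists>j\<in>I. (al i, be i) \<noteq> (al j, be j) \<and> al i + be i * t = al j + be j * t}"
  have fX: "finite X" unfolding X_def by (rule finite_crossings[OF fI])
  define Y where "Y = {t\<in>X. a < t}"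
  have fY: "finite Y" using fX unfolding Y_def by simp
  define \<delta> where "\<delta> = (if Y = {} then (1 - a) / 2 else min ((1 - a) / 2) ((Min Y - a) / 2))"
  have Ypos: "Y \<noteq> {} \<Longrightarrow> a < Min Y" using fY unfolding Y_def by (subst Min_gr_iff) auto
  have dpos: "\<delta> > 0" unfolding \<delta>_def using a Ypos by auto
  have "\<delta> \<le> (1 - a) / 2"
  proof (cases "Y = {}")
    case True then show ?thesis unfolding \<delta>_def by simp
  next
    case False
    then have "\<delta> = min ((1 - a) / 2) ((Min Y - a) / 2)" unfolding \<delta>_def by simp
    then show ?thesis by (metis min.cobounded1)
  qed
  then have d1: "a + \<delta> \<le> 1" using a by argo
  have noX: "\<And>t. a < t \<Longrightarrow> t \<le> a + \<delta> \<Longrightarrow> t \<notin> X"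
  proof
    fix t assume t: "a < t" "t \<le> a + \<delta>" "t \<in> X"
    then have "t \<in> Y" unfolding Y_def by auto
    then have "Min Y \<le> t" using fY by auto
    moreover have "a + \<delta> < Min Y"
    proof -
      have Yne: "Y \<noteq> {}" using \<open>t \<in> Y\<close> by auto
      then have "\<delta> = min ((1 - a) / 2) ((Min Y - a) / 2)" unfolding \<delta>_def by simp
      then have "\<delta> \<le> (Min Y - a) / 2" by (metis min.cobounded2)
      then show ?thesis using Ypos[OF Yne] by argo
    qed
    ultimately show False using t by simp
  qed
  define S where "S = {a<..a+\<delta>}"
  have Ssub: "S \<subseteq> {0..1}" unfolding S_def using a d1 by auto
  have s0: "a + \<delta> \<in> S" unfolding S_def using dpos by auto
  have s01: "a + \<delta> \<in> {0..1}" using Ssub s0 by (rule subsetD)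
  obtain i0 where i0: "i0 \<in> I" "g (a + \<delta>) = al i0 + be i0 * (a + \<delta>)" using cov[OF s01] by (elim bexE)
  define A where "A = {t \<in> {0..1}. g t - (al i0 + be i0 * t) = 0}"
  define B where "B = \<Union> ((\<lambda>j. {t \<in> {0..1}. g t - (al j + be j * t) = 0}) ` {j\<in>I. (al j, be j) \<noteq> (al i0, be i0)})"
  have cA: "closed A" unfolding A_def
    by (rule continuous_closed_preimage_constant) (auto intro!: continuous_intros cg)
  have cj: "closed {t \<in> {0..1}. g t - (al j + be j * t) = 0}" for j
    by (rule continuous_closed_preimage_constant) (auto intro!: continuous_intros cg)
  have cB: "closed B" unfolding B_def
    by (rule closed_Union) (use fI cj in auto)
  have "A \<inter> B \<inter> S = {}"
  proof (rule ccontr)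
    assume "A \<inter> B \<inter> S \<noteq> {}"
    then obtain t where t: "t \<in> A" "t \<in> B" "t \<in> S" by blast
    from t(2) obtain j where j: "j \<in> I" "(al j, be j) \<noteq> (al i0, be i0)" "g t - (al j + be j * t) = 0"
      unfolding B_def by blast
    from t(1) have "g t - (al i0 + be i0 * t) = 0" unfolding A_def by blast
    with j(3) have "al j + be j * t = al i0 + be i0 * t" by simp
    then have "t \<in> X" unfolding X_def using j(1,2) i0(1) by blast
    then show False using noX t(3) unfolding S_def by auto
  qed
  moreover have "S \<subseteq> A \<union> B"
  proof
    fix t assume t: "t \<in> S"
    have t01: "t \<in> {0..1}" using Ssub t by (rule subsetD)
    obtain i where i: "i \<in> I" "g t = al i + be i * t" using cov[OF t01] by (elim bexE)
    show "t \<in> A \<union> B"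
    proof (cases "(al i, be i) = (al i0, be i0)")
      case True then show ?thesis using i t01 unfolding A_def by auto
    next
      case False
      then have "i \<in> {j\<in>I. (al j, be j) \<noteq> (al i0, be i0)}" using i(1) by simp
      moreover have "t \<in> {t \<in> {0..1}. g t - (al i + be i * t) = 0}" using t01 i(2) by simp
      ultimately show ?thesis unfolding B_def by (intro UnI2 UN_I)
    qed
  qed
  ultimately have "A \<inter> S = {} \<or> B \<inter> S = {}"
    using connected_closedD[of S A B] cA cB unfolding S_def by (simp add: connected_Ioc)
  moreover have "a + \<delta> \<in> A \<inter> S" using s0 i0 Ssub unfolding A_def by auto
  ultimately have "B \<inter> S = {}" by auto
  then have "S \<subseteq> A" using \<open>S \<subseteq> A \<union> B\<close> by auto
  then have "closure S \<subseteq> A" using cA by (rule closure_minimal)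
  then have "{a..a+\<delta>} \<subseteq> A" unfolding S_def using dpos by (simp add: closure_greaterThanAtMost)
  then have "\<forall>s\<in>{a..a+\<delta>}. g s = al i0 + be i0 * s" unfolding A_def by auto
  then show ?thesis using dpos d1 i0(1) by blast
qed

lemma ovch1d:
  fixes g :: "real \<Rightarrow> real" and al be :: "'i \<Rightarrow> real"
  assumes fI: "finite I" and cg: "continuous_on {0..1} g"
    and cov: "\<And>t. t \<in> {0..1} \<Longrightarrow> \<exists>i\<in>I. g t = al i + be i * t"
  shows "\<exists>i\<in>I. al i \<le> g 0 \<and> g 1 \<le> al i + be i"
proof (rule ccontr)
  assume contra: "\<not> (\<exists>i\<in>I. al i \<le> g 0 \<and> g 1 \<le> al i + be i)"
  define D where "D = {i\<in>I. al i \<le> g 0}"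
  have fD: "finite D" using fI unfolding D_def by simp
  obtain i00 where i00: "i00 \<in> I" "g 0 = al i00 + be i00 * 0" using cov[of 0] by auto
  have Dne: "D \<noteq> {}" using i00 unfolding D_def by auto
  have D1: "\<And>i. i \<in> D \<Longrightarrow> al i + be i < g 1" using contra unfolding D_def by force
  define \<psi> where "\<psi> t = Max ((\<lambda>i. al i + be i * t) ` D)" for t
  have psi_ge: "\<And>i t. i \<in> D \<Longrightarrow> al i + be i * t \<le> \<psi> t" unfolding \<psi>_def using fD by auto
  have psi_in: "\<And>t. \<exists>i\<in>D. \<psi> t = al i + be i * t"
  proof -
    fix t
    have "\<psi> t \<in> (\<lambda>i. al i + be i * t) ` D" unfolding \<psi>_def using fD Dne by (intro Max_in) auto
    then show "\<exists>i\<in>D. \<psi> t = al i + be i * t" by auto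
  qed
  have psi1: "\<psi> 1 < g 1" using psi_in[of 1] D1 by auto
  define T where "T = \<Union> ((\<lambda>i. {0..1} \<inter> (\<lambda>t. g t - (al i + be i * t)) -` {..0}) ` D)"
  have ci: "closed ({0..1} \<inter> (\<lambda>t. g t - (al i + be i * t)) -` {..0})" for i
  proof (rule continuous_closed_preimage)
    show "continuous_on {0..1} (\<lambda>t. g t - (al i + be i * t))" by (intro continuous_on_diff cg continuous_intros)
  qed auto
  have cT: "closed T" unfolding T_def
    by (rule closed_Union) (use fD ci in auto)
  have T_iff: "\<And>t. t \<in> T \<longleftrightarrow> t \<in> {0..1} \<and> g t \<le> \<psi> t"
  proof -
    fix t
    show "t \<in> T \<longleftrightarrow> t \<in> {0..1} \<and> g t \<le> \<psi> t"
    proof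
      assume "t \<in> T"
      then obtain i where "i \<in> D" "t \<in> {0..1}" "g t \<le> al i + be i * t" unfolding T_def by auto
      then show "t \<in> {0..1} \<and> g t \<le> \<psi> t" using psi_ge[of i t] by auto
    next
      assume h: "t \<in> {0..1} \<and> g t \<le> \<psi> t"
      obtain i where "i \<in> D" "\<psi> t = al i + be i * t" using psi_in by blast
      then show "t \<in> T" using h unfolding T_def by auto
    qed
  qed
  have "0 \<in> T" using T_iff i00 psi_ge[of i00 0] D_def by auto
  have Tb: "bdd_above T" using T_iff by (auto intro: bdd_aboveI[of _ 1])
  define a where "a = Sup T"
  have aT: "a \<in> T" unfolding a_def using cT \<open>0 \<in> T\<close> Tb by (intro closed_contains_Sup) auto
  have a_ge: "\<And>t. t \<in> T \<Longrightarrow> t \<le> a" unfolding a_def using Tb by (simp add: cSup_upper)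
  have a0: "0 \<le> a" using a_ge[OF \<open>0 \<in> T\<close>] .
  have a1: "a < 1"
  proof -
    have "a \<le> 1" using aT T_iff by auto
    moreover have "1 \<notin> T" using T_iff psi1 by auto
    ultimately show ?thesis using aT by (cases "a = 1") auto
  qed
  obtain \<delta> k where dk: "\<delta> > 0" "a + \<delta> \<le> 1" "k \<in> I" "\<And>s. s \<in> {a..a+\<delta>} \<Longrightarrow> g s = al k + be k * s"
    using pl_right[OF fI cg cov a0 a1] by blast
  have gt: "\<And>t. a < t \<Longrightarrow> t \<le> 1 \<Longrightarrow> \<psi> t < g t"
  proof -
    fix t assume "a < t" "t \<le> 1"
    then have "t \<notin> T" using a_ge by force
    then show "\<psi> t < g t" using T_iff \<open>a < t\<close> \<open>t \<le> 1\<close> a0 by auto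
  qed
  have ad: "\<psi> (a + \<delta>) < al k + be k * (a + \<delta>)" using gt[of "a + \<delta>"] dk by auto
  have kD: "k \<notin> D" using ad psi_ge[of k "a + \<delta>"] by auto
  then have k0: "g 0 < al k" using dk(3) unfolding D_def by auto
  have ga: "al k + be k * a \<le> \<psi> a" using aT T_iff dk(4)[of a] dk(1) by auto
  show False
  proof (cases "a = 0")
    case True
    then show ?thesis using ga k0 psi_in[of 0] D_def by auto
  next
    case False
    then have apos: "0 < a" using a0 by simp
    define lam where "lam = \<delta> / (a + \<delta>)"
    have lam: "0 < lam" "lam < 1" unfolding lam_def using apos dk(1) by (auto simp: field_simps)
    have aeq: "a = lam * 0 + (1 - lam) * (a + \<delta>)" unfolding lam_def using apos dk(1) by (simp add: field_simps)
    obtain i where i: "i \<in> D" "\<psi> a = al i + be i * a" using psi_in by blast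
    have a2: "(1 - lam) * (a + \<delta>) = a" using aeq by simp
    have e1: "lam * (al i + be i * 0) + (1 - lam) * (al i + be i * (a + \<delta>)) = al i + be i * ((1 - lam) * (a + \<delta>))"
      by (simp add: algebra_simps)
    have "\<psi> a = lam * (al i + be i * 0) + (1 - lam) * (al i + be i * (a + \<delta>))"
      using i(2) unfolding e1 a2 .
    also have "\<dots> \<le> lam * \<psi> 0 + (1 - lam) * \<psi> (a + \<delta>)"
      using psi_ge[OF i(1), of 0] psi_ge[OF i(1), of "a+\<delta>"] lam
      by (intro add_mono mult_left_mono) auto
    finally have c1: "\<psi> a \<le> lam * \<psi> 0 + (1 - lam) * \<psi> (a + \<delta>)" .
    have "\<psi> 0 = g 0"
    proof -
      obtain i' where "i' \<in> D" "\<psi> 0 = al i' + be i' * 0" using psi_in by blast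
      then have "\<psi> 0 \<le> g 0" unfolding D_def by auto
      moreover have "g 0 \<le> \<psi> 0" using psi_ge[of i00 0] i00 D_def by auto
      ultimately show ?thesis by simp
    qed
    then have c2: "\<psi> 0 < al k" using k0 by simp
    have e2: "lam * al k + (1 - lam) * (al k + be k * (a + \<delta>)) = al k + be k * ((1 - lam) * (a + \<delta>))"
      by (simp add: algebra_simps)
    have c3: "al k + be k * a = lam * al k + (1 - lam) * (al k + be k * (a + \<delta>))"
      unfolding e2 a2 ..
    have "lam * \<psi> 0 + (1 - lam) * \<psi> (a + \<delta>) < lam * al k + (1 - lam) * (al k + be k * (a + \<delta>))"
      using c2 ad lam by (intro add_strict_mono mult_strict_left_mono) auto
    then show False using c1 c3 ga by linarith
  qed
qed


definition L :: "(int^'v::finite) \<times> rat \<Rightarrow> real^'v \<Rightarrow> real" where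
  "L i x = rv (fst i) \<bullet> x + real_of_rat (snd i)"

lemma L_comb: "L i ((1 - t) *\<^sub>R x + t *\<^sub>R y) = L i x + (L i y - L i x) * t"
  unfolding L_def by (simp add: inner_add_right algebra_simps)

definition MM :: "'s set \<Rightarrow> ('s \<Rightarrow> 'i set) \<Rightarrow> ('i \<Rightarrow> real) \<Rightarrow> real" where
  "MM A B h = Max ((\<lambda>a. Min (h ` B a)) ` A)"

locale ratf = apc Vf Vinf zeta for Vf Vinf :: "'v::finite set" and zeta :: "'p::{finite,order} \<Rightarrow> 'v set" +
  fixes f :: "'p \<Rightarrow> real^'v \<Rightarrow> real"
  assumes rf: "rat_fun Vf Vinf zeta f"
begin

lemma rf_parts:
  "(\<forall>\<sigma>\<in>Dl. \<forall>\<tau>\<in>Dl. \<sigma> \<le> \<tau> \<longrightarrow> (\<forall>u\<in>Th \<sigma>. f \<sigma> u = f \<tau> u))"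
  "(\<forall>\<tau>\<in>Dl. continuous_on (Th \<tau>) (f \<tau>))"
  "(\<exists>C :: 'p \<Rightarrow> (real^'v) set set.
        (\<forall>\<tau>\<in>Dl. poly_subdivision (zeta \<tau>) (Th \<tau>) (C \<tau>) \<and>
            (\<forall>P\<in>C \<tau>. int_Q_affine_on (zeta \<tau>) P (f \<tau>))) \<and>
        (\<forall>\<sigma>\<in>Dl. \<forall>\<tau>\<in>Dl. \<sigma> \<le> \<tau> \<longrightarrow> C \<sigma> = {P\<in>C \<tau>. P \<subseteq> Th \<sigma>}))"
  "(\<forall>\<tau>\<in>Dl. \<forall>\<tau>'\<in>Dl. \<forall>p\<in>Th \<tau>. \<forall>p'\<in>Th \<tau>'. \<forall>w s s'.
        rec_dir Vinf zeta \<tau> w \<and> rec_dir Vinf zeta \<tau>' w \<and> same_fan_dir Vf zeta \<tau> \<tau>' w \<and>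
        slope_at_infinity (f \<tau>) p w s \<and> slope_at_infinity (f \<tau>') p' w s' \<longrightarrow> s = s')"
  using rf[unfolded rat_fun_def] by (rule conjunct1, rule conjunct2[THEN conjunct1],
     rule conjunct2[THEN conjunct2, THEN conjunct1], rule conjunct2[THEN conjunct2, THEN conjunct2])

lemma f_cons: "\<sigma> \<in> Dl \<Longrightarrow> \<tau> \<in> Dl \<Longrightarrow> \<sigma> \<le> \<tau> \<Longrightarrow> u \<in> Th \<sigma> \<Longrightarrow> f \<sigma> u = f \<tau> u"
  using rf_parts(1) by blast

lemma f_cont: "\<tau> \<in> Dl \<Longrightarrow> continuous_on (Th \<tau>) (f \<tau>)"
  using rf_parts(2) by blast

lemma f_slope:
  "\<tau> \<in> Dl \<Longrightarrow> \<tau>' \<in> Dl \<Longrightarrow> p \<in> Th \<tau> \<Longrightarrow> p' \<in> Th \<tau>' \<Longrightarrow>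
   rec_dir Vinf zeta \<tau> w \<Longrightarrow> rec_dir Vinf zeta \<tau>' w \<Longrightarrow> same_fan_dir Vf zeta \<tau> \<tau>' w \<Longrightarrow>
   slope_at_infinity (f \<tau>) p w s \<Longrightarrow> slope_at_infinity (f \<tau>') p' w s' \<Longrightarrow> s = s'"
  using rf_parts(4) by blast

lemma f_pieces:
  assumes "\<tau> \<in> Dl"
  shows "\<exists>I. finite I \<and> (\<forall>x\<in>Th \<tau>. \<exists>i\<in>I. f \<tau> x = L i x)"
proof -
  obtain C :: "'p \<Rightarrow> (real^'v) set set" where C: "\<forall>\<tau>\<in>Dl. poly_subdivision (zeta \<tau>) (Th \<tau>) (C \<tau>) \<and>
            (\<forall>P\<in>C \<tau>. int_Q_affine_on (zeta \<tau>) P (f \<tau>))"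
    using rf_parts(3) by (elim exE conjE)
  have C12: "poly_subdivision (zeta \<tau>) (Th \<tau>) (C \<tau>) \<and> (\<forall>P\<in>C \<tau>. int_Q_affine_on (zeta \<tau>) P (f \<tau>))"
    using C assms by (rule bspec)
  have C1: "poly_subdivision (zeta \<tau>) (Th \<tau>) (C \<tau>)" using C12 by (rule conjunct1)
  have C2: "\<forall>P\<in>C \<tau>. int_Q_affine_on (zeta \<tau>) P (f \<tau>)" using C12 by (rule conjunct2)
  have fC: "finite (C \<tau>)" and UC: "\<Union> (C \<tau>) = Th \<tau>" using C1 unfolding poly_subdivision_def by blast+
  have "\<forall>P\<in>C \<tau>. \<exists>mg::(int^'v) \<times> rat. \<forall>x\<in>P. f \<tau> x = (\<Sum>j\<in>zeta \<tau>. of_int (fst mg $ j) * x$j) + of_rat (snd mg)"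
  proof
    fix P assume "P \<in> C \<tau>"
    then have "int_Q_affine_on (zeta \<tau>) P (f \<tau>)" using C2 by blast
    then obtain m :: "int^'v" and g :: rat where "\<forall>x\<in>P. f \<tau> x = (\<Sum>j\<in>zeta \<tau>. of_int (m $ j) * x$j) + of_rat g"
      unfolding int_Q_affine_on_def by blast
    then show "\<exists>mg::(int^'v) \<times> rat. \<forall>x\<in>P. f \<tau> x = (\<Sum>j\<in>zeta \<tau>. of_int (fst mg $ j) * x$j) + of_rat (snd mg)"
      by (intro exI[of _ "(m,g)"]) simp
  qed
  then have "\<exists>h. \<forall>P\<in>C \<tau>. \<forall>x\<in>P. f \<tau> x = (\<Sum>j\<in>zeta \<tau>. of_int (fst (h P) $ j) * x$j) + of_rat (snd (h P))"
    by (rule bchoice)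
  then obtain h where h: "\<forall>P\<in>C \<tau>. \<forall>x\<in>P. f \<tau> x = (\<Sum>j\<in>zeta \<tau>. of_int (fst (h P) $ j) * x$j) + of_rat (snd (h P))"
    by (elim exE)
  have "\<forall>x\<in>Th \<tau>. \<exists>i\<in>h ` C \<tau>. f \<tau> x = L i x"
  proof
    fix x assume x: "x \<in> Th \<tau>"
    then obtain P where P: "P \<in> C \<tau>" "x \<in> P" using UC by blast
    have "f \<tau> x = (\<Sum>j\<in>zeta \<tau>. of_int (fst (h P) $ j) * x$j) + of_rat (snd (h P))"
      using h P by blast
    then have "f \<tau> x = rv (fst (h P)) \<bullet> x + of_rat (snd (h P))"
      using sum_zeta_rv[OF ThetaD(1)[OF x], where m="fst (h P)"] by simp
    then show "\<exists>i\<in>h ` C \<tau>. f \<tau> x = L i x" using P(1) unfolding L_def by auto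
  qed
  then show ?thesis using fC by blast
qed

definition Ip :: "'p \<Rightarrow> ((int^'v) \<times> rat) set" where
  "Ip \<tau> = (SOME I. finite I \<and> (\<forall>x\<in>Th \<tau>. \<exists>i\<in>I. f \<tau> x = L i x))"

lemma Ip_both: assumes "\<tau> \<in> Dl" shows "finite (Ip \<tau>) \<and> (\<forall>x\<in>Th \<tau>. \<exists>i\<in>Ip \<tau>. f \<tau> x = L i x)"
  unfolding Ip_def by (rule someI_ex[OF f_pieces[OF assms]])

lemma Ip: assumes "\<tau> \<in> Dl" shows "finite (Ip \<tau>)" "\<And>x. x \<in> Th \<tau> \<Longrightarrow> \<exists>i\<in>Ip \<tau>. f \<tau> x = L i x"
  using Ip_both[OF assms] by blast+

lemma ovch_pair:
  assumes \<tau>: "\<tau> \<in> Dl" and x: "x \<in> Th \<tau>" and y: "y \<in> Th \<tau>"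
  shows "\<exists>i\<in>Ip \<tau>. L i x \<le> f \<tau> x \<and> f \<tau> y \<le> L i y"
proof -
  define g where "g t = f \<tau> ((1 - t) *\<^sub>R x + t *\<^sub>R y)" for t
  have seg: "\<And>t. t \<in> {0..1} \<Longrightarrow> (1 - t) *\<^sub>R x + t *\<^sub>R y \<in> Th \<tau>"
    using convexD[OF Theta_convex x y] by auto
  have c1: "continuous_on {0..1} (\<lambda>t::real. (1 - t) *\<^sub>R x + t *\<^sub>R y)"
    by (intro continuous_intros)
  have c2: "(\<lambda>t::real. (1 - t) *\<^sub>R x + t *\<^sub>R y) ` {0..1} \<subseteq> Th \<tau>" using seg by blast
  have cg: "continuous_on {0..1} g" unfolding g_def
    by (rule continuous_on_compose2[OF f_cont[OF \<tau>] c1 c2])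
  have cov: "\<exists>i\<in>Ip \<tau>. g t = L i x + (L i y - L i x) * t" if t: "t \<in> {0..1}" for t
  proof -
    obtain i where "i \<in> Ip \<tau>" "f \<tau> ((1 - t) *\<^sub>R x + t *\<^sub>R y) = L i ((1 - t) *\<^sub>R x + t *\<^sub>R y)"
      using Ip(2)[OF \<tau> seg[OF t]] by blast
    then show ?thesis unfolding g_def L_comb by blast
  qed
  obtain i where i: "i \<in> Ip \<tau>" "L i x \<le> g 0" "g 1 \<le> L i x + (L i y - L i x)"
    using ovch1d[OF Ip(1)[OF \<tau>] cg cov] by blast
  then show ?thesis unfolding g_def by auto
qed

definition Sy :: "'p \<Rightarrow> real^'v \<Rightarrow> ((int^'v) \<times> rat) set" where
  "Sy \<tau> y = {i \<in> Ip \<tau>. f \<tau> y \<le> L i y}"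

definition SS :: "'p \<Rightarrow> ((int^'v) \<times> rat) set set" where
  "SS \<tau> = Sy \<tau> ` Th \<tau>"

definition Mx :: "'p \<Rightarrow> real^'v \<Rightarrow> real" where
  "Mx \<tau> x = MM (SS \<tau>) id (\<lambda>i. L i x)"

lemma SS_props:
  assumes \<tau>: "\<tau> \<in> Dl"
  shows "finite (SS \<tau>)" "SS \<tau> \<noteq> {}" "\<And>S. S \<in> SS \<tau> \<Longrightarrow> finite S \<and> S \<noteq> {} \<and> S \<subseteq> Ip \<tau>"
proof -
  have "SS \<tau> \<subseteq> Pow (Ip \<tau>)" unfolding SS_def Sy_def by auto
  then show "finite (SS \<tau>)" using Ip(1)[OF \<tau>] finite_subset by blast
  show "SS \<tau> \<noteq> {}" using Theta_ne[OF \<tau>] unfolding SS_def by auto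
  fix S assume "S \<in> SS \<tau>"
  then obtain y where y: "y \<in> Th \<tau>" "S = Sy \<tau> y" unfolding SS_def by auto
  obtain i where "i \<in> Ip \<tau>" "f \<tau> y = L i y" using Ip(2)[OF \<tau> y(1)] by blast
  then have "i \<in> S" using y unfolding Sy_def by auto
  moreover have "S \<subseteq> Ip \<tau>" using y unfolding Sy_def by auto
  moreover then have "finite S" using Ip(1)[OF \<tau>] by (rule finite_subset)
  ultimately show "finite S \<and> S \<noteq> {} \<and> S \<subseteq> Ip \<tau>" by blast
qed

lemma Mx_eq:
  assumes \<tau>: "\<tau> \<in> Dl" and x: "x \<in> Th \<tau>"
  shows "Mx \<tau> x = f \<tau> x"
proof (rule antisym)
  note P = SS_props[OF \<tau>]
  show "Mx \<tau> x \<le> f \<tau> x"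
    unfolding Mx_def MM_def
  proof (subst Max_le_iff)
    show "finite ((\<lambda>a. Min ((\<lambda>i. L i x) ` id a)) ` SS \<tau>)" using P by simp
    show "(\<lambda>a. Min ((\<lambda>i. L i x) ` id a)) ` SS \<tau> \<noteq> {}" using P by simp
    show "\<forall>a\<in>(\<lambda>a. Min ((\<lambda>i. L i x) ` id a)) ` SS \<tau>. a \<le> f \<tau> x"
    proof
      fix v assume "v \<in> (\<lambda>a. Min ((\<lambda>i. L i x) ` id a)) ` SS \<tau>"
      then obtain y where y: "y \<in> Th \<tau>" "v = Min ((\<lambda>i. L i x) ` Sy \<tau> y)" unfolding SS_def by auto
      obtain i where i: "i \<in> Ip \<tau>" "L i x \<le> f \<tau> x" "f \<tau> y \<le> L i y" using ovch_pair[OF \<tau> x y(1)] by blast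
      have iS: "i \<in> Sy \<tau> y" using i unfolding Sy_def by auto
      have "Sy \<tau> y \<in> SS \<tau>" using y(1) unfolding SS_def by auto
      then have "finite (Sy \<tau> y)" using P(3) by blast
      then have "v \<le> L i x" using y(2) iS by auto
      then show "v \<le> f \<tau> x" using i(2) by simp
    qed
  qed
  show "f \<tau> x \<le> Mx \<tau> x"
  proof -
    have S: "Sy \<tau> x \<in> SS \<tau>" using x unfolding SS_def by auto
    then have fS: "finite (Sy \<tau> x)" "Sy \<tau> x \<noteq> {}" using P(3) by auto
    have "f \<tau> x \<le> Min ((\<lambda>i. L i x) ` Sy \<tau> x)" using fS unfolding Sy_def by (subst Min_ge_iff) auto
    also have "\<dots> \<le> Mx \<tau> x" unfolding Mx_def MM_def using S P by (intro Max_ge) auto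
    finally show ?thesis .
  qed
qed

end

definition polyQ :: "('a::real_inner \<times> real) set \<Rightarrow> 'a set" where
  "polyQ K = {x. \<forall>(a,b)\<in>K. b \<le> a \<bullet> x}"

definition affQ :: "('a::real_inner \<times> real) set \<Rightarrow> 'a set" where
  "affQ E = {x. \<forall>(a,b)\<in>E. a \<bullet> x = b}"

lemma lp_bound_gen:
  fixes K :: "('a::real_inner \<times> real) set"
  assumes "finite K"
  shows "(\<exists>B. \<forall>x\<in>affQ E \<inter> polyQ K. c \<bullet> x \<le> B) \<or>
             (\<exists>d. (\<forall>(a,b)\<in>E. a \<bullet> d = 0) \<and> (\<forall>(a,b)\<in>K. 0 \<le> a \<bullet> d) \<and> 0 < c \<bullet> d)"
  using assms
proof (induction K arbitrary: E rule: finite_induct)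
  case empty
  show ?case
  proof (cases "\<exists>d. (\<forall>(a,b)\<in>E. a \<bullet> d = 0) \<and> c \<bullet> d \<noteq> 0")
    case True
    then obtain d where d: "\<forall>(a,b)\<in>E. a \<bullet> d = 0" "c \<bullet> d \<noteq> 0" by blast
    show ?thesis
    proof (cases "0 < c \<bullet> d")
      case True then show ?thesis using d by auto
    next
      case False
      then have "0 < c \<bullet> (- d)" using d(2) by simp
      moreover have "\<forall>(a,b)\<in>E. a \<bullet> (- d) = 0" using d(1) by auto
      ultimately show ?thesis by blast
    qed
  next
    case False
    then have lin: "\<And>d. (\<forall>(a,b)\<in>E. a \<bullet> d = 0) \<Longrightarrow> c \<bullet> d = 0" by blast
    show ?thesis
    proof (cases "affQ E = {}")
      case True then show ?thesis by auto
    next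
      case False
      then obtain x0 where x0: "x0 \<in> affQ E" by auto
      have "\<forall>x\<in>affQ E \<inter> polyQ {}. c \<bullet> x \<le> c \<bullet> x0"
      proof
        fix x assume "x \<in> affQ E \<inter> polyQ {}"
        then have "\<forall>(a,b)\<in>E. a \<bullet> (x - x0) = 0" using x0 unfolding affQ_def by (auto simp: inner_diff_right)
        then have "c \<bullet> (x - x0) = 0" by (rule lin)
        then show "c \<bullet> x \<le> c \<bullet> x0" by (simp add: inner_diff_right)
      qed
      then show ?thesis by blast
    qed
  qed
next
  case (insert k K)
  obtain ak bk where k: "k = (ak, bk)" by (cases k)
  from insert.IH[of E] show ?case
  proof
    assume "\<exists>B. \<forall>x\<in>affQ E \<inter> polyQ K. c \<bullet> x \<le> B"
    then obtain B where "\<forall>x\<in>affQ E \<inter> polyQ K. c \<bullet> x \<le> B" by blast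
    moreover have "polyQ (insert k K) \<subseteq> polyQ K" unfolding polyQ_def by auto
    ultimately show ?thesis by blast
  next
    assume "\<exists>d. (\<forall>(a,b)\<in>E. a \<bullet> d = 0) \<and> (\<forall>(a,b)\<in>K. 0 \<le> a \<bullet> d) \<and> 0 < c \<bullet> d"
    then obtain d where d: "\<forall>(a,b)\<in>E. a \<bullet> d = 0" "\<forall>(a,b)\<in>K. 0 \<le> a \<bullet> d" "0 < c \<bullet> d" by blast
    show ?thesis
    proof (cases "0 \<le> ak \<bullet> d")
      case True
      then have "\<forall>(a,b)\<in>insert k K. 0 \<le> a \<bullet> d" using d(2) k by auto
      then show ?thesis using d(1,3) by blast
    next
      case False
      then have akd: "ak \<bullet> d < 0" by simp
      from insert.IH[of "insert k E"] show ?thesis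
      proof
        assume "\<exists>B. \<forall>x\<in>affQ (insert k E) \<inter> polyQ K. c \<bullet> x \<le> B"
        then obtain B where B: "\<forall>x\<in>affQ (insert k E) \<inter> polyQ K. c \<bullet> x \<le> B" by blast
        have "\<forall>x\<in>affQ E \<inter> polyQ (insert k K). c \<bullet> x \<le> B"
        proof
          fix x assume x: "x \<in> affQ E \<inter> polyQ (insert k K)"
          define t where "t = (ak \<bullet> x - bk) / (- (ak \<bullet> d))"
          have xk: "bk \<le> ak \<bullet> x" using x k unfolding polyQ_def by auto
          have t0: "0 \<le> t" unfolding t_def by (rule divide_nonneg_pos) (use xk akd in auto)
          define y where "y = x + t *\<^sub>R d"
          have "t * (ak \<bullet> d) = - (ak \<bullet> x - bk)" unfolding t_def using akd by (simp add: field_simps)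
          then have "ak \<bullet> y = bk" unfolding y_def by (simp add: inner_add_right)
          moreover have "\<forall>(a,b)\<in>E. a \<bullet> y = b"
          proof (clarify)
            fix a b assume ab: "(a,b) \<in> E"
            have "a \<bullet> x = b" using x ab unfolding affQ_def by auto
            moreover have "a \<bullet> d = 0" using d(1) ab by auto
            ultimately show "a \<bullet> y = b" unfolding y_def by (simp add: inner_add_right)
          qed
          moreover have "\<forall>(a,b)\<in>K. b \<le> a \<bullet> y"
          proof (clarify)
            fix a b assume ab: "(a,b) \<in> K"
            have "b \<le> a \<bullet> x" using x ab unfolding polyQ_def by auto
            moreover have "0 \<le> t * (a \<bullet> d)" using d(2) ab t0 by auto
            ultimately show "b \<le> a \<bullet> y" unfolding y_def by (simp add: inner_add_right)
          qed
          ultimately have "y \<in> affQ (insert k E) \<inter> polyQ K" unfolding affQ_def polyQ_def k by auto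
          then have "c \<bullet> y \<le> B" using B by blast
          moreover have "c \<bullet> x \<le> c \<bullet> y" unfolding y_def using t0 d(3) by (simp add: inner_add_right)
          ultimately show "c \<bullet> x \<le> B" by simp
        qed
        then show ?thesis by blast
      next
        assume "\<exists>d. (\<forall>(a,b)\<in>insert k E. a \<bullet> d = 0) \<and> (\<forall>(a,b)\<in>K. 0 \<le> a \<bullet> d) \<and> 0 < c \<bullet> d"
        then obtain d' where d': "\<forall>(a,b)\<in>insert k E. a \<bullet> d' = 0" "\<forall>(a,b)\<in>K. 0 \<le> a \<bullet> d'" "0 < c \<bullet> d'" by blast
        have "\<forall>(a,b)\<in>insert k K. 0 \<le> a \<bullet> d'" using d'(1,2) k by auto
        moreover have "\<forall>(a,b)\<in>E. a \<bullet> d' = 0" using d'(1) by auto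
        ultimately show ?thesis using d'(3) by blast
      qed
    qed
  qed
qed

lemma lp_bound:
  fixes K :: "('a::real_inner \<times> real) set"
  assumes "finite K"
  shows "(\<exists>B. \<forall>x\<in>polyQ K. c \<bullet> x \<le> B) \<or> (\<exists>d. (\<forall>(a,b)\<in>K. 0 \<le> a \<bullet> d) \<and> 0 < c \<bullet> d)"
  using lp_bound_gen[OF assms, where E="{}" and c=c] unfolding affQ_def by auto

lemma polyQ_convex: "convex (polyQ K)"
proof (rule convexI)
  fix x y :: 'a and u v :: real
  assume x: "x \<in> polyQ K" and y: "y \<in> polyQ K" and uv: "0 \<le> u" "0 \<le> v" "u + v = 1"
  show "u *\<^sub>R x + v *\<^sub>R y \<in> polyQ K"
    unfolding polyQ_def
  proof (safe)
    fix a b assume ab: "(a,b) \<in> K"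
    have "b \<le> a \<bullet> x" "b \<le> a \<bullet> y" using x y ab unfolding polyQ_def by auto
    then have "u * b + v * b \<le> u * (a \<bullet> x) + v * (a \<bullet> y)" using uv by (intro add_mono mult_left_mono) auto
    moreover have "u * b + v * b = b" using uv by (metis distrib_right mult_1)
    ultimately show "b \<le> a \<bullet> (u *\<^sub>R x + v *\<^sub>R y)" by (simp add: inner_add_right)
  qed
qed

lemma ray_polyQ:
  assumes "x \<in> polyQ K" "\<forall>(a,b)\<in>K. 0 \<le> a \<bullet> d" "0 \<le> t"
  shows "x + t *\<^sub>R d \<in> polyQ K"
  unfolding polyQ_def
proof (safe)
  fix a b assume ab: "(a,b) \<in> K"
  have "b \<le> a \<bullet> x" using assms(1) ab unfolding polyQ_def by auto
  moreover have "0 \<le> t * (a \<bullet> d)" using assms(2,3) ab by auto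
  ultimately show "b \<le> a \<bullet> (x + t *\<^sub>R d)" by (simp add: inner_add_right)
qed

lemma lp_growth:
  fixes K :: "('a::real_inner \<times> real) set"
  assumes fK: "finite K"
    and norec: "\<And>d. polyQ K \<noteq> {} \<Longrightarrow> (\<forall>(a,b)\<in>K. 0 \<le> a \<bullet> d) \<Longrightarrow> ell \<bullet> d \<le> 0 \<Longrightarrow> c \<bullet> d \<le> 0"
  shows "\<exists>A. \<forall>x\<in>polyQ K. 0 \<le> ell \<bullet> x \<longrightarrow> c \<bullet> x \<le> A + A * (ell \<bullet> x)"
proof (cases "polyQ K = {}")
  case True then show ?thesis by auto
next
  case False
  then obtain x0 where x0: "x0 \<in> polyQ K" by auto
  define R0 where "R0 = ell \<bullet> x0"
  define K' where "K' = insert (- ell, - (R0 + 1)) K"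
  have "(\<exists>B. \<forall>x\<in>polyQ K'. c \<bullet> x \<le> B) \<or> (\<exists>d. (\<forall>(a,b)\<in>K'. 0 \<le> a \<bullet> d) \<and> 0 < c \<bullet> d)"
    using lp_bound[of K'] fK unfolding K'_def by simp
  moreover have "\<not> (\<exists>d. (\<forall>(a,b)\<in>K'. 0 \<le> a \<bullet> d) \<and> 0 < c \<bullet> d)"
  proof
    assume "\<exists>d. (\<forall>(a,b)\<in>K'. 0 \<le> a \<bullet> d) \<and> 0 < c \<bullet> d"
    then obtain d where d: "\<forall>(a,b)\<in>K'. 0 \<le> a \<bullet> d" "0 < c \<bullet> d" by blast
    have "\<forall>(a,b)\<in>K. 0 \<le> a \<bullet> d" using d(1) unfolding K'_def by auto
    moreover have "ell \<bullet> d \<le> 0" using d(1) unfolding K'_def by auto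
    ultimately have "c \<bullet> d \<le> 0" using norec False by blast
    then show False using d(2) by simp
  qed
  ultimately obtain C where C: "\<forall>x\<in>polyQ K'. c \<bullet> x \<le> C" by blast
  have K'iff: "\<And>x. x \<in> polyQ K' \<longleftrightarrow> x \<in> polyQ K \<and> ell \<bullet> x \<le> R0 + 1"
    unfolding K'_def polyQ_def by auto
  have Cx0: "c \<bullet> x0 \<le> C" using C K'iff x0 unfolding R0_def by auto
  define B where "B = C - c \<bullet> x0"
  have B0: "0 \<le> B" using Cx0 unfolding B_def by simp
  define A where "A = \<bar>C\<bar> + \<bar>c \<bullet> x0 - R0 * B\<bar> + B"
  have "\<forall>x\<in>polyQ K. 0 \<le> ell \<bullet> x \<longrightarrow> c \<bullet> x \<le> A + A * (ell \<bullet> x)"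
  proof (intro ballI impI)
    fix x assume x: "x \<in> polyQ K" and e0: "0 \<le> ell \<bullet> x"
    have AB: "B \<le> A" "0 \<le> A" "\<bar>C\<bar> + \<bar>c \<bullet> x0 - R0 * B\<bar> \<le> A" unfolding A_def using B0 by auto
    have main: "c \<bullet> x \<le> \<bar>C\<bar> + \<bar>c \<bullet> x0 - R0 * B\<bar> + B * (ell \<bullet> x)"
    proof (cases "ell \<bullet> x \<le> R0 + 1")
      case True
      then have "c \<bullet> x \<le> C" using C K'iff x by auto
      moreover have "0 \<le> B * (ell \<bullet> x)" using B0 e0 by simp
      ultimately show ?thesis by linarith
    next
      case False
      define r where "r = ell \<bullet> x - R0"
      have r1: "1 < r" using False unfolding r_def by simp
      define z where "z = (1 - 1/r) *\<^sub>R x0 + (1/r) *\<^sub>R x"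
      have zQ: "z \<in> polyQ K" unfolding z_def
        by (rule convexD[OF polyQ_convex x0 x]) (use r1 in auto)
      have ex: "ell \<bullet> x = R0 + r" unfolding r_def by simp
      have "ell \<bullet> z = (1 - 1/r) * (ell \<bullet> x0) + (1/r) * (ell \<bullet> x)" unfolding z_def by (simp add: inner_add_right)
      also have "\<dots> = R0 + 1" using r1 unfolding ex R0_def[symmetric] by (simp add: field_simps)
      finally have "ell \<bullet> z = R0 + 1" .
      then have "c \<bullet> z \<le> C" using C K'iff zQ by auto
      moreover have "c \<bullet> z = (1 - 1/r) * (c \<bullet> x0) + (1/r) * (c \<bullet> x)" unfolding z_def by (simp add: inner_add_right)
      ultimately have "(1/r) * (c \<bullet> x) \<le> C - (1 - 1/r) * (c \<bullet> x0)" by simp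
      have "c \<bullet> x = r * ((1/r) * (c \<bullet> x))" using r1 by simp
      also have "\<dots> \<le> r * (C - (1 - 1/r) * (c \<bullet> x0))"
        using \<open>(1/r) * (c \<bullet> x) \<le> C - (1 - 1/r) * (c \<bullet> x0)\<close> r1 by (intro mult_left_mono) auto
      finally have "c \<bullet> x \<le> r * (C - (1 - 1/r) * (c \<bullet> x0))" .
      also have "\<dots> = c \<bullet> x0 + r * B" unfolding B_def using r1 by (simp add: field_simps)
      also have "\<dots> = (c \<bullet> x0 - R0 * B) + B * (ell \<bullet> x)" unfolding r_def by (simp add: algebra_simps)
      finally show ?thesis by linarith
    qed
    have "B * (ell \<bullet> x) \<le> A * (ell \<bullet> x)" using AB e0 by (simp add: mult_right_mono)
    then show "c \<bullet> x \<le> A + A * (ell \<bullet> x)" using main AB(3) by linarith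
  qed
  then show ?thesis by blast
qed

lemma finite_uniform:
  fixes P :: "'x \<Rightarrow> real \<Rightarrow> bool"
  assumes "finite X" "\<And>x. x \<in> X \<Longrightarrow> \<exists>A. P x A" "\<And>x A A'. P x A \<Longrightarrow> A \<le> A' \<Longrightarrow> P x A'"
  shows "\<exists>A. \<forall>x\<in>X. P x A"
proof -
  have "\<forall>x\<in>X. \<exists>A. P x A" using assms(2) by blast
  then have "\<exists>h. \<forall>x\<in>X. P x (h x)" by (rule bchoice)
  then obtain h where h: "\<And>x. x \<in> X \<Longrightarrow> P x (h x)" by blast
  define A where "A = Max (insert 0 (h ` X))"
  have "\<And>x. x \<in> X \<Longrightarrow> h x \<le> A" unfolding A_def using assms(1) by auto
  then show ?thesis using h assms(3) by blast
qed

lemma ev_aff_min: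
  fixes \<alpha> \<beta> :: "'i \<Rightarrow> real"
  assumes "finite A" "A \<noteq> {}"
  shows "\<exists>a. \<forall>\<^sub>F t in at_top. Min ((\<lambda>i. \<alpha> i + t * \<beta> i) ` A) = a + t * Min (\<beta> ` A)"
proof -
  obtain j0 where j0: "j0 \<in> A" "\<beta> j0 = Min (\<beta> ` A)" "\<forall>\<^sub>F t in at_top. \<forall>j\<in>A. \<alpha> j0 + t * \<beta> j0 \<le> \<alpha> j + t * \<beta> j"
    using ev_min_affine[OF assms, of \<beta> \<alpha>] by blast
  have "\<forall>\<^sub>F t in at_top. Min ((\<lambda>i. \<alpha> i + t * \<beta> i) ` A) = \<alpha> j0 + t * Min (\<beta> ` A)"
    using j0(3)
  proof (rule eventually_mono)
    fix t assume h: "\<forall>j\<in>A. \<alpha> j0 + t * \<beta> j0 \<le> \<alpha> j + t * \<beta> j"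
    have "Min ((\<lambda>i. \<alpha> i + t * \<beta> i) ` A) = \<alpha> j0 + t * \<beta> j0"
    proof (rule Min_eqI)
      show "finite ((\<lambda>i. \<alpha> i + t * \<beta> i) ` A)" using assms(1) by simp
      show "\<And>y. y \<in> (\<lambda>i. \<alpha> i + t * \<beta> i) ` A \<Longrightarrow> \<alpha> j0 + t * \<beta> j0 \<le> y" using h by blast
      show "\<alpha> j0 + t * \<beta> j0 \<in> (\<lambda>i. \<alpha> i + t * \<beta> i) ` A" using j0(1) by (rule imageI)
    qed
    then show "Min ((\<lambda>i. \<alpha> i + t * \<beta> i) ` A) = \<alpha> j0 + t * Min (\<beta> ` A)" using j0(2) by simp
  qed
  then show ?thesis by blast
qed

lemma Max_neg_Min:
  fixes g :: "'i \<Rightarrow> real"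
  assumes "finite A" "A \<noteq> {}"
  shows "Max (g ` A) = - Min ((\<lambda>i. - g i) ` A)"
proof -
  have "Min ((\<lambda>i. - g i) ` A) \<in> (\<lambda>i. - g i) ` A" using assms by (intro Min_in) auto
  then obtain i0 where i0: "i0 \<in> A" "Min ((\<lambda>i. - g i) ` A) = - g i0" by auto
  have "\<And>j. j \<in> A \<Longrightarrow> - g i0 \<le> - g j"
  proof -
    fix j assume j: "j \<in> A"
    have "Min ((\<lambda>i. - g i) ` A) \<le> - g j" by (rule Min_le) (use assms(1) j in auto)
    then show "- g i0 \<le> - g j" using i0(2) by simp
  qed
  then have "Max (g ` A) = g i0" using i0(1) assms(1) by (intro Max_eqI) auto
  then show ?thesis using i0(2) by simp
qed

lemma ev_aff_max:
  fixes \<alpha> \<beta> :: "'i \<Rightarrow> real"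
  assumes "finite A" "A \<noteq> {}"
  shows "\<exists>a. \<forall>\<^sub>F t in at_top. Max ((\<lambda>i. \<alpha> i + t * \<beta> i) ` A) = a + t * Max (\<beta> ` A)"
proof -
  obtain a where a: "\<forall>\<^sub>F t in at_top. Min ((\<lambda>i. - \<alpha> i + t * - \<beta> i) ` A) = a + t * Min ((\<lambda>i. - \<beta> i) ` A)"
    using ev_aff_min[OF assms, of "\<lambda>i. - \<alpha> i" "\<lambda>i. - \<beta> i"] by blast
  have neg1: "\<And>t. Max ((\<lambda>i. \<alpha> i + t * \<beta> i) ` A) = - Min ((\<lambda>i. - \<alpha> i + t * - \<beta> i) ` A)"
    using Max_neg_Min[OF assms] by simp
  have neg2: "Max (\<beta> ` A) = - Min ((\<lambda>i. - \<beta> i) ` A)"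
    using Max_neg_Min[OF assms] by simp
  have "\<forall>\<^sub>F t in at_top. Max ((\<lambda>i. \<alpha> i + t * \<beta> i) ` A) = (- a) + t * Max (\<beta> ` A)"
    using a by (rule eventually_mono) (simp add: neg1 neg2)
  then show ?thesis by blast
qed

lemma ev_aff_MM:
  fixes \<alpha> \<beta> :: "'i \<Rightarrow> real" and B :: "'s \<Rightarrow> 'i set"
  assumes "finite A" "A \<noteq> {}" "\<And>a. a \<in> A \<Longrightarrow> finite (B a) \<and> B a \<noteq> {}"
  shows "\<exists>c. \<forall>\<^sub>F t in at_top. MM A B (\<lambda>i. \<alpha> i + t * \<beta> i) = c + t * MM A B \<beta>"
proof -
  have "\<forall>a\<in>A. \<exists>c. \<forall>\<^sub>F t in at_top. Min ((\<lambda>i. \<alpha> i + t * \<beta> i) ` B a) = c + t * Min (\<beta> ` B a)"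
  proof
    fix a assume a: "a \<in> A"
    have "finite (B a)" "B a \<noteq> {}" using assms(3)[OF a] by auto
    then show "\<exists>c. \<forall>\<^sub>F t in at_top. Min ((\<lambda>i. \<alpha> i + t * \<beta> i) ` B a) = c + t * Min (\<beta> ` B a)"
      by (rule ev_aff_min)
  qed
  then have "\<exists>c. \<forall>a\<in>A. \<forall>\<^sub>F t in at_top. Min ((\<lambda>i. \<alpha> i + t * \<beta> i) ` B a) = c a + t * Min (\<beta> ` B a)"
    by (rule bchoice)
  then obtain c where c: "\<forall>a\<in>A. \<forall>\<^sub>F t in at_top. Min ((\<lambda>i. \<alpha> i + t * \<beta> i) ` B a) = c a + t * Min (\<beta> ` B a)"
    by blast
  have ev1: "\<forall>\<^sub>F t in at_top. \<forall>a\<in>A. Min ((\<lambda>i. \<alpha> i + t * \<beta> i) ` B a) = c a + t * Min (\<beta> ` B a)"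
    using eventually_ball_finite[OF assms(1) c] .
  obtain c0 where c0: "\<forall>\<^sub>F t in at_top. Max ((\<lambda>a. c a + t * Min (\<beta> ` B a)) ` A) = c0 + t * Max ((\<lambda>a. Min (\<beta> ` B a)) ` A)"
    using ev_aff_max[OF assms(1,2), of c "\<lambda>a. Min (\<beta> ` B a)"] by blast
  have "\<forall>\<^sub>F t in at_top. MM A B (\<lambda>i. \<alpha> i + t * \<beta> i) = c0 + t * MM A B \<beta>"
    using eventually_conj[OF ev1 c0]
  proof (rule eventually_mono)
    fix t assume h: "(\<forall>a\<in>A. Min ((\<lambda>i. \<alpha> i + t * \<beta> i) ` B a) = c a + t * Min (\<beta> ` B a)) \<and>
       Max ((\<lambda>a. c a + t * Min (\<beta> ` B a)) ` A) = c0 + t * Max ((\<lambda>a. Min (\<beta> ` B a)) ` A)"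
    have e: "(\<lambda>a. Min ((\<lambda>i. \<alpha> i + t * \<beta> i) ` B a)) ` A = (\<lambda>a. c a + t * Min (\<beta> ` B a)) ` A"
      using h by (intro image_cong) auto
    have "Max ((\<lambda>a. c a + t * Min (\<beta> ` B a)) ` A) = c0 + t * Max ((\<lambda>a. Min (\<beta> ` B a)) ` A)" using h by blast
    then show "MM A B (\<lambda>i. \<alpha> i + t * \<beta> i) = c0 + t * MM A B \<beta>"
      using e by (simp add: MM_def)
  qed
  then show ?thesis by blast
qed

lemma aff_eq_slope:
  assumes "\<forall>\<^sub>F t in at_top. (a::real) + t * s = a' + t * s'"
  shows "s = s'"
proof -
  obtain T where T: "\<And>t. t \<ge> T \<Longrightarrow> a + t * s = a' + t * s'" using assms unfolding eventually_at_top_linorder by blast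
  have e1: "a + T * s = a' + T * s'" using T by simp
  have e2: "a + (T + 1) * s = a' + (T + 1) * s'" using T by simp
  have "(a + (T + 1) * s) - (a + T * s) = (a' + (T + 1) * s') - (a' + T * s')" using e1 e2 by simp
  then show ?thesis by (simp add: algebra_simps)
qed


lemma slope_of_affine:
  assumes aff: "\<And>t. t \<ge> T \<Longrightarrow> g (p + t *\<^sub>R w) = a + t * b"
  shows "slope_at_infinity g p w b"
  unfolding slope_at_infinity_def
  using eventually_gt_at_top[of T]
proof (rule eventually_mono)
  fix t assume t: "T < t"
  have "((\<lambda>t. a + t * b) has_real_derivative b) (at t)" by (auto intro!: derivative_eq_intros)
  then show "((\<lambda>t. g (p + t *\<^sub>R w)) has_real_derivative b) (at t)"
    by (rule has_field_derivative_transform_within_open[where S="{T<..}"]) (use t aff in auto)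
qed

lemma polyQ_Un: "polyQ (K1 \<union> K2) = polyQ K1 \<inter> polyQ K2"
  unfolding polyQ_def by auto

lemma L_ray: "L i (p + t *\<^sub>R d) = L i p + t * (rv (fst i) \<bullet> d)"
  unfolding L_def by (simp add: inner_add_right algebra_simps)

context ratf begin

definition RK :: "'p \<Rightarrow> ((int^'v) \<times> rat) set \<times> ((int^'v) \<times> rat) \<times> (((int^'v) \<times> rat) set \<Rightarrow> (int^'v) \<times> rat)
      \<Rightarrow> ((real^'v) \<times> real) set" where
  "RK \<tau> r = (\<lambda>i. (rv (fst i) - rv (fst (fst (snd r))), real_of_rat (snd (fst (snd r))) - real_of_rat (snd i))) ` (fst r)
     \<union> (\<lambda>S'. (rv (fst (fst (snd r))) - rv (fst (snd (snd r) S')), real_of_rat (snd (snd (snd r) S')) - real_of_rat (snd (fst (snd r))))) ` SS \<tau>"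

definition regs :: "'p \<Rightarrow> (((int^'v) \<times> rat) set \<times> ((int^'v) \<times> rat) \<times> (((int^'v) \<times> rat) set \<Rightarrow> (int^'v) \<times> rat)) set" where
  "regs \<tau> = {(S, c, \<beta>). S \<in> SS \<tau> \<and> c \<in> S \<and> \<beta> \<in> PiE (SS \<tau>) id}"

lemma finite_regs: assumes "\<tau> \<in> Dl" shows "finite (regs \<tau>)"
proof -
  have "regs \<tau> \<subseteq> SS \<tau> \<times> (\<Union> (SS \<tau>)) \<times> PiE (SS \<tau>) id" unfolding regs_def by auto
  moreover have "finite (SS \<tau> \<times> (\<Union> (SS \<tau>)) \<times> PiE (SS \<tau>) id)"
    using SS_props[OF assms] by (intro finite_cartesian_product finite_PiE) auto
  ultimately show ?thesis using finite_subset by blast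
qed

lemma finite_RK: assumes "\<tau> \<in> Dl" "r \<in> regs \<tau>" shows "finite (RK \<tau> r)"
proof -
  have "finite (fst r)" using assms SS_props[OF assms(1)] unfolding regs_def by auto
  then show ?thesis unfolding RK_def using SS_props[OF assms(1)] by simp
qed

lemma L_le: "(real_of_rat (snd c) - real_of_rat (snd i) \<le> (rv (fst i) - rv (fst c)) \<bullet> y) \<longleftrightarrow> L c y \<le> L i y"
  unfolding L_def by (auto simp: inner_diff_left)

lemma polyQ_RK:
  assumes "r = (S, c, \<beta>)"
  shows "y \<in> polyQ (RK \<tau> r) \<longleftrightarrow> (\<forall>i\<in>S. L c y \<le> L i y) \<and> (\<forall>S'\<in>SS \<tau>. L (\<beta> S') y \<le> L c y)"
proof
  assume y: "y \<in> polyQ (RK \<tau> r)"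
  have m: "\<And>a b. (a,b) \<in> RK \<tau> r \<Longrightarrow> b \<le> a \<bullet> y" using y unfolding polyQ_def by auto
  have "\<forall>i\<in>S. L c y \<le> L i y"
  proof
    fix i assume "i \<in> S"
    then have "(rv (fst i) - rv (fst c), real_of_rat (snd c) - real_of_rat (snd i)) \<in> RK \<tau> r"
      unfolding RK_def assms by auto
    from m[OF this] show "L c y \<le> L i y" using L_le by blast
  qed
  moreover have "\<forall>S'\<in>SS \<tau>. L (\<beta> S') y \<le> L c y"
  proof
    fix S' assume "S' \<in> SS \<tau>"
    then have "(rv (fst c) - rv (fst (\<beta> S')), real_of_rat (snd (\<beta> S')) - real_of_rat (snd c)) \<in> RK \<tau> r"
      unfolding RK_def assms by auto
    from m[OF this] show "L (\<beta> S') y \<le> L c y" using L_le by blast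
  qed
  ultimately show "(\<forall>i\<in>S. L c y \<le> L i y) \<and> (\<forall>S'\<in>SS \<tau>. L (\<beta> S') y \<le> L c y)" ..
next
  assume h: "(\<forall>i\<in>S. L c y \<le> L i y) \<and> (\<forall>S'\<in>SS \<tau>. L (\<beta> S') y \<le> L c y)"
  show "y \<in> polyQ (RK \<tau> r)" unfolding polyQ_def
  proof (safe)
    fix a b assume ab: "(a, b) \<in> RK \<tau> r"
    then consider (1) i where "i \<in> S" "a = rv (fst i) - rv (fst c)" "b = real_of_rat (snd c) - real_of_rat (snd i)"
      | (2) S' where "S' \<in> SS \<tau>" "a = rv (fst c) - rv (fst (\<beta> S'))" "b = real_of_rat (snd (\<beta> S')) - real_of_rat (snd c)"
      unfolding RK_def assms by auto
    then show "b \<le> a \<bullet> y"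
    proof cases
      case 1 then show ?thesis using h L_le by blast
    next
      case 2 then show ?thesis using h L_le by blast
    qed
  qed
qed

lemma reg_val:
  assumes \<tau>: "\<tau> \<in> Dl" and r: "r \<in> regs \<tau>" and y: "y \<in> polyQ (RK \<tau> r)"
  shows "Mx \<tau> y = L (fst (snd r)) y"
proof -
  obtain S c \<beta> where rr: "r = (S, c, \<beta>)" by (cases r) auto
  have S: "S \<in> SS \<tau>" "c \<in> S" "\<beta> \<in> PiE (SS \<tau>) id" using r rr unfolding regs_def by auto
  have y1: "\<forall>i\<in>S. L c y \<le> L i y" and y2: "\<forall>S'\<in>SS \<tau>. L (\<beta> S') y \<le> L c y" using y polyQ_RK[OF rr] by auto
  note P = SS_props[OF \<tau>]
  have minS: "Min ((\<lambda>i. L i y) ` S) = L c y" using P(3)[OF S(1)] S(2) y1 by (intro Min_eqI) auto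
  have "Max ((\<lambda>a. Min ((\<lambda>i. L i y) ` id a)) ` SS \<tau>) = L c y"
  proof (rule Max_eqI)
    show "finite ((\<lambda>a. Min ((\<lambda>i. L i y) ` id a)) ` SS \<tau>)" using P by simp
    show "L c y \<in> (\<lambda>a. Min ((\<lambda>i. L i y) ` id a)) ` SS \<tau>" using minS S(1) by force
    fix v assume "v \<in> (\<lambda>a. Min ((\<lambda>i. L i y) ` id a)) ` SS \<tau>"
    then obtain S' where S': "S' \<in> SS \<tau>" "v = Min ((\<lambda>i. L i y) ` S')" by auto
    have "\<beta> S' \<in> S'" using S(3) S'(1) by (auto simp: PiE_def Pi_def)
    then have "v \<le> L (\<beta> S') y" using S' P(3)[OF S'(1)] by auto
    then show "v \<le> L c y" using y2 S'(1) by auto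
  qed
  then show ?thesis unfolding Mx_def MM_def rr by simp
qed

lemma reg_cover:
  assumes \<tau>: "\<tau> \<in> Dl"
  shows "\<exists>r\<in>regs \<tau>. y \<in> polyQ (RK \<tau> r)"
proof -
  note P = SS_props[OF \<tau>]
  define F where "F S = Min ((\<lambda>i. L i y) ` S)" for S
  have "Max (F ` SS \<tau>) \<in> F ` SS \<tau>" using P by (intro Max_in) auto
  then obtain S where S: "S \<in> SS \<tau>" "F S = Max (F ` SS \<tau>)" by auto
  have "F S \<in> (\<lambda>i. L i y) ` S" unfolding F_def using P(3)[OF S(1)] by (intro Min_in) auto
  then obtain c where c: "c \<in> S" "L c y = F S" by auto
  have "\<forall>S'\<in>SS \<tau>. \<exists>b\<in>S'. L b y = F S'"
  proof
    fix S' assume S': "S' \<in> SS \<tau>"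
    have "F S' \<in> (\<lambda>i. L i y) ` S'" unfolding F_def using P(3)[OF S'] by (intro Min_in) auto
    then show "\<exists>b\<in>S'. L b y = F S'" by auto
  qed
  then obtain \<beta>0 where \<beta>0: "\<forall>S'\<in>SS \<tau>. \<beta>0 S' \<in> S' \<and> L (\<beta>0 S') y = F S'" by metis
  define \<beta> where "\<beta> = restrict \<beta>0 (SS \<tau>)"
  have \<beta>: "\<beta> \<in> PiE (SS \<tau>) id" unfolding \<beta>_def using \<beta>0 by (auto simp: PiE_def Pi_def)
  have r: "(S, c, \<beta>) \<in> regs \<tau>" unfolding regs_def using S c \<beta> by auto
  have "\<forall>i\<in>S. L c y \<le> L i y" using c P(3)[OF S(1)] unfolding F_def by auto
  moreover have "\<forall>S'\<in>SS \<tau>. L (\<beta> S') y \<le> L c y"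
  proof
    fix S' assume S': "S' \<in> SS \<tau>"
    have "L (\<beta> S') y = F S'" using \<beta>0 S' unfolding \<beta>_def by auto
    also have "\<dots> \<le> Max (F ` SS \<tau>)" using P S' by auto
    finally show "L (\<beta> S') y \<le> L c y" using S(2) c(2) by simp
  qed
  ultimately have "y \<in> polyQ (RK \<tau> (S, c, \<beta>))" using polyQ_RK by blast
  then show ?thesis using r by blast
qed

definition ThK :: "'p \<Rightarrow> ((real^'v) \<times> real) set" where
  "ThK \<eta> = (\<lambda>j. (axis j 1, 0)) ` UNIV \<union> (\<lambda>j. (- axis j 1, 0)) ` (- zeta \<eta>) \<union> {(vf, 1), (- vf, -1)}"

lemma finite_ThK: "finite (ThK \<eta>)" unfolding ThK_def by simp

lemma polyQ_ThK: "polyQ (ThK \<eta>) = Th \<eta>"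
proof (intro set_eqI iffI)
  fix x assume x: "x \<in> polyQ (ThK \<eta>)"
  have m: "\<And>a b. (a,b) \<in> ThK \<eta> \<Longrightarrow> b \<le> a \<bullet> x" using x unfolding polyQ_def by auto
  have 1: "\<And>j. 0 \<le> x$j" using m[of "axis _ 1" 0] unfolding ThK_def by (auto simp: inner_axis')
  have 2: "\<And>j. j \<notin> zeta \<eta> \<Longrightarrow> x$j = 0"
  proof -
    fix j assume "j \<notin> zeta \<eta>"
    then have "(- axis j 1, 0) \<in> ThK \<eta>" unfolding ThK_def by auto
    from m[OF this] have "x$j \<le> 0" by (simp add: inner_axis')
    then show "x$j = 0" using 1[of j] by simp
  qed
  have "(vf, 1) \<in> ThK \<eta>" "(- vf, -1) \<in> ThK \<eta>" unfolding ThK_def by auto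
  from m[OF this(1)] m[OF this(2)] have 3: "(\<Sum>j\<in>Vf. x$j) = 1" by (simp add: vf_inner)
  show "x \<in> Th \<eta>" using 2 1 3 by (rule ThetaI)
next
  fix x assume x: "x \<in> Th \<eta>"
  show "x \<in> polyQ (ThK \<eta>)" unfolding polyQ_def ThK_def
    using ThetaD[OF x] sum_Vf[OF x] by (auto simp: inner_axis' vf_inner)
qed

definition ellk :: "'p \<Rightarrow> real^'v" where "ellk \<kappa> = (\<chi> j. if j \<in> zeta \<kappa> then 0 else 1)"

lemma ellk_inner: "ellk \<kappa> \<bullet> u = (\<Sum>j\<in>UNIV. if j \<in> zeta \<kappa> then 0 else u$j)"
  unfolding ellk_def inner_vec_def by (rule sum.cong) auto

lemma ellk_ge1: assumes "u \<in> Th \<eta>" "zeta \<kappa> \<inter> Vf = {}" shows "1 \<le> ellk \<kappa> \<bullet> u"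
proof -
  have "(\<Sum>j\<in>Vf. u$j) = (\<Sum>j\<in>Vf. if j \<in> zeta \<kappa> then 0 else u$j)"
    using assms(2) by (intro sum.cong) auto
  also have "\<dots> \<le> (\<Sum>j\<in>UNIV. if j \<in> zeta \<kappa> then 0 else u$j)"
    by (rule sum_mono2) (use ThetaD(2)[OF assms(1)] in auto)
  finally show ?thesis using sum_Vf[OF assms(1)] ellk_inner by simp
qed

lemma ellk_nonneg: assumes "u \<in> Th \<eta>" shows "0 \<le> ellk \<kappa> \<bullet> u"
  unfolding ellk_inner using ThetaD(2)[OF assms] by (intro sum_nonneg) auto

end

context ratf begin

lemma dir_props:
  assumes K: "ThK \<eta> \<subseteq> K" and d: "\<forall>(a,b)\<in>K. 0 \<le> a \<bullet> d" and ell: "ellk \<kappa> \<bullet> d \<le> 0"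
  shows "\<And>j. 0 \<le> d$j" "\<And>j. d$j \<noteq> 0 \<Longrightarrow> j \<in> zeta \<kappa>"
proof -
  show nn: "\<And>j. 0 \<le> d$j"
  proof -
    fix j
    have "(axis j 1, 0) \<in> K" using K unfolding ThK_def by auto
    then show "0 \<le> d$j" using d by (auto simp: inner_axis')
  qed
  fix j assume dj: "d$j \<noteq> 0"
  show "j \<in> zeta \<kappa>"
  proof (rule ccontr)
    assume nj: "j \<notin> zeta \<kappa>"
    have "(\<Sum>i\<in>UNIV. if i \<in> zeta \<kappa> then 0 else d$i) = 0"
      using ell nn unfolding ellk_inner by (intro antisym sum_nonneg) auto
    then have "\<forall>i\<in>UNIV. (if i \<in> zeta \<kappa> then 0 else d$i) = 0"
      by (subst sum_nonneg_eq_0_iff[symmetric]) (use nn in auto)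
    then have "(if j \<in> zeta \<kappa> then 0 else d$j) = 0" by blast
    then show False using nj dj by simp
  qed
qed

lemma slope_zero:
  assumes \<sigma>: "\<sigma> \<in> Dl" and \<eta>: "\<eta> \<in> Dl" and k: "\<kappa> \<le> \<sigma>" "\<kappa> \<le> \<eta>" "zeta \<kappa> \<inter> Vf = {}"
    and r1: "r1 \<in> regs \<sigma>" and r2: "r2 \<in> regs \<eta>"
    and x0: "x0 \<in> polyQ (ThK \<eta> \<union> RK \<sigma> r1 \<union> RK \<eta> r2)"
    and d: "\<forall>(a,b)\<in>ThK \<eta> \<union> RK \<sigma> r1 \<union> RK \<eta> r2. 0 \<le> a \<bullet> d" and ell: "ellk \<kappa> \<bullet> d \<le> 0"
  shows "rv (fst (fst (snd r1))) \<bullet> d = rv (fst (fst (snd r2))) \<bullet> d"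
proof (cases "d = 0")
  case True then show ?thesis by simp
next
  case False
  define c1 where "c1 = fst (snd r1)"
  define c2 where "c2 = fst (snd r2)"
  have dn: "\<And>j. 0 \<le> d$j" and ds: "\<And>j. d$j \<noteq> 0 \<Longrightarrow> j \<in> zeta \<kappa>"
    using dir_props[OF _ d ell] by auto
  have kV: "zeta \<kappa> \<subseteq> Vinf" using zeta_sub[of \<kappa>] k(3) by auto
  have rd: "rec_dir Vinf zeta \<tau> d" if "\<kappa> \<le> \<tau>" for \<tau>
    unfolding rec_dir_def using False dn ds kV zeta_mono[OF that] by blast
  have sf: "same_fan_dir Vf zeta \<eta> \<sigma> d" unfolding same_fan_dir_def using k ds by blast
  have ray: "\<And>t. 0 \<le> t \<Longrightarrow> x0 + t *\<^sub>R d \<in> polyQ (ThK \<eta> \<union> RK \<sigma> r1 \<union> RK \<eta> r2)"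
    using ray_polyQ[OF x0 d] .
  have rayTh: "\<And>t. 0 \<le> t \<Longrightarrow> x0 + t *\<^sub>R d \<in> Th \<eta>" using ray polyQ_ThK by (auto simp: polyQ_Un)
  have ray1: "\<And>t. 0 \<le> t \<Longrightarrow> x0 + t *\<^sub>R d \<in> polyQ (RK \<sigma> r1)" using ray by (auto simp: polyQ_Un)
  have ray2: "\<And>t. 0 \<le> t \<Longrightarrow> x0 + t *\<^sub>R d \<in> polyQ (RK \<eta> r2)" using ray by (auto simp: polyQ_Un)
  have x0T: "x0 \<in> Th \<eta>" using rayTh[of 0] by simp
  have sl1: "slope_at_infinity (f \<eta>) x0 d (rv (fst c2) \<bullet> d)"
  proof (rule slope_of_affine[where T=0])
    fix t :: real assume t: "0 \<le> t"
    have "f \<eta> (x0 + t *\<^sub>R d) = Mx \<eta> (x0 + t *\<^sub>R d)" using Mx_eq[OF \<eta> rayTh[OF t]] by simp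
    also have "\<dots> = L c2 (x0 + t *\<^sub>R d)" unfolding c2_def using reg_val[OF \<eta> r2 ray2[OF t]] .
    finally show "f \<eta> (x0 + t *\<^sub>R d) = L c2 x0 + t * (rv (fst c2) \<bullet> d)" by (simp add: L_ray)
  qed
  obtain p' where p': "p' \<in> Th \<sigma>" using Theta_ne[OF \<sigma>] by blast
  have rayS: "p' + t *\<^sub>R d \<in> Th \<sigma>" if t: "0 \<le> t" for t
  proof (rule ThetaI)
    show "\<And>j. j \<notin> zeta \<sigma> \<Longrightarrow> (p' + t *\<^sub>R d) $ j = 0"
      using ThetaD(1)[OF p'] ds zeta_mono[OF k(1)] by fastforce
    show "\<And>j. 0 \<le> (p' + t *\<^sub>R d) $ j" using ThetaD(2)[OF p'] dn t by simp
    have "\<And>j. j \<in> Vf \<Longrightarrow> d$j = 0" using ds k(3) by blast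
    then have "(\<Sum>j\<in>Vf. (p' + t *\<^sub>R d) $ j) = (\<Sum>j\<in>Vf. p'$j)" by (intro sum.cong) auto
    then show "(\<Sum>j\<in>Vf. (p' + t *\<^sub>R d) $ j) = 1" using sum_Vf[OF p'] by simp
  qed
  note P = SS_props[OF \<sigma>]
  have fin: "\<And>a. a \<in> SS \<sigma> \<Longrightarrow> finite (id a) \<and> id a \<noteq> {}" using P(3) by auto
  define S where "S = MM (SS \<sigma>) id (\<lambda>i. rv (fst i) \<bullet> d)"
  have "\<exists>c. \<forall>\<^sub>F t in at_top. MM (SS \<sigma>) id (\<lambda>i. L i p' + t * (rv (fst i) \<bullet> d)) = c + t * MM (SS \<sigma>) id (\<lambda>i. rv (fst i) \<bullet> d)"
    by (rule ev_aff_MM[OF P(1) P(2)]) (rule fin)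
  then obtain cc where cc: "\<forall>\<^sub>F t in at_top. MM (SS \<sigma>) id (\<lambda>i. L i p' + t * (rv (fst i) \<bullet> d)) = cc + t * S"
    unfolding S_def by blast
  obtain T where T: "\<And>t. t \<ge> T \<Longrightarrow> MM (SS \<sigma>) id (\<lambda>i. L i p' + t * (rv (fst i) \<bullet> d)) = cc + t * S"
    using cc unfolding eventually_at_top_linorder by blast
  have sl2: "slope_at_infinity (f \<sigma>) p' d S"
  proof (rule slope_of_affine[where T="max T 0"])
    fix t :: real assume t: "max T 0 \<le> t"
    have "f \<sigma> (p' + t *\<^sub>R d) = Mx \<sigma> (p' + t *\<^sub>R d)" using Mx_eq[OF \<sigma> rayS] t by simp
    also have "\<dots> = MM (SS \<sigma>) id (\<lambda>i. L i p' + t * (rv (fst i) \<bullet> d))" unfolding Mx_def by (simp add: L_ray)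
    also have "\<dots> = cc + t * S" using T t by simp
    finally show "f \<sigma> (p' + t *\<^sub>R d) = cc + t * S" .
  qed
  have e2: "rv (fst c2) \<bullet> d = S"
    using f_slope[OF \<eta> \<sigma> x0T p' rd[OF k(2)] rd[OF k(1)] sf sl1 sl2] .
  have "\<exists>c. \<forall>\<^sub>F t in at_top. MM (SS \<sigma>) id (\<lambda>i. L i x0 + t * (rv (fst i) \<bullet> d)) = c + t * MM (SS \<sigma>) id (\<lambda>i. rv (fst i) \<bullet> d)"
    by (rule ev_aff_MM[OF P(1) P(2)]) (rule fin)
  then obtain cc' where cc': "\<forall>\<^sub>F t in at_top. MM (SS \<sigma>) id (\<lambda>i. L i x0 + t * (rv (fst i) \<bullet> d)) = cc' + t * S"
    unfolding S_def by blast
  have "\<forall>\<^sub>F t in at_top. L c1 x0 + t * (rv (fst c1) \<bullet> d) = cc' + t * S"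
    using eventually_conj[OF cc' eventually_ge_at_top[of 0]]
  proof (rule eventually_mono)
    fix t :: real assume h: "MM (SS \<sigma>) id (\<lambda>i. L i x0 + t * (rv (fst i) \<bullet> d)) = cc' + t * S \<and> 0 \<le> t"
    have "L c1 x0 + t * (rv (fst c1) \<bullet> d) = L c1 (x0 + t *\<^sub>R d)" by (simp add: L_ray)
    also have "\<dots> = Mx \<sigma> (x0 + t *\<^sub>R d)" unfolding c1_def using reg_val[OF \<sigma> r1 ray1] h by simp
    also have "\<dots> = MM (SS \<sigma>) id (\<lambda>i. L i x0 + t * (rv (fst i) \<bullet> d))" unfolding Mx_def by (simp add: L_ray)
    finally show "L c1 x0 + t * (rv (fst c1) \<bullet> d) = cc' + t * S" using h by simp
  qed
  then have e1: "rv (fst c1) \<bullet> d = S" by (rule aff_eq_slope)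
  show ?thesis using e1 e2 unfolding c1_def c2_def by simp
qed

lemma BFD:
  assumes \<sigma>: "\<sigma> \<in> Dl" and \<eta>: "\<eta> \<in> Dl" and k: "\<kappa> \<le> \<sigma>" "\<kappa> \<le> \<eta>" "zeta \<kappa> \<inter> Vf = {}"
  shows "\<exists>A. \<forall>u\<in>Th \<eta>. \<bar>Mx \<sigma> u - Mx \<eta> u\<bar> \<le> A * (ellk \<kappa> \<bullet> u)"
proof -
  define KK where "KK r = ThK \<eta> \<union> RK \<sigma> (fst r) \<union> RK \<eta> (snd r)" for r
  define Pr where "Pr r A \<longleftrightarrow> (\<forall>y\<in>polyQ (KK r). \<bar>Mx \<sigma> y - Mx \<eta> y\<bar> \<le> A * (ellk \<kappa> \<bullet> y))" for r A
  have KTh: "\<And>r. polyQ (KK r) \<subseteq> Th \<eta>" unfolding KK_def using polyQ_ThK by (auto simp: polyQ_Un)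
  have "\<exists>A. \<forall>r\<in>regs \<sigma> \<times> regs \<eta>. Pr r A"
  proof (rule finite_uniform)
    show "finite (regs \<sigma> \<times> regs \<eta>)" using finite_regs[OF \<sigma>] finite_regs[OF \<eta>] by simp
    show "\<And>r A A'. Pr r A \<Longrightarrow> A \<le> A' \<Longrightarrow> Pr r A'"
    proof -
      fix r A A' assume h: "Pr r A" "A \<le> A'"
      show "Pr r A'" unfolding Pr_def
      proof
        fix y assume y: "y \<in> polyQ (KK r)"
        have "0 \<le> ellk \<kappa> \<bullet> y" using ellk_nonneg KTh y by blast
        then have "A * (ellk \<kappa> \<bullet> y) \<le> A' * (ellk \<kappa> \<bullet> y)" using h(2) by (rule mult_right_mono[rotated])
        then show "\<bar>Mx \<sigma> y - Mx \<eta> y\<bar> \<le> A' * (ellk \<kappa> \<bullet> y)" using h(1) y unfolding Pr_def by fastforce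
      qed
    qed
    fix r assume r: "r \<in> regs \<sigma> \<times> regs \<eta>"
    then have r1: "fst r \<in> regs \<sigma>" and r2: "snd r \<in> regs \<eta>" by auto
    define c1 where "c1 = fst (snd (fst r))"
    define c2 where "c2 = fst (snd (snd r))"
    define cv where "cv = rv (fst c1) - rv (fst c2)"
    define e where "e = real_of_rat (snd c1) - real_of_rat (snd c2)"
    have fK: "finite (KK r)" unfolding KK_def using finite_ThK finite_RK[OF \<sigma> r1] finite_RK[OF \<eta> r2] by simp
    have hval: "\<And>y. y \<in> polyQ (KK r) \<Longrightarrow> Mx \<sigma> y - Mx \<eta> y = cv \<bullet> y + e"
    proof -
      fix y assume y: "y \<in> polyQ (KK r)"
      have "Mx \<sigma> y = L c1 y" unfolding c1_def using reg_val[OF \<sigma> r1] y unfolding KK_def by (auto simp: polyQ_Un)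
      moreover have "Mx \<eta> y = L c2 y" unfolding c2_def using reg_val[OF \<eta> r2] y unfolding KK_def by (auto simp: polyQ_Un)
      ultimately show "Mx \<sigma> y - Mx \<eta> y = cv \<bullet> y + e" unfolding cv_def e_def L_def by (simp add: inner_diff_left)
    qed
    have sz: "\<And>d. polyQ (KK r) \<noteq> {} \<Longrightarrow> (\<forall>(a,b)\<in>KK r. 0 \<le> a \<bullet> d) \<Longrightarrow> ellk \<kappa> \<bullet> d \<le> 0 \<Longrightarrow> cv \<bullet> d = 0"
    proof -
      fix d assume ne: "polyQ (KK r) \<noteq> {}" and d: "\<forall>(a,b)\<in>KK r. 0 \<le> a \<bullet> d" and ell: "ellk \<kappa> \<bullet> d \<le> 0"
      obtain x0 where "x0 \<in> polyQ (KK r)" using ne by auto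
      then have "rv (fst c1) \<bullet> d = rv (fst c2) \<bullet> d"
        using slope_zero[OF \<sigma> \<eta> k r1 r2, of x0 d] d ell unfolding KK_def c1_def c2_def by blast
      then show "cv \<bullet> d = 0" unfolding cv_def by (simp add: inner_diff_left)
    qed
    obtain A1 where A1: "\<forall>x\<in>polyQ (KK r). 0 \<le> ellk \<kappa> \<bullet> x \<longrightarrow> cv \<bullet> x \<le> A1 + A1 * (ellk \<kappa> \<bullet> x)"
      using lp_growth[OF fK, of "ellk \<kappa>" cv] sz by force
    obtain A2 where A2: "\<forall>x\<in>polyQ (KK r). 0 \<le> ellk \<kappa> \<bullet> x \<longrightarrow> (- cv) \<bullet> x \<le> A2 + A2 * (ellk \<kappa> \<bullet> x)"
      using lp_growth[OF fK, of "ellk \<kappa>" "- cv"] sz by force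
    have "Pr r (\<bar>e\<bar> + 2 * \<bar>A1\<bar> + 2 * \<bar>A2\<bar>)" unfolding Pr_def
    proof
      fix y assume y: "y \<in> polyQ (KK r)"
      have yT: "y \<in> Th \<eta>" using KTh y by blast
      have l1: "1 \<le> ellk \<kappa> \<bullet> y" using ellk_ge1[OF yT k(3)] .
      have b1: "cv \<bullet> y \<le> A1 + A1 * (ellk \<kappa> \<bullet> y)" using A1 y l1 by auto
      have b2: "- (cv \<bullet> y) \<le> A2 + A2 * (ellk \<kappa> \<bullet> y)" using A2 y l1 by auto
      have l0: "0 \<le> ellk \<kappa> \<bullet> y" using l1 by simp
      have q1: "\<bar>A1\<bar> \<le> \<bar>A1\<bar> * (ellk \<kappa> \<bullet> y)" using l1 by (simp add: mult_le_cancel_left1)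
      have q2: "\<bar>A2\<bar> \<le> \<bar>A2\<bar> * (ellk \<kappa> \<bullet> y)" using l1 by (simp add: mult_le_cancel_left1)
      have q3: "\<bar>e\<bar> \<le> \<bar>e\<bar> * (ellk \<kappa> \<bullet> y)" using l1 by (simp add: mult_le_cancel_left1)
      have q4: "A1 * (ellk \<kappa> \<bullet> y) \<le> \<bar>A1\<bar> * (ellk \<kappa> \<bullet> y)" using l0 by (intro mult_right_mono) auto
      have q5: "A2 * (ellk \<kappa> \<bullet> y) \<le> \<bar>A2\<bar> * (ellk \<kappa> \<bullet> y)" using l0 by (intro mult_right_mono) auto
      have q6: "0 \<le> \<bar>A1\<bar> * (ellk \<kappa> \<bullet> y)" "0 \<le> \<bar>A2\<bar> * (ellk \<kappa> \<bullet> y)" using l0 by auto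
      have "\<bar>cv \<bullet> y + e\<bar> \<le> \<bar>e\<bar> * (ellk \<kappa> \<bullet> y) + 2 * \<bar>A1\<bar> * (ellk \<kappa> \<bullet> y) + 2 * \<bar>A2\<bar> * (ellk \<kappa> \<bullet> y)"
      proof (rule abs_leI)
        show "cv \<bullet> y + e \<le> \<bar>e\<bar> * (ellk \<kappa> \<bullet> y) + 2 * \<bar>A1\<bar> * (ellk \<kappa> \<bullet> y) + 2 * \<bar>A2\<bar> * (ellk \<kappa> \<bullet> y)"
          using b1 q1 q3 q4 q6 abs_ge_self[of e] abs_ge_self[of A1] by linarith
        show "- (cv \<bullet> y + e) \<le> \<bar>e\<bar> * (ellk \<kappa> \<bullet> y) + 2 * \<bar>A1\<bar> * (ellk \<kappa> \<bullet> y) + 2 * \<bar>A2\<bar> * (ellk \<kappa> \<bullet> y)"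
          using b2 q2 q3 q5 q6 abs_ge_minus_self[of e] abs_ge_self[of A2] by linarith
      qed
      also have "\<dots> = (\<bar>e\<bar> + 2 * \<bar>A1\<bar> + 2 * \<bar>A2\<bar>) * (ellk \<kappa> \<bullet> y)" by (simp add: algebra_simps)
      finally show "\<bar>Mx \<sigma> y - Mx \<eta> y\<bar> \<le> (\<bar>e\<bar> + 2 * \<bar>A1\<bar> + 2 * \<bar>A2\<bar>) * (ellk \<kappa> \<bullet> y)" using hval[OF y] by simp
    qed
    then show "\<exists>A. Pr r A" by blast
  qed
  then obtain A where A: "\<forall>r\<in>regs \<sigma> \<times> regs \<eta>. Pr r A" by blast
  show ?thesis
  proof (intro exI ballI)
    fix u assume u: "u \<in> Th \<eta>"
    obtain r1 where r1: "r1 \<in> regs \<sigma>" "u \<in> polyQ (RK \<sigma> r1)" using reg_cover[OF \<sigma>] by blast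
    obtain r2 where r2: "r2 \<in> regs \<eta>" "u \<in> polyQ (RK \<eta> r2)" using reg_cover[OF \<eta>] by blast
    have "u \<in> polyQ (KK (r1, r2))" unfolding KK_def using u r1 r2 polyQ_ThK by (auto simp: polyQ_Un)
    then show "\<bar>Mx \<sigma> u - Mx \<eta> u\<bar> \<le> A * (ellk \<kappa> \<bullet> u)" using A r1 r2 unfolding Pr_def by auto
  qed
qed

end

definition norm1 :: "real^'v::finite \<Rightarrow> real" where "norm1 x = (\<Sum>j\<in>UNIV. \<bar>x$j\<bar>)"

lemma Min_lip:
  fixes g1 g2 :: "'i \<Rightarrow> real"
  assumes "finite S" "S \<noteq> {}" "\<And>i. i \<in> S \<Longrightarrow> \<bar>g1 i - g2 i\<bar> \<le> e"
  shows "\<bar>Min (g1 ` S) - Min (g2 ` S)\<bar> \<le> e"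
proof -
  have "Min (g2 ` S) \<in> g2 ` S" using assms by (intro Min_in) auto
  then obtain i2 where i2: "i2 \<in> S" "Min (g2 ` S) = g2 i2" by auto
  have "Min (g1 ` S) \<in> g1 ` S" using assms by (intro Min_in) auto
  then obtain i1 where i1: "i1 \<in> S" "Min (g1 ` S) = g1 i1" by auto
  have "Min (g1 ` S) \<le> g1 i2" using assms i2 by auto
  moreover have "Min (g2 ` S) \<le> g2 i1" using assms i1 by auto
  moreover have "\<bar>g1 i2 - g2 i2\<bar> \<le> e" "\<bar>g1 i1 - g2 i1\<bar> \<le> e" using assms i1 i2 by auto
  ultimately show ?thesis using i1 i2 by linarith
qed

lemma Max_lip:
  fixes g1 g2 :: "'i \<Rightarrow> real"
  assumes "finite S" "S \<noteq> {}" "\<And>i. i \<in> S \<Longrightarrow> \<bar>g1 i - g2 i\<bar> \<le> e"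
  shows "\<bar>Max (g1 ` S) - Max (g2 ` S)\<bar> \<le> e"
proof -
  have "Max (g2 ` S) \<in> g2 ` S" using assms by (intro Max_in) auto
  then obtain i2 where i2: "i2 \<in> S" "Max (g2 ` S) = g2 i2" by auto
  have "Max (g1 ` S) \<in> g1 ` S" using assms by (intro Max_in) auto
  then obtain i1 where i1: "i1 \<in> S" "Max (g1 ` S) = g1 i1" by auto
  have "g1 i2 \<le> Max (g1 ` S)" using assms i2 by auto
  moreover have "g2 i1 \<le> Max (g2 ` S)" using assms i1 by auto
  moreover have "\<bar>g1 i2 - g2 i2\<bar> \<le> e" "\<bar>g1 i1 - g2 i1\<bar> \<le> e" using assms i1 i2 by auto
  ultimately show ?thesis using i1 i2 by linarith
qed

lemma MM_lip:
  assumes "finite A" "A \<noteq> {}" "\<And>a. a \<in> A \<Longrightarrow> finite (B a) \<and> B a \<noteq> {}"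
    "\<And>a i. a \<in> A \<Longrightarrow> i \<in> B a \<Longrightarrow> \<bar>h1 i - h2 i\<bar> \<le> e"
  shows "\<bar>MM A B h1 - MM A B h2\<bar> \<le> e"
  unfolding MM_def
proof (rule Max_lip[OF assms(1,2)])
  fix a assume a: "a \<in> A"
  show "\<bar>Min (h1 ` B a) - Min (h2 ` B a)\<bar> \<le> e"
    using Min_lip[of "B a" h1 h2 e] assms(3,4)[OF a] by auto
qed

definition coefsum :: "(int^'v::finite) \<times> rat \<Rightarrow> real" where
  "coefsum i = (\<Sum>j\<in>UNIV. \<bar>real_of_int (fst i $ j)\<bar>)"

lemma L_lip:
  fixes x y :: "real^'v::finite" and i :: "(int^'v) \<times> rat"
  shows "\<bar>L i x - L i y\<bar> \<le> coefsum i * norm1 (x - y)"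
proof -
  have "L i x - L i y = (\<Sum>j\<in>UNIV. real_of_int (fst i $ j) * (x - y)$j)"
    unfolding L_def rv_inner by (simp add: sum_subtractf algebra_simps)
  also have "\<bar>\<dots>\<bar> \<le> (\<Sum>j\<in>UNIV. \<bar>real_of_int (fst i $ j)\<bar> * \<bar>(x - y)$j\<bar>)"
    by (rule order_trans[OF sum_abs]) (simp add: abs_mult)
  also have "\<dots> \<le> (\<Sum>j\<in>UNIV. \<bar>real_of_int (fst i $ j)\<bar> * norm1 (x - y))"
  proof (rule sum_mono)
    fix j :: 'v
    have "\<bar>(x - y)$j\<bar> \<le> norm1 (x - y)" unfolding norm1_def
      by (rule member_le_sum[of j UNIV "\<lambda>j. \<bar>(x - y)$j\<bar>"]) auto
    then show "\<bar>real_of_int (fst i $ j)\<bar> * \<bar>(x - y)$j\<bar> \<le> \<bar>real_of_int (fst i $ j)\<bar> * norm1 (x - y)"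
      by (rule mult_left_mono) simp
  qed
  also have "\<dots> = coefsum i * norm1 (x - y)" unfolding coefsum_def by (simp add: sum_distrib_right)
  finally show ?thesis .
qed

lemma coefsum_nonneg: "0 \<le> coefsum i" unfolding coefsum_def by (rule sum_nonneg) simp
lemma norm1_nonneg: "0 \<le> norm1 x" unfolding norm1_def by (rule sum_nonneg) simp

context ratf begin

definition Lam :: "'p \<Rightarrow> real" where "Lam \<tau> = (\<Sum>i\<in>Ip \<tau>. coefsum i)"

lemma Lam_nonneg: "0 \<le> Lam \<tau>" unfolding Lam_def by (rule sum_nonneg) (rule coefsum_nonneg)

lemma Mx_lip:
  assumes \<tau>: "\<tau> \<in> Dl"
  shows "\<bar>Mx \<tau> x - Mx \<tau> y\<bar> \<le> Lam \<tau> * norm1 (x - y)"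
  unfolding Mx_def
proof (rule MM_lip)
  note P = SS_props[OF \<tau>]
  show "finite (SS \<tau>)" "SS \<tau> \<noteq> {}" using P by auto
  show "\<And>a. a \<in> SS \<tau> \<Longrightarrow> finite (id a) \<and> id a \<noteq> {}" using P(3) by auto
  fix a i assume a: "a \<in> SS \<tau>" and i: "i \<in> id a"
  then have iI: "i \<in> Ip \<tau>" using P(3)[OF a] by auto
  have "coefsum i \<le> Lam \<tau>" unfolding Lam_def
    by (rule member_le_sum[OF iI]) (use coefsum_nonneg Ip(1)[OF \<tau>] in auto)
  then have "coefsum i * norm1 (x - y) \<le> Lam \<tau> * norm1 (x - y)" by (rule mult_right_mono) (rule norm1_nonneg)
  then show "\<bar>L i x - L i y\<bar> \<le> Lam \<tau> * norm1 (x - y)" using L_lip[of i x y] by linarith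
qed

definition fc :: "'p \<Rightarrow> 'v set \<Rightarrow> 'p" where "fc \<eta> J = (SOME \<rho>. \<rho> \<le> \<eta> \<and> zeta \<rho> = J)"

lemma fc: assumes "J \<subseteq> zeta \<eta>" shows "fc \<eta> J \<le> \<eta>" "zeta (fc \<eta> J) = J"
proof -
  have "\<exists>\<rho>. \<rho> \<le> \<eta> \<and> zeta \<rho> = J" using face_ex[OF assms] by blast
  from someI_ex[OF this] show "fc \<eta> J \<le> \<eta>" "zeta (fc \<eta> J) = J" unfolding fc_def by auto
qed

lemma fc_empty: "fc \<eta> {} \<le> \<sigma>"
proof -
  obtain z where z: "zeta z = {}" "\<forall>\<tau>. z \<le> \<tau>" using bot_ex by blast
  have "fc \<eta> {} = z" using face_uniq[OF fc(1)[of "{}" \<eta>] z(2)[rule_format, of \<eta>]] fc(2)[of "{}" \<eta>] z(1) by simp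
  then show ?thesis using z(2) by simp
qed

definition Rs :: "'p \<Rightarrow> 'p set" where "Rs \<sigma> = {\<rho>. zeta \<rho> \<noteq> {} \<and> \<not> \<rho> \<le> \<sigma>}"

definition psi :: "'p \<Rightarrow> 'p \<Rightarrow> real^'v \<Rightarrow> real" where
  "psi \<sigma> \<eta> u = (\<Sum>\<rho>\<in>Rs \<sigma>. phi \<rho> \<eta> u)"

lemma psi_nonneg: "u \<in> Th \<eta> \<Longrightarrow> 0 \<le> psi \<sigma> \<eta> u"
  unfolding psi_def Rs_def by (rule sum_nonneg) (use phi_nonneg in auto)

lemma psi_self: "psi \<eta> \<eta> u = 0"
  unfolding psi_def Rs_def phi_def by (rule sum.neutral) auto

lemma psi_ge: assumes "u \<in> Th \<eta>" "\<rho> \<in> Rs \<sigma>" shows "phi \<rho> \<eta> u \<le> psi \<sigma> \<eta> u"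
  unfolding psi_def by (rule member_le_sum[OF assms(2)]) (use phi_nonneg assms(1) in \<open>auto simp: Rs_def\<close>)

end

context ratf begin

lemma sum_outside_le:
  fixes u :: "real^'v" and J :: "'v set"
  assumes "\<And>j. j \<notin> J \<Longrightarrow> u$j \<le> t" "0 \<le> t"
  shows "(\<Sum>j\<in>- J. u$j) \<le> real (card (UNIV::'v set)) * t"
proof -
  have "(\<Sum>j\<in>- J. u$j) \<le> (\<Sum>j\<in>- J. t)" by (rule sum_mono) (use assms(1) in auto)
  also have "\<dots> = real (card (- J)) * t" by simp
  also have "\<dots> \<le> real (card (UNIV::'v set)) * t"
  proof (rule mult_right_mono)
    have "card (- J) \<le> card (UNIV::'v set)" using card_mono[of "UNIV::'v set" "- J"] by simp
    then show "real (card (- J)) \<le> real (card (UNIV::'v set))" by simp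
  qed (rule assms(2))
  finally show ?thesis .
qed

lemma thresh:
  assumes \<sigma>: "\<sigma> \<in> Dl" and \<eta>: "\<eta> \<in> Dl" and u: "u \<in> Th \<eta>"
    and Lip: "\<And>x y. \<bar>(Mx \<sigma> x - Mx \<eta> x) - (Mx \<sigma> y - Mx \<eta> y)\<bar> \<le> \<Lambda> * norm1 (x - y)" and L0: "0 \<le> \<Lambda>"
    and BF: "\<And>\<kappa> x. \<kappa> \<le> \<sigma> \<Longrightarrow> \<kappa> \<le> \<eta> \<Longrightarrow> zeta \<kappa> \<inter> Vf = {} \<Longrightarrow> x \<in> Th \<eta> \<Longrightarrow>
              \<bar>Mx \<sigma> x - Mx \<eta> x\<bar> \<le> A * (ellk \<kappa> \<bullet> x)" and A0: "0 \<le> A"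
  shows "Mx \<sigma> u - f \<eta> u \<le> (2 * real (card (UNIV::'v set)) * \<Lambda> + real (card (UNIV::'v set)) * A) * psi \<sigma> \<eta> u"
proof -
  define N where "N = real (card (UNIV::'v set))"
  have N0: "0 \<le> N" unfolding N_def by simp
  have fu: "f \<eta> u = Mx \<eta> u" using Mx_eq[OF \<eta> u] by simp
  have ps0: "0 \<le> psi \<sigma> \<eta> u" by (rule psi_nonneg[OF u])
  have un: "\<And>j. 0 \<le> u$j" using ThetaD(2)[OF u] .
  have Jsub: "\<And>t. 0 < t \<Longrightarrow> {i. t \<le> u$i} \<subseteq> zeta \<eta>"
  proof
    fix t i assume t: "0 < t" and i: "i \<in> {i. t \<le> u$i}"
    then have "u$i \<noteq> 0" by auto
    then show "i \<in> zeta \<eta>" using ThetaD(1)[OF u] by blast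
  qed
  define W where "W = {t. \<exists>j. t = u$j \<and> 0 < t \<and> \<not> fc \<eta> {i. t \<le> u$i} \<le> \<sigma>}"
  have fW: "finite W"
  proof -
    have sub: "W \<subseteq> range (\<lambda>j. u$j)" unfolding W_def by auto
    have "finite (range (\<lambda>j. u$j))" by simp
    then show ?thesis using sub by (rule finite_subset[rotated])
  qed
  show ?thesis
  proof (cases "W = {}")
    case True
    define pos where "pos = {j. 0 < u$j}"
    have "pos \<inter> Vf \<noteq> {}"
    proof
      assume "pos \<inter> Vf = {}"
      have "\<And>j. j \<in> Vf \<Longrightarrow> u$j = 0"
      proof -
        fix j assume "j \<in> Vf"
        then have "j \<notin> pos" using \<open>pos \<inter> Vf = {}\<close> by blast
        then have "\<not> 0 < u$j" unfolding pos_def by simp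
        then show "u$j = 0" using un[of j] by simp
      qed
      then have "(\<Sum>j\<in>Vf. u$j) = 0" by simp
      then show False using sum_Vf[OF u] by simp
    qed
    then have posne: "pos \<noteq> {}" by auto
    have fpos: "finite pos" by simp
    define tm where "tm = Min ((\<lambda>j. u$j) ` pos)"
    have "tm \<in> (\<lambda>j. u$j) ` pos" unfolding tm_def using posne fpos by (intro Min_in) auto
    then obtain j0 where j0: "j0 \<in> pos" "tm = u$j0" by auto
    have tm0: "0 < tm" using j0 unfolding pos_def by simp
    have Jeq: "{i. tm \<le> u$i} = pos"
    proof
      show "{i. tm \<le> u$i} \<subseteq> pos" using tm0 unfolding pos_def by auto
      show "pos \<subseteq> {i. tm \<le> u$i}" unfolding tm_def using fpos by auto
    qed
    have "tm \<notin> W" using True by simp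
    then have "\<not> (\<exists>j. tm = u$j \<and> 0 < tm \<and> \<not> fc \<eta> {i. tm \<le> u$i} \<le> \<sigma>)" unfolding W_def by simp
    then have "fc \<eta> {i. tm \<le> u$i} \<le> \<sigma>" using tm0 j0(2) by blast
    then have r0s: "fc \<eta> pos \<le> \<sigma>" using Jeq by simp
    have psub: "pos \<subseteq> zeta \<eta>" using Jsub[OF tm0] Jeq by simp
    have r0e: "fc \<eta> pos \<le> \<eta>" and zr0: "zeta (fc \<eta> pos) = pos" using fc[OF psub] by auto
    have r0D: "fc \<eta> pos \<in> Dl" unfolding in_Dl zr0 by fact
    have uT: "u \<in> Th (fc \<eta> pos)"
    proof (rule ThetaI)
      show "\<And>j. j \<notin> zeta (fc \<eta> pos) \<Longrightarrow> u $ j = 0"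
      proof -
        fix j assume "j \<notin> zeta (fc \<eta> pos)"
        then have "j \<notin> pos" using zr0 by simp
        then have "\<not> 0 < u$j" unfolding pos_def by simp
        then show "u$j = 0" using un[of j] by simp
      qed
    qed (use un sum_Vf[OF u] in auto)
    have "f \<eta> u = f (fc \<eta> pos) u" using f_cons[OF r0D \<eta> r0e uT] by simp
    also have "\<dots> = f \<sigma> u" using f_cons[OF r0D \<sigma> r0s uT] by simp
    also have "\<dots> = Mx \<sigma> u"
    proof -
      have "u \<in> Th \<sigma>" using Theta_mono[OF r0s] uT by blast
      then show ?thesis using Mx_eq[OF \<sigma>] by simp
    qed
    finally have "Mx \<sigma> u - f \<eta> u = 0" by simp
    moreover have "0 \<le> (2 * N * \<Lambda> + N * A) * psi \<sigma> \<eta> u" using N0 L0 A0 ps0 by simp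
    ultimately show ?thesis unfolding N_def by simp
  next
    case False
    define ts where "ts = Max W"
    have "ts \<in> W" unfolding ts_def using fW False by (rule Max_in)
    then obtain js where js: "ts = u$js" "0 < ts" "\<not> fc \<eta> {i. ts \<le> u$i} \<le> \<sigma>" unfolding W_def by blast
    have tsmax: "\<And>t. t \<in> W \<Longrightarrow> t \<le> ts" unfolding ts_def using fW by auto
    define Js where "Js = {i. ts \<le> u$i}"
    have Jss: "Js \<subseteq> zeta \<eta>" unfolding Js_def using Jsub[OF js(2)] .
    have rs: "fc \<eta> Js \<le> \<eta>" "zeta (fc \<eta> Js) = Js" using fc[OF Jss] by auto
    have "js \<in> Js" unfolding Js_def using js(1) by simp
    then have rsR: "fc \<eta> Js \<in> Rs \<sigma>" unfolding Rs_def using rs(2) js(3) Js_def by auto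
    have "ts \<le> phi (fc \<eta> Js) \<eta> u"
      by (rule phi_ge[OF rs(1)]) (use rs(2) \<open>js \<in> Js\<close> Js_def in auto)
    also have "\<dots> \<le> psi \<sigma> \<eta> u" by (rule psi_ge[OF u rsR])
    finally have tsps: "ts \<le> psi \<sigma> \<eta> u" .
    define J' where "J' = {i. ts < u$i}"
    have J'sub: "J' \<subseteq> zeta \<eta>" using Jsub[OF js(2)] unfolding J'_def by auto
    have rp: "fc \<eta> J' \<le> \<eta>" "zeta (fc \<eta> J') = J'" using fc[OF J'sub] by auto
    have rps: "fc \<eta> J' \<le> \<sigma>"
    proof (cases "J' = {}")
      case True then show ?thesis using fc_empty by simp
    next
      case J'ne: False
      define t' where "t' = Min ((\<lambda>j. u$j) ` J')"
      have "t' \<in> (\<lambda>j. u$j) ` J'" unfolding t'_def using J'ne by (intro Min_in) auto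
      then obtain j' where j': "j' \<in> J'" "t' = u$j'" by auto
      have t'gt: "ts < t'" using j' unfolding J'_def by simp
      have Jt': "{i. t' \<le> u$i} = J'"
      proof
        show "{i. t' \<le> u$i} \<subseteq> J'" using t'gt unfolding J'_def by auto
        show "J' \<subseteq> {i. t' \<le> u$i}" unfolding t'_def by auto
      qed
      show ?thesis
      proof (rule ccontr)
        assume "\<not> fc \<eta> J' \<le> \<sigma>"
        then have "t' \<in> W" unfolding W_def using j'(2) t'gt js(2) Jt' by auto
        then show False using tsmax t'gt by fastforce
      qed
    qed
    have small: "\<And>j. j \<notin> J' \<Longrightarrow> u$j \<le> ts" unfolding J'_def by auto
    have sout: "(\<Sum>j\<in>- J'. u$j) \<le> N * ts" unfolding N_def using sum_outside_le[OF small] js(2) by simp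
    have out0: "0 \<le> (\<Sum>j\<in>- J'. u$j)" using un by (simp add: sum_nonneg)
    have hb: "\<bar>Mx \<sigma> u - Mx \<eta> u\<bar> \<le> (2 * N * \<Lambda> + N * A) * psi \<sigma> \<eta> u"
    proof (cases "J' \<inter> Vf = {}")
      case True
      have "ellk (fc \<eta> J') \<bullet> u = (\<Sum>j\<in>- J'. u$j)"
        unfolding ellk_inner rp(2) by (simp add: sum.If_cases Compl_eq_Diff_UNIV)
      then have "\<bar>Mx \<sigma> u - Mx \<eta> u\<bar> \<le> A * (\<Sum>j\<in>- J'. u$j)"
        using BF[OF rps rp(1) _ u] True rp(2) by simp
      also have "\<dots> \<le> A * (N * ts)" using sout A0 by (rule mult_left_mono)
      also have "\<dots> \<le> A * (N * psi \<sigma> \<eta> u)" using tsps A0 N0 by (intro mult_left_mono) auto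
      also have "\<dots> \<le> (2 * N * \<Lambda> + N * A) * psi \<sigma> \<eta> u"
        using N0 L0 ps0 by (simp add: algebra_simps)
      finally show ?thesis .
    next
      case False
      then obtain a where a: "a \<in> J'" "a \<in> Vf" by auto
      define s where "s = (\<Sum>j\<in>Vf - J'. u$j)"
      have s0: "0 \<le> s" unfolding s_def using un by (simp add: sum_nonneg)
      have sle: "s \<le> (\<Sum>j\<in>- J'. u$j)" unfolding s_def
        by (rule sum_mono2) (use un in auto)
      define v where "v = (\<chi> j. if j \<in> J' then u$j else 0) + s *\<^sub>R axis a 1"
      have rpD: "fc \<eta> J' \<in> Dl" unfolding in_Dl rp(2) using a by auto
      have vT: "v \<in> Th (fc \<eta> J')"
      proof (rule ThetaI)
        show "\<And>j. j \<notin> zeta (fc \<eta> J') \<Longrightarrow> v $ j = 0" unfolding v_def rp(2) using a(1) by (auto simp: axis_def)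
        show "\<And>j. 0 \<le> v $ j" unfolding v_def using un s0 by (auto simp: axis_def)
        have "(\<Sum>j\<in>Vf. v$j) = (\<Sum>j\<in>Vf. if j \<in> J' then u$j else 0) + (\<Sum>j\<in>Vf. s * (if j = a then 1 else 0))"
          unfolding v_def by (simp add: sum.distrib axis_def)
        also have "(\<Sum>j\<in>Vf. s * (if j = a then 1 else 0)) = s"
        proof -
          have "(\<Sum>j\<in>Vf. s * (if j = a then 1 else 0)) = (\<Sum>j\<in>Vf. if j = a then s else 0)"
            by (rule sum.cong) auto
          also have "\<dots> = s" using a(2) by simp
          finally show ?thesis .
        qed
        also have "(\<Sum>j\<in>Vf. if j \<in> J' then u$j else 0) = (\<Sum>j\<in>Vf \<inter> J'. u$j)"
          by (simp add: sum.If_cases Int_commute)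
        finally have "(\<Sum>j\<in>Vf. v$j) = (\<Sum>j\<in>Vf \<inter> J'. u$j) + (\<Sum>j\<in>Vf - J'. u$j)" unfolding s_def .
        also have "\<dots> = (\<Sum>j\<in>Vf. u$j)" by (rule sum.Int_Diff[symmetric]) simp
        finally show "(\<Sum>j\<in>Vf. v$j) = 1" using sum_Vf[OF u] by simp
      qed
      have vS: "v \<in> Th \<sigma>" using Theta_mono[OF rps] vT by auto
      have vE: "v \<in> Th \<eta>" using Theta_mono[OF rp(1)] vT by auto
      have hv: "Mx \<sigma> v - Mx \<eta> v = 0"
      proof -
        have "Mx \<sigma> v = f \<sigma> v" using Mx_eq[OF \<sigma> vS] .
        also have "\<dots> = f (fc \<eta> J') v" using f_cons[OF rpD \<sigma> rps vT] by simp
        also have "\<dots> = f \<eta> v" using f_cons[OF rpD \<eta> rp(1) vT] by simp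
        also have "\<dots> = Mx \<eta> v" using Mx_eq[OF \<eta> vE] by simp
        finally show ?thesis by simp
      qed
      have nuv: "norm1 (u - v) \<le> 2 * (\<Sum>j\<in>- J'. u$j)"
      proof -
        have "norm1 (u - v) \<le> (\<Sum>j\<in>UNIV. \<bar>(if j \<in> J' then 0 else u$j)\<bar> + s * (if j = a then 1 else 0))"
          unfolding norm1_def v_def
          by (rule sum_mono) (use s0 in \<open>auto simp: axis_def\<close>)
        also have "\<dots> = (\<Sum>j\<in>UNIV. (if j \<in> J' then 0 else u$j)) + s"
        proof -
          have e1: "(\<Sum>j\<in>UNIV. s * (if j = a then 1 else 0)) = s"
          proof -
            have "(\<Sum>j\<in>UNIV. s * (if j = a then 1 else 0)) = (\<Sum>j\<in>UNIV. if j = a then s else 0)"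
              by (rule sum.cong) auto
            also have "\<dots> = s" by simp
            finally show ?thesis .
          qed
          have e2: "(\<Sum>j\<in>UNIV. \<bar>(if j \<in> J' then 0 else u$j)\<bar>) = (\<Sum>j\<in>UNIV. (if j \<in> J' then 0 else u$j))"
            by (rule sum.cong) (use un in auto)
          show ?thesis unfolding sum.distrib e1 e2 ..
        qed
        also have "(\<Sum>j\<in>UNIV. (if j \<in> J' then 0 else u$j)) = (\<Sum>j\<in>- J'. u$j)"
          by (simp add: sum.If_cases Compl_eq_Diff_UNIV)
        finally show ?thesis using sle by simp
      qed
      have "\<bar>Mx \<sigma> u - Mx \<eta> u\<bar> = \<bar>(Mx \<sigma> u - Mx \<eta> u) - (Mx \<sigma> v - Mx \<eta> v)\<bar>" using hv by simp
      also have "\<dots> \<le> \<Lambda> * norm1 (u - v)" by (rule Lip)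
      also have "\<dots> \<le> \<Lambda> * (2 * (N * ts))" using nuv sout L0 by (intro mult_left_mono) auto
      also have "\<dots> \<le> \<Lambda> * (2 * (N * psi \<sigma> \<eta> u))" using tsps L0 N0 by (intro mult_left_mono) auto
      also have "\<dots> \<le> (2 * N * \<Lambda> + N * A) * psi \<sigma> \<eta> u"
        using N0 A0 ps0 by (simp add: algebra_simps)
      finally show ?thesis .
    qed
    then show ?thesis using fu unfolding N_def by simp
  qed
qed

end

context apc begin

definition rhos :: "'p list" where "rhos = (SOME xs. set xs = {\<rho>. zeta \<rho> \<noteq> {}} \<and> distinct xs)"

lemma rhos: "set rhos = {\<rho>. zeta \<rho> \<noteq> {}}"
proof -
  have "\<exists>xs. set xs = {\<rho>. zeta \<rho> \<noteq> {}} \<and> distinct xs" by (rule finite_distinct_list) simp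
  from someI_ex[OF this] show ?thesis unfolding rhos_def by blast
qed

definition gens :: "('p \<Rightarrow> real^'v \<Rightarrow> real) list" where "gens = map phi rhos"

lemma phi_Cl: assumes "zeta \<rho> \<noteq> {}" shows "phi \<rho> \<in> Cl gens"
proof -
  have "\<rho> \<in> set rhos" using rhos assms by simp
  then obtain k where k: "k < length rhos" "rhos ! k = \<rho>" by (auto simp: in_set_conv_nth)
  then have e: "gens ! k = phi \<rho>" unfolding gens_def by simp
  have "k < length gens" using k unfolding gens_def by simp
  then have "gens ! k \<in> Cl gens" by (rule Cl.gen)
  then show ?thesis unfolding e .
qed

definition vtx :: "'v \<Rightarrow> 'p" where "vtx j = (THE \<rho>. zeta \<rho> = {j})"

lemma vtx: "j \<in> V \<Longrightarrow> zeta (vtx j) = {j}"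
  unfolding vtx_def by (rule theI') (rule vert)

definition cf :: "'v \<Rightarrow> 'p \<Rightarrow> real^'v \<Rightarrow> real" where
  "cf j = (\<lambda>\<eta> u. if j \<in> V then phi (vtx j) \<eta> u else 0)"

lemma cf_Cl: "cf j \<in> Cl gens"
proof (cases "j \<in> V")
  case True
  then have "cf j = phi (vtx j)" unfolding cf_def by auto
  then show ?thesis using phi_Cl[of "vtx j"] vtx[OF True] by simp
next
  case False
  then have "cf j = (\<lambda>\<eta> u. 0)" unfolding cf_def by auto
  then show ?thesis using Cl_zero by simp
qed

lemma cf_val: assumes u: "u \<in> Th \<eta>" shows "cf j \<eta> u = u$j"
proof (cases "j \<in> V")
  case True
  note z = vtx[OF True]
  show ?thesis
  proof (cases "vtx j \<le> \<eta>")
    case True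
    then show ?thesis unfolding cf_def phi_def z using \<open>j \<in> V\<close> by simp
  next
    case False
    have "j \<notin> zeta \<eta>" using vertex_le[of j \<eta> "vtx j"] z False by auto
    then have "u$j = 0" using ThetaD(1)[OF u] by simp
    then show ?thesis unfolding cf_def phi_def using False True by simp
  qed
next
  case False
  then have "j \<notin> zeta \<eta>" using zeta_sub[of \<eta>] by auto
  then have "u$j = 0" using ThetaD(1)[OF u] by simp
  then show ?thesis unfolding cf_def using False by simp
qed

definition Lcl :: "(int^'v) \<times> rat \<Rightarrow> 'p \<Rightarrow> real^'v \<Rightarrow> real" where
  "Lcl i = (\<lambda>\<eta> u. (\<Sum>j\<in>UNIV. real_of_int (fst i $ j) * cf j \<eta> u) + real_of_rat (snd i))"

lemma Lcl_Cl: "Lcl i \<in> Cl gens"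
proof -
  have "(\<lambda>\<eta> u. \<Sum>j\<in>UNIV. real_of_int (fst i $ j) * cf j \<eta> u) \<in> Cl gens"
    by (rule Cl_sum) (auto intro: Cl_intmul cf_Cl)
  then show ?thesis unfolding Lcl_def by (intro Cl.add Cl.cst)
qed

lemma Lcl_val: assumes "u \<in> Th \<eta>" shows "Lcl i \<eta> u = L i u"
  unfolding Lcl_def L_def rv_inner using cf_val[OF assms] by simp

lemma Dl_ne: "Dl \<noteq> {}"
proof -
  obtain a where a: "a \<in> Vf" using Vf_ne by auto
  obtain \<tau> where "zeta \<tau> = {a}" using vert[of a] a by auto
  then have "\<tau> \<in> Dl" using a in_Dl by auto
  then show ?thesis by auto
qed

lemma finite_Rs: "finite (ratf.Rs zeta \<sigma>)" by simp

end

context ratf begin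

definition Mcl :: "'p \<Rightarrow> 'p \<Rightarrow> real^'v \<Rightarrow> real" where
  "Mcl \<sigma> = (\<lambda>\<eta> u. Max ((\<lambda>S. Min ((\<lambda>i. Lcl i \<eta> u) ` S)) ` SS \<sigma>))"

lemma Mcl_Cl: assumes \<sigma>: "\<sigma> \<in> Dl" shows "Mcl \<sigma> \<in> Cl gens"
  unfolding Mcl_def
proof (rule Cl_Max)
  note P = SS_props[OF \<sigma>]
  show "finite (SS \<sigma>)" "SS \<sigma> \<noteq> {}" using P by auto
  fix S assume S: "S \<in> SS \<sigma>"
  show "(\<lambda>\<eta> u. Min ((\<lambda>i. Lcl i \<eta> u) ` S)) \<in> Cl gens"
    by (rule Cl_Min) (use P(3)[OF S] Lcl_Cl in auto)
qed

lemma Mcl_val: assumes "u \<in> Th \<eta>" shows "Mcl \<sigma> \<eta> u = Mx \<sigma> u"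
  unfolding Mcl_def Mx_def MM_def using Lcl_val[OF assms] by simp

lemma psi_Cl: "psi \<sigma> \<in> Cl gens"
proof -
  have "(\<lambda>\<eta> u. \<Sum>\<rho>\<in>Rs \<sigma>. phi \<rho> \<eta> u) \<in> Cl gens"
    by (rule Cl_sum) (auto simp: Rs_def intro: phi_Cl)
  moreover have "psi \<sigma> = (\<lambda>\<eta> u. \<Sum>\<rho>\<in>Rs \<sigma>. phi \<rho> \<eta> u)" unfolding psi_def by (intro ext) simp
  ultimately show ?thesis by simp
qed

lemma Lip_pair:
  assumes "\<sigma> \<in> Dl" "\<eta> \<in> Dl"
  shows "\<bar>(Mx \<sigma> x - Mx \<eta> x) - (Mx \<sigma> y - Mx \<eta> y)\<bar> \<le> (Lam \<sigma> + Lam \<eta>) * norm1 (x - y)"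
proof -
  have "\<bar>Mx \<sigma> x - Mx \<sigma> y\<bar> \<le> Lam \<sigma> * norm1 (x - y)" by (rule Mx_lip[OF assms(1)])
  moreover have "\<bar>Mx \<eta> x - Mx \<eta> y\<bar> \<le> Lam \<eta> * norm1 (x - y)" by (rule Mx_lip[OF assms(2)])
  moreover have "(Mx \<sigma> x - Mx \<eta> x) - (Mx \<sigma> y - Mx \<eta> y) = (Mx \<sigma> x - Mx \<sigma> y) - (Mx \<eta> x - Mx \<eta> y)" by simp
  moreover have "\<bar>(Mx \<sigma> x - Mx \<sigma> y) - (Mx \<eta> x - Mx \<eta> y)\<bar> \<le> \<bar>Mx \<sigma> x - Mx \<sigma> y\<bar> + \<bar>Mx \<eta> x - Mx \<eta> y\<bar>"
    by (rule abs_triangle_ineq4)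
  moreover have "(Lam \<sigma> + Lam \<eta>) * norm1 (x - y) = Lam \<sigma> * norm1 (x - y) + Lam \<eta> * norm1 (x - y)"
    by (simp add: distrib_right)
  ultimately show ?thesis by linarith
qed

lemma glue_K: "\<exists>K::nat. \<forall>\<sigma>\<in>Dl. \<forall>\<eta>\<in>Dl. \<forall>u\<in>Th \<eta>. Mx \<sigma> u - f \<eta> u \<le> real K * psi \<sigma> \<eta> u"
proof -
  define P where "P r K \<longleftrightarrow> (\<forall>u\<in>Th (snd r). Mx (fst r) u - f (snd r) u \<le> K * psi (fst r) (snd r) u)" for r K
  have "\<exists>K. \<forall>r\<in>Dl \<times> Dl. P r K"
  proof (rule finite_uniform)
    show "finite (Dl \<times> Dl)" by simp
    show "\<And>r K K'. P r K \<Longrightarrow> K \<le> K' \<Longrightarrow> P r K'"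
    proof -
      fix r K K' assume h: "P r K" "K \<le> K'"
      show "P r K'" unfolding P_def
      proof
        fix u assume u: "u \<in> Th (snd r)"
        have "K * psi (fst r) (snd r) u \<le> K' * psi (fst r) (snd r) u"
          using h(2) psi_nonneg[OF u] by (rule mult_right_mono)
        moreover have "Mx (fst r) u - f (snd r) u \<le> K * psi (fst r) (snd r) u" using h(1) u unfolding P_def by blast
        ultimately show "Mx (fst r) u - f (snd r) u \<le> K' * psi (fst r) (snd r) u" by linarith
      qed
    qed
    fix r assume r: "r \<in> Dl \<times> Dl"
    obtain \<sigma> \<eta> where se: "r = (\<sigma>, \<eta>)" "\<sigma> \<in> Dl" "\<eta> \<in> Dl" using r by auto
    define Q where "Q \<kappa> A \<longleftrightarrow> (\<forall>x\<in>Th \<eta>. \<bar>Mx \<sigma> x - Mx \<eta> x\<bar> \<le> A * (ellk \<kappa> \<bullet> x))" for \<kappa> A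
    have "\<exists>A. \<forall>\<kappa>\<in>{\<kappa>. \<kappa> \<le> \<sigma> \<and> \<kappa> \<le> \<eta> \<and> zeta \<kappa> \<inter> Vf = {}}. Q \<kappa> A"
    proof (rule finite_uniform)
      show "finite {\<kappa>. \<kappa> \<le> \<sigma> \<and> \<kappa> \<le> \<eta> \<and> zeta \<kappa> \<inter> Vf = {}}" by simp
      show "\<And>\<kappa> A A'. Q \<kappa> A \<Longrightarrow> A \<le> A' \<Longrightarrow> Q \<kappa> A'"
      proof -
        fix \<kappa> A A' assume h: "Q \<kappa> A" "A \<le> A'"
        show "Q \<kappa> A'" unfolding Q_def
        proof
          fix x assume x: "x \<in> Th \<eta>"
          have "A * (ellk \<kappa> \<bullet> x) \<le> A' * (ellk \<kappa> \<bullet> x)" using h(2) ellk_nonneg[OF x] by (rule mult_right_mono)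
          moreover have "\<bar>Mx \<sigma> x - Mx \<eta> x\<bar> \<le> A * (ellk \<kappa> \<bullet> x)" using h(1) x unfolding Q_def by blast
          ultimately show "\<bar>Mx \<sigma> x - Mx \<eta> x\<bar> \<le> A' * (ellk \<kappa> \<bullet> x)" by linarith
        qed
      qed
      fix \<kappa> assume "\<kappa> \<in> {\<kappa>. \<kappa> \<le> \<sigma> \<and> \<kappa> \<le> \<eta> \<and> zeta \<kappa> \<inter> Vf = {}}"
      then have k: "\<kappa> \<le> \<sigma>" "\<kappa> \<le> \<eta>" "zeta \<kappa> \<inter> Vf = {}" by auto
      show "\<exists>A. Q \<kappa> A" unfolding Q_def by (rule BFD[OF se(2) se(3) k])
    qed
    then obtain A where A0: "\<forall>\<kappa>\<in>{\<kappa>. \<kappa> \<le> \<sigma> \<and> \<kappa> \<le> \<eta> \<and> zeta \<kappa> \<inter> Vf = {}}. Q \<kappa> A" by blast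
    have A: "\<And>\<kappa> x. \<kappa> \<le> \<sigma> \<Longrightarrow> \<kappa> \<le> \<eta> \<Longrightarrow> zeta \<kappa> \<inter> Vf = {} \<Longrightarrow> x \<in> Th \<eta> \<Longrightarrow>
        \<bar>Mx \<sigma> x - Mx \<eta> x\<bar> \<le> A * (ellk \<kappa> \<bullet> x)"
    proof -
      fix \<kappa> x assume h: "\<kappa> \<le> \<sigma>" "\<kappa> \<le> \<eta>" "zeta \<kappa> \<inter> Vf = {}" "x \<in> Th \<eta>"
      then have "Q \<kappa> A" using A0 by blast
      then show "\<bar>Mx \<sigma> x - Mx \<eta> x\<bar> \<le> A * (ellk \<kappa> \<bullet> x)" using h(4) unfolding Q_def by blast
    qed
    define A' where "A' = max A 0"
    have A': "\<And>\<kappa> x. \<kappa> \<le> \<sigma> \<Longrightarrow> \<kappa> \<le> \<eta> \<Longrightarrow> zeta \<kappa> \<inter> Vf = {} \<Longrightarrow> x \<in> Th \<eta> \<Longrightarrow>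
        \<bar>Mx \<sigma> x - Mx \<eta> x\<bar> \<le> A' * (ellk \<kappa> \<bullet> x)"
    proof -
      fix \<kappa> x assume h: "\<kappa> \<le> \<sigma>" "\<kappa> \<le> \<eta>" "zeta \<kappa> \<inter> Vf = {}" "x \<in> Th \<eta>"
      have "A * (ellk \<kappa> \<bullet> x) \<le> A' * (ellk \<kappa> \<bullet> x)" unfolding A'_def using ellk_nonneg[OF h(4)] by (rule mult_right_mono[rotated]) simp
      then show "\<bar>Mx \<sigma> x - Mx \<eta> x\<bar> \<le> A' * (ellk \<kappa> \<bullet> x)" using A[OF h] by linarith
    qed
    have A'0: "0 \<le> A'" unfolding A'_def by simp
    have L0: "0 \<le> Lam \<sigma> + Lam \<eta>" using Lam_nonneg[of \<sigma>] Lam_nonneg[of \<eta>] by simp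
    have "P r (2 * real (card (UNIV::'v set)) * (Lam \<sigma> + Lam \<eta>) + real (card (UNIV::'v set)) * A')"
      unfolding P_def se(1) fst_conv snd_conv
    proof
      fix u assume u: "u \<in> Th \<eta>"
      show "Mx \<sigma> u - f \<eta> u \<le> (2 * real (card (UNIV::'v set)) * (Lam \<sigma> + Lam \<eta>) + real (card (UNIV::'v set)) * A') * psi \<sigma> \<eta> u"
        by (rule thresh[OF se(2) se(3) u Lip_pair[OF se(2) se(3)] L0 A' A'0])
    qed
    then show "\<exists>K. P r K" by blast
  qed
  then obtain K where K: "\<forall>r\<in>Dl \<times> Dl. P r K" by blast
  define Kn where "Kn = nat \<lceil>K\<rceil>"
  have "K \<le> real Kn" unfolding Kn_def by linarith
  then have "\<forall>\<sigma>\<in>Dl. \<forall>\<eta>\<in>Dl. \<forall>u\<in>Th \<eta>. Mx \<sigma> u - f \<eta> u \<le> real Kn * psi \<sigma> \<eta> u"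
  proof (intro ballI)
    fix \<sigma> \<eta> u assume h: "K \<le> real Kn" "\<sigma> \<in> Dl" "\<eta> \<in> Dl" "u \<in> Th \<eta>"
    have "Mx \<sigma> u - f \<eta> u \<le> K * psi \<sigma> \<eta> u" using K h(2,3,4) unfolding P_def by auto
    also have "\<dots> \<le> real Kn * psi \<sigma> \<eta> u" using h(1) psi_nonneg[OF h(4)] by (rule mult_right_mono)
    finally show "Mx \<sigma> u - f \<eta> u \<le> real Kn * psi \<sigma> \<eta> u" .
  qed
  then show ?thesis by blast
qed

lemma main_fin:
  "\<exists>p q. (\<exists>\<tau>\<in>Dl. \<exists>u\<in>Th \<tau>. trop_eval q (map (\<lambda>g \<eta> u. ereal (g \<eta> u)) gens) \<tau> u \<noteq> \<infinity>) \<and>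
        (\<forall>\<tau>\<in>Dl. \<forall>u\<in>Th \<tau>. ereal (f \<tau> u) = trop_eval p (map (\<lambda>g \<eta> u. ereal (g \<eta> u)) gens) \<tau> u
                                             - trop_eval q (map (\<lambda>g \<eta> u. ereal (g \<eta> u)) gens) \<tau> u)"
proof -
  obtain K :: nat where K: "\<forall>\<sigma>\<in>Dl. \<forall>\<eta>\<in>Dl. \<forall>u\<in>Th \<eta>. Mx \<sigma> u - f \<eta> u \<le> real K * psi \<sigma> \<eta> u"
    using glue_K by blast
  define G where "G = (\<lambda>\<eta> u. Max ((\<lambda>\<sigma>. Mcl \<sigma> \<eta> u - real K * psi \<sigma> \<eta> u) ` Dl))"
  have GCl: "G \<in> Cl gens" unfolding G_def
  proof (rule Cl_Max)
    show "finite Dl" "Dl \<noteq> {}" using Dl_ne by auto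
    fix \<sigma> assume \<sigma>: "\<sigma> \<in> Dl"
    show "(\<lambda>\<eta> u. Mcl \<sigma> \<eta> u - real K * psi \<sigma> \<eta> u) \<in> Cl gens"
      by (intro Cl_diff Cl_natmul Mcl_Cl[OF \<sigma>] psi_Cl)
  qed
  have Gval: "G \<eta> u = f \<eta> u" if \<eta>: "\<eta> \<in> Dl" and u: "u \<in> Th \<eta>" for \<eta> u
  proof -
    have "Max ((\<lambda>\<sigma>. Mcl \<sigma> \<eta> u - real K * psi \<sigma> \<eta> u) ` Dl) = f \<eta> u"
    proof (rule Max_eqI)
      show "finite ((\<lambda>\<sigma>. Mcl \<sigma> \<eta> u - real K * psi \<sigma> \<eta> u) ` Dl)" by simp
      fix y assume "y \<in> (\<lambda>\<sigma>. Mcl \<sigma> \<eta> u - real K * psi \<sigma> \<eta> u) ` Dl"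
      then obtain \<sigma> where \<sigma>: "\<sigma> \<in> Dl" "y = Mcl \<sigma> \<eta> u - real K * psi \<sigma> \<eta> u" by auto
      have "Mx \<sigma> u - f \<eta> u \<le> real K * psi \<sigma> \<eta> u" using K \<sigma>(1) \<eta> u by blast
      then show "y \<le> f \<eta> u" using \<sigma>(2) Mcl_val[OF u] by simp
    next
      have "Mcl \<eta> \<eta> u - real K * psi \<eta> \<eta> u = f \<eta> u" using Mcl_val[OF u] Mx_eq[OF \<eta> u] psi_self by simp
      then show "f \<eta> u \<in> (\<lambda>\<sigma>. Mcl \<sigma> \<eta> u - real K * psi \<sigma> \<eta> u) ` Dl" using \<eta> by force
    qed
    then show ?thesis unfolding G_def by simp
  qed
  obtain P Q where PQ: "P \<noteq> []" "Q \<noteq> []" "\<forall>\<eta> u. G \<eta> u = rte P gens \<eta> u - rte Q gens \<eta> u"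
    using Cl_rep[OF GCl] by blast
  obtain \<tau>0 where \<tau>0: "\<tau>0 \<in> Dl" using Dl_ne by auto
  obtain u0 where u0: "u0 \<in> Th \<tau>0" using Theta_ne[OF \<tau>0] by auto
  show ?thesis
  proof (intro exI conjI)
    show "\<exists>\<tau>\<in>Dl. \<exists>u\<in>Th \<tau>. trop_eval Q (map (\<lambda>g \<eta> u. ereal (g \<eta> u)) gens) \<tau> u \<noteq> \<infinity>"
      using \<tau>0 u0 by (intro bexI[of _ \<tau>0] bexI[of _ u0]) (simp_all add: trop_eval_rte[OF PQ(2), of gens])
    show "\<forall>\<tau>\<in>Dl. \<forall>u\<in>Th \<tau>. ereal (f \<tau> u) = trop_eval P (map (\<lambda>g \<eta> u. ereal (g \<eta> u)) gens) \<tau> u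
                                             - trop_eval Q (map (\<lambda>g \<eta> u. ereal (g \<eta> u)) gens) \<tau> u"
    proof (intro ballI)
      fix \<tau> u assume \<tau>: "\<tau> \<in> Dl" and u: "u \<in> Th \<tau>"
      have "f \<tau> u = rte P gens \<tau> u - rte Q gens \<tau> u" using Gval[OF \<tau> u] PQ(3) by simp
      then show "ereal (f \<tau> u) = trop_eval P (map (\<lambda>g \<eta> u. ereal (g \<eta> u)) gens) \<tau> u
                                             - trop_eval Q (map (\<lambda>g \<eta> u. ereal (g \<eta> u)) gens) \<tau> u"
        by (simp add: trop_eval_rte[OF PQ(1), of gens] trop_eval_rte[OF PQ(2), of gens])
    qed
  qed
qed

end

theorem theorem1p2:
  fixes Vf Vinf :: "'v::finite set" and zeta :: "'p::{finite,order} \<Rightarrow> 'v set"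
  assumes "apc_data Vf Vinf zeta"
  shows "\<exists>ss :: ('p \<Rightarrow> real^'v \<Rightarrow> ereal) list. set ss \<subseteq> RatD Vf Vinf zeta \<and>
           (\<forall>F\<in>RatD Vf Vinf zeta. \<exists>p q.
              (\<exists>\<tau>\<in>cDelta Vf zeta. \<exists>u\<in>Theta Vf zeta \<tau>. trop_eval q ss \<tau> u \<noteq> \<infinity>) \<and>
              (\<forall>\<tau>\<in>cDelta Vf zeta. \<forall>u\<in>Theta Vf zeta \<tau>.
                  F \<tau> u = trop_eval p ss \<tau> u - trop_eval q ss \<tau> u))"
proof -
  interpret A: apc Vf Vinf zeta by unfold_locales (rule assms)
  define ss where "ss = map (\<lambda>g \<eta> u. ereal (g \<eta> u)) A.gens"
  have sub: "set ss \<subseteq> RatD Vf Vinf zeta"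
  proof
    fix F assume "F \<in> set ss"
    then obtain \<rho> where "\<rho> \<in> set A.rhos" "F = (\<lambda>\<eta> u. ereal (A.phi \<rho> \<eta> u))" unfolding ss_def A.gens_def by auto
    then show "F \<in> RatD Vf Vinf zeta" using A.phi_RatD A.rhos by auto
  qed
  have main: "\<exists>p q.
              (\<exists>\<tau>\<in>cDelta Vf zeta. \<exists>u\<in>Theta Vf zeta \<tau>. trop_eval q ss \<tau> u \<noteq> \<infinity>) \<and>
              (\<forall>\<tau>\<in>cDelta Vf zeta. \<forall>u\<in>Theta Vf zeta \<tau>.
                  F \<tau> u = trop_eval p ss \<tau> u - trop_eval q ss \<tau> u)" if F: "F \<in> RatD Vf Vinf zeta" for F
  proof -
    from F consider (inf) "\<forall>\<tau>\<in>cDelta Vf zeta. \<forall>u\<in>Theta Vf zeta \<tau>. F \<tau> u = \<infinity>"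
      | (fin) f where "rat_fun Vf Vinf zeta f" "\<forall>\<tau>\<in>cDelta Vf zeta. \<forall>u\<in>Theta Vf zeta \<tau>. F \<tau> u = ereal (f \<tau> u)"
      unfolding RatD_def by blast
    then show ?thesis
    proof cases
      case inf
      obtain \<tau>0 where \<tau>0: "\<tau>0 \<in> cDelta Vf zeta" using A.Dl_ne by auto
      obtain u0 where u0: "u0 \<in> Theta Vf zeta \<tau>0" using A.Theta_ne[OF \<tau>0] by auto
      have q: "\<And>\<tau> u. trop_eval [(0, \<lambda>_. 0)] ss \<tau> u = ereal 0"
        unfolding ss_def using trop_eval_rte[of "[(0, \<lambda>_. 0)]" A.gens] rte_const[of 0] by simp
      show ?thesis
      proof (intro exI conjI)
        show "\<exists>\<tau>\<in>cDelta Vf zeta. \<exists>u\<in>Theta Vf zeta \<tau>. trop_eval [(0, \<lambda>_. 0)] ss \<tau> u \<noteq> \<infinity>"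
          using \<tau>0 u0 q by auto
        show "\<forall>\<tau>\<in>cDelta Vf zeta. \<forall>u\<in>Theta Vf zeta \<tau>. F \<tau> u = trop_eval [] ss \<tau> u - trop_eval [(0, \<lambda>_. 0)] ss \<tau> u"
        proof (intro ballI)
          fix \<tau> u assume "\<tau> \<in> cDelta Vf zeta" "u \<in> Theta Vf zeta \<tau>"
          then have "F \<tau> u = \<infinity>" using inf by blast
          moreover have "trop_eval [] ss \<tau> u = \<infinity>" by (rule trop_eval_Nil)
          ultimately show "F \<tau> u = trop_eval [] ss \<tau> u - trop_eval [(0, \<lambda>_. 0)] ss \<tau> u" using q[of \<tau> u] by simp
        qed
      qed
    next
      case fin
      interpret R: ratf Vf Vinf zeta f by unfold_locales (rule assms, rule fin(1))
      obtain p q where pq: "\<exists>\<tau>\<in>cDelta Vf zeta. \<exists>u\<in>Theta Vf zeta \<tau>. trop_eval q ss \<tau> u \<noteq> \<infinity>"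
          "\<forall>\<tau>\<in>cDelta Vf zeta. \<forall>u\<in>Theta Vf zeta \<tau>. ereal (f \<tau> u) = trop_eval p ss \<tau> u - trop_eval q ss \<tau> u"
        using R.main_fin unfolding ss_def by blast
      show ?thesis
      proof (intro exI conjI)
        show "\<exists>\<tau>\<in>cDelta Vf zeta. \<exists>u\<in>Theta Vf zeta \<tau>. trop_eval q ss \<tau> u \<noteq> \<infinity>" by (rule pq(1))
        show "\<forall>\<tau>\<in>cDelta Vf zeta. \<forall>u\<in>Theta Vf zeta \<tau>. F \<tau> u = trop_eval p ss \<tau> u - trop_eval q ss \<tau> u"
          using pq(2) fin(2) by simp
      qed
    qed
  qed
  show ?thesis using sub main by blast
qed


end
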